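(* Let $(M,\eta)$ be a set operad and $\mathbb K$ a field of characteristic $0$. On the polynomial algebra $\mathbb K[t_\alpha:\alpha\in\mathcal T(M)]$ define, for each type $\alpha$, $\Delta(t_\alpha)=\sum t_{\tau(a)}\otimes t_{\tau(m')}$, the sum running over all pairs $(a,m')\in M(M)[U]$ with $\eta(a,m')=m$, where $m\in M[U]$ is any structure of type $\alpha$; extend $\Delta$ multiplicatively, and let $\epsilon$ be the multiplicative map with $\epsilon(t_\alpha)=1$ if $\alpha=\bullet$ and $\epsilon(t_\alpha)=0$ otherwise. Then $\Delta(t_\alpha)$ does not depend on the choice of the representative $m$, $\Delta$ is coassociative, $\epsilon$ is a counit, and these maps make the polynomial algebra a commutative bialgebra. After identifying $t_\bullet$ with the unit $1$, it becomes a commutative Hopf algebra, the natural Hopf algebra $\mathcal N_M$.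
   Context: A species $M$ is a functor from finite sets with bijections to finite sets with maps. $M[U]$ is the set of $M$-structures on $U$. Two structures $m\in M[U]$ and $m'\in M[V]$ are isomorphic if $M[f]m=m'$ for some bijection $f:U\to V$. $\tau(m)$ denotes the isomorphism class (type) of $m$, and $\mathcal T(M)$ is the set of types. For species $M,N$ with $N[\emptyset]=\emptyset$, the substitution is $M(N)[U]=\coprod_{\pi\in\Pi[U]}\big(\prod_{B\in\pi}N[B]\big)\times M[\pi]$, where $\Pi[U]$ is the set of set partitions of $U$. Its elements are pairs $(a,m')$, with $a=\{n_B\}_{B\in\pi}$ an assembly (one $N$-structure on each block of $\pi$) and $m'\in M[\pi]$. A set operad is a species $M$ with $M[\emptyset]=\emptyset$ and $|M[U]|=1$ for $|U|=1$, together with a natural transformation $\eta:M(M)\to M$ that is associative and has the singleton structures as two-sided unit (a monoid for substitution with unit the singleton species $X$). $\bullet$ denotes the type of the singleton structure. For an assembly $a=\{m_B\}_{B\in\pi}$ of $M$-structures write $t_{\tau(a)}=\prod_{B\in\pi}t_{\tau(m_B)}$. *)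

theory Defs
  imports Main "HOL-Library.Poly_Mapping" "HOL-Library.Product_Plus" "HOL-Library.Multiset"
    "HOL-Library.Nat_Bijection" "HOL-Library.Disjoint_Sets" "HOL-Library.FuncSet"
begin

section \<open>Species (on finite subsets of nat, a skeleton-containing full subcategory of finite sets)\<close>

text \<open>Finite sets of labels that arise as
  blocks of partitions are re-encoded as natural numbers via set_encode.\<close>

definition species :: "(nat set \<Rightarrow> 's set) \<Rightarrow> ((nat \<Rightarrow> nat) \<Rightarrow> nat set \<Rightarrow> 's \<Rightarrow> 's) \<Rightarrow> bool" where
  "species M Mf \<longleftrightarrow>
     (\<forall>U. finite U \<longrightarrow> finite (M U)) \<and>
     (\<forall>U. \<not> finite U \<longrightarrow> M U = {}) \<and>
     (\<forall>f U V m. finite U \<and> bij_betw f U V \<and> m \<in> M U \<longrightarrow> Mf f U m \<in> M V) \<and>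
     (\<forall>U m. finite U \<and> m \<in> M U \<longrightarrow> Mf id U m = m) \<and>
     (\<forall>f g U V m. finite U \<and> bij_betw f U V \<and> bij_betw g V (g ` V) \<and> m \<in> M U
        \<longrightarrow> Mf (g \<circ> f) U m = Mf g V (Mf f U m)) \<and>
     (\<forall>f g U m. finite U \<and> (\<forall>x\<in>U. f x = g x) \<longrightarrow> Mf f U m = Mf g U m)"

definition tau :: "(nat set \<Rightarrow> 's set) \<Rightarrow> ((nat \<Rightarrow> nat) \<Rightarrow> nat set \<Rightarrow> 's \<Rightarrow> 's) \<Rightarrow> nat set \<Rightarrow> 's
                   \<Rightarrow> (nat set \<times> 's) set" where
  "tau M Mf U m = {(V, m'). \<exists>f. bij_betw f U V \<and> m' = Mf f U m}"

definition stypes :: "(nat set \<Rightarrow> 's set) \<Rightarrow> ((nat \<Rightarrow> nat) \<Rightarrow> nat set \<Rightarrow> 's \<Rightarrow> 's) \<Rightarrow> (nat set \<times> 's) set set" where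
  "stypes M Mf = {tau M Mf U m | U m. finite U \<and> m \<in> M U}"

definition cd :: "nat set set \<Rightarrow> nat set" where
  "cd \<pi> = set_encode ` \<pi>"

text \<open>Substitution M(N)[U]: triples (pi, a, m') with a an assembly of N-structures on the blocks.\<close>
definition subst :: "(nat set \<Rightarrow> 's set) \<Rightarrow> (nat set \<Rightarrow> 's set) \<Rightarrow> nat set
                     \<Rightarrow> (nat set set \<times> (nat set \<Rightarrow> 's) \<times> 's) set" where
  "subst M N U = {(\<pi>, a, m'). partition_on U \<pi> \<and> a \<in> Pi\<^sub>E \<pi> N \<and> m' \<in> M (cd \<pi>)}"

definition subst_transport :: "((nat \<Rightarrow> nat) \<Rightarrow> nat set \<Rightarrow> 's \<Rightarrow> 's) \<Rightarrow> (nat \<Rightarrow> nat) \<Rightarrow> nat set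
      \<Rightarrow> nat set set \<times> (nat set \<Rightarrow> 's) \<times> 's \<Rightarrow> nat set set \<times> (nat set \<Rightarrow> 's) \<times> 's" where
  "subst_transport Mf f U x = (case x of (\<pi>, a, m') \<Rightarrow>
     ((`) f ` \<pi>,
      (\<lambda>B'\<in>(`) f ` \<pi>. Mf f (U \<inter> f -` B') (a (U \<inter> f -` B'))),
      Mf (\<lambda>n. set_encode (f ` set_decode n)) (cd \<pi>) m'))"

definition unit_str :: "(nat set \<Rightarrow> 's set) \<Rightarrow> nat set \<Rightarrow> 's" where
  "unit_str M U = (THE m. m \<in> M U)"

text \<open>Set operad: eta U pi a m' is the composite eta(a, m') in M[U].\<close>
definition set_operad :: "(nat set \<Rightarrow> 's set) \<Rightarrow> ((nat \<Rightarrow> nat) \<Rightarrow> nat set \<Rightarrow> 's \<Rightarrow> 's)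
                         \<Rightarrow> (nat set \<Rightarrow> nat set set \<Rightarrow> (nat set \<Rightarrow> 's) \<Rightarrow> 's \<Rightarrow> 's) \<Rightarrow> bool" where
  "set_operad M Mf eta \<longleftrightarrow>
     species M Mf \<and> M {} = {} \<and> (\<forall>U. card U = 1 \<longrightarrow> card (M U) = 1) \<and>
     \<comment> \<open>eta : M(M) -> M\<close>
     (\<forall>U \<pi> a m'. finite U \<and> (\<pi>, a, m') \<in> subst M M U \<longrightarrow> eta U \<pi> a m' \<in> M U) \<and>
     \<comment> \<open>naturality\<close>
     (\<forall>U V f \<pi> a m'. finite U \<and> bij_betw f U V \<and> (\<pi>, a, m') \<in> subst M M U \<longrightarrow>
        (case subst_transport Mf f U (\<pi>, a, m') of (\<pi>2, a2, m2) \<Rightarrow> eta V \<pi>2 a2 m2)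
          = Mf f U (eta U \<pi> a m')) \<and>
     \<comment> \<open>associativity\<close>
     (\<forall>U \<pi> a \<sigma> b m''. finite U \<and> partition_on U \<pi> \<and> a \<in> Pi\<^sub>E \<pi> M \<and> partition_on (cd \<pi>) \<sigma>
        \<and> b \<in> Pi\<^sub>E \<sigma> M \<and> m'' \<in> M (cd \<sigma>) \<longrightarrow>
        (let \<rho> = (\<lambda>C. \<Union> (set_decode ` C)) ` \<sigma>;
             c = (\<lambda>R\<in>\<rho>. let C = (THE C. C \<in> \<sigma> \<and> \<Union> (set_decode ` C) = R)
                          in eta R (set_decode ` C) (restrict a (set_decode ` C)) (b C));
             m3 = Mf (\<lambda>n. set_encode (\<Union> (set_decode ` set_decode n))) (cd \<sigma>) m''
         in eta U \<pi> a (eta (cd \<pi>) \<sigma> b m'') = eta U \<rho> c m3)) \<and>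
     \<comment> \<open>right unit (singleton structures on the blocks)\<close>
     (\<forall>U m. finite U \<and> m \<in> M U \<longrightarrow>
        eta U ((\<lambda>u. {u}) ` U) (\<lambda>B\<in>(\<lambda>u. {u}) ` U. unit_str M B)
            (Mf (\<lambda>u. set_encode {u}) U m) = m) \<and>
     \<comment> \<open>left unit (singleton structure on the set of blocks)\<close>
     (\<forall>U m. finite U \<and> m \<in> M U \<longrightarrow>
        eta U {U} (\<lambda>B\<in>{U}. m) (unit_str M {set_encode U}) = m)"

definition bullet :: "(nat set \<Rightarrow> 's set) \<Rightarrow> ((nat \<Rightarrow> nat) \<Rightarrow> nat set \<Rightarrow> 's \<Rightarrow> 's) \<Rightarrow> (nat set \<times> 's) set" where
  "bullet M Mf = tau M Mf {0} (unit_str M {0})"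

section \<open>Polynomial algebra K[t_alpha] as finitely supported functions on monomials (multisets)\<close>

text \<open>The polynomial algebra K[t_alpha : alpha in T] is ('t multiset =>0 'k) restricted to
  monomials over T; its tensor square is ('t multiset x 't multiset =>0 'k) (basis: pairs of
  monomials) with the componentwise product, i.e. the tensor product algebra.\<close>

definition smult_pm :: "'k::comm_ring_1 \<Rightarrow> ('a \<Rightarrow>\<^sub>0 'k) \<Rightarrow> ('a \<Rightarrow>\<^sub>0 'k)" where
  "smult_pm c p = Poly_Mapping.map ((*) c) p"

definition lin_ext :: "('a \<Rightarrow> ('b \<Rightarrow>\<^sub>0 'k::comm_ring_1)) \<Rightarrow> ('a \<Rightarrow>\<^sub>0 'k) \<Rightarrow> ('b \<Rightarrow>\<^sub>0 'k)" where
  "lin_ext f p = (\<Sum>x\<in>Poly_Mapping.keys p. smult_pm (Poly_Mapping.lookup p x) (f x))"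

definition ptens :: "('a \<Rightarrow>\<^sub>0 'k::comm_ring_1) \<Rightarrow> ('b \<Rightarrow>\<^sub>0 'k) \<Rightarrow> ('a \<times> 'b \<Rightarrow>\<^sub>0 'k)" where
  "ptens p q = (\<Sum>x\<in>Poly_Mapping.keys p. \<Sum>y\<in>Poly_Mapping.keys q. Poly_Mapping.single (x, y) (Poly_Mapping.lookup p x * Poly_Mapping.lookup q y))"

definition monomials_over :: "'t set \<Rightarrow> 't multiset set" where
  "monomials_over T = {\<mu>. set_mset \<mu> \<subseteq> T}"

definition DeltaRep :: "(nat set \<Rightarrow> 's set) \<Rightarrow> ((nat \<Rightarrow> nat) \<Rightarrow> nat set \<Rightarrow> 's \<Rightarrow> 's)
     \<Rightarrow> (nat set \<Rightarrow> nat set set \<Rightarrow> (nat set \<Rightarrow> 's) \<Rightarrow> 's \<Rightarrow> 's) \<Rightarrow> nat set \<Rightarrow> 's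
     \<Rightarrow> ((nat set \<times> 's) set multiset \<times> (nat set \<times> 's) set multiset \<Rightarrow>\<^sub>0 'k::comm_ring_1)" where
  "DeltaRep M Mf eta U m =
     (\<Sum>x\<in>{(\<pi>, a, m') \<in> subst M M U. eta U \<pi> a m' = m}.
        case x of (\<pi>, a, m') \<Rightarrow>
          Poly_Mapping.single (image_mset (\<lambda>B. tau M Mf B (a B)) (mset_set \<pi>),
                               {# tau M Mf (cd \<pi>) m' #}) 1)"

definition DeltaGen :: "(nat set \<Rightarrow> 's set) \<Rightarrow> ((nat \<Rightarrow> nat) \<Rightarrow> nat set \<Rightarrow> 's \<Rightarrow> 's)
     \<Rightarrow> (nat set \<Rightarrow> nat set set \<Rightarrow> (nat set \<Rightarrow> 's) \<Rightarrow> 's \<Rightarrow> 's) \<Rightarrow> (nat set \<times> 's) set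
     \<Rightarrow> ((nat set \<times> 's) set multiset \<times> (nat set \<times> 's) set multiset \<Rightarrow>\<^sub>0 'k::comm_ring_1)" where
  "DeltaGen M Mf eta \<alpha> = (let r = (SOME r. r \<in> \<alpha>) in DeltaRep M Mf eta (fst r) (snd r))"

definition Delta :: "(nat set \<Rightarrow> 's set) \<Rightarrow> ((nat \<Rightarrow> nat) \<Rightarrow> nat set \<Rightarrow> 's \<Rightarrow> 's)
     \<Rightarrow> (nat set \<Rightarrow> nat set set \<Rightarrow> (nat set \<Rightarrow> 's) \<Rightarrow> 's \<Rightarrow> 's)
     \<Rightarrow> ((nat set \<times> 's) set multiset \<Rightarrow>\<^sub>0 'k::comm_ring_1)
     \<Rightarrow> ((nat set \<times> 's) set multiset \<times> (nat set \<times> 's) set multiset \<Rightarrow>\<^sub>0 'k)" where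
  "Delta M Mf eta = lin_ext (\<lambda>\<mu>. prod_mset (image_mset (DeltaGen M Mf eta) \<mu>))"

definition eps :: "(nat set \<Rightarrow> 's set) \<Rightarrow> ((nat \<Rightarrow> nat) \<Rightarrow> nat set \<Rightarrow> 's \<Rightarrow> 's)
     \<Rightarrow> ((nat set \<times> 's) set multiset \<Rightarrow>\<^sub>0 'k::comm_ring_1) \<Rightarrow> 'k" where
  "eps M Mf p = (\<Sum>\<mu>\<in>Poly_Mapping.keys p. Poly_Mapping.lookup p \<mu> * (if set_mset \<mu> \<subseteq> {bullet M Mf} then 1 else 0))"

section \<open>Bialgebras and Hopf algebras on the subalgebra spanned by a set B of monomials\<close>

definition bialgebra_on :: "'t multiset set \<Rightarrow> (('t multiset \<Rightarrow>\<^sub>0 'k::comm_ring_1) \<Rightarrow> ('t multiset \<times> 't multiset \<Rightarrow>\<^sub>0 'k))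
     \<Rightarrow> (('t multiset \<Rightarrow>\<^sub>0 'k) \<Rightarrow> 'k) \<Rightarrow> bool" where
  "bialgebra_on B D e \<longleftrightarrow>
     (let A = {p. Poly_Mapping.keys p \<subseteq> B} in
     0 \<in> B \<and> (\<forall>x\<in>B. \<forall>y\<in>B. x + y \<in> B) \<and>
     (\<forall>p\<in>A. Poly_Mapping.keys (D p) \<subseteq> B \<times> B) \<and>
     (\<forall>p\<in>A. \<forall>q\<in>A. D (p + q) = D p + D q \<and> D (p * q) = D p * D q) \<and>
     (\<forall>c. \<forall>p\<in>A. D (smult_pm c p) = smult_pm c (D p)) \<and> D 1 = 1 \<and>
     (\<forall>p\<in>A. \<forall>q\<in>A. e (p + q) = e p + e q \<and> e (p * q) = e p * e q) \<and>
     (\<forall>c. \<forall>p\<in>A. e (smult_pm c p) = c * e p) \<and> e 1 = 1 \<and>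
     \<comment> \<open>coassociativity: (D (x) id) o D = (id (x) D) o D, up to reassociation of the triple tensor\<close>
     (\<forall>p\<in>A. \<forall>x y z.
        Poly_Mapping.lookup (lin_ext (\<lambda>(x, y). ptens (D (Poly_Mapping.single x 1)) (Poly_Mapping.single y 1)) (D p)) ((x, y), z)
      = Poly_Mapping.lookup (lin_ext (\<lambda>(x, y). ptens (Poly_Mapping.single x 1) (D (Poly_Mapping.single y 1))) (D p)) (x, (y, z))) \<and>
     \<comment> \<open>counit\<close>
     (\<forall>p\<in>A. lin_ext (\<lambda>(x, y). smult_pm (e (Poly_Mapping.single x 1)) (Poly_Mapping.single y 1)) (D p) = p) \<and>
     (\<forall>p\<in>A. lin_ext (\<lambda>(x, y). smult_pm (e (Poly_Mapping.single y 1)) (Poly_Mapping.single x 1)) (D p) = p))"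

definition hopf_on :: "'t multiset set \<Rightarrow> (('t multiset \<Rightarrow>\<^sub>0 'k::comm_ring_1) \<Rightarrow> ('t multiset \<times> 't multiset \<Rightarrow>\<^sub>0 'k))
     \<Rightarrow> (('t multiset \<Rightarrow>\<^sub>0 'k) \<Rightarrow> 'k) \<Rightarrow> bool" where
  "hopf_on B D e \<longleftrightarrow> bialgebra_on B D e \<and>
     (let A = {p. Poly_Mapping.keys p \<subseteq> B} in
      \<exists>S. (\<forall>p\<in>A. Poly_Mapping.keys (S p) \<subseteq> B) \<and>
          (\<forall>p\<in>A. \<forall>q\<in>A. S (p + q) = S p + S q) \<and> (\<forall>c. \<forall>p\<in>A. S (smult_pm c p) = smult_pm c (S p)) \<and>
          (\<forall>p\<in>A. lin_ext (\<lambda>(x, y). S (Poly_Mapping.single x 1) * Poly_Mapping.single y 1) (D p) = smult_pm (e p) 1) \<and>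
          (\<forall>p\<in>A. lin_ext (\<lambda>(x, y). Poly_Mapping.single x 1 * S (Poly_Mapping.single y 1)) (D p) = smult_pm (e p) 1))"

section \<open>Identifying t_bullet with 1\<close>

text \<open>The quotient map K[t_alpha] -> K[t_alpha]/(t_bullet - 1) = K[t_alpha : alpha /= bullet]:
  delete all occurrences of bullet from each monomial.\<close>
definition qmap :: "'t \<Rightarrow> ('t multiset \<Rightarrow>\<^sub>0 'k::comm_ring_1) \<Rightarrow> ('t multiset \<Rightarrow>\<^sub>0 'k)" where
  "qmap b = lin_ext (\<lambda>\<mu>. Poly_Mapping.single (filter_mset (\<lambda>\<alpha>. \<alpha> \<noteq> b) \<mu>) 1)"

definition qtens :: "'t \<Rightarrow> ('t multiset \<times> 't multiset \<Rightarrow>\<^sub>0 'k::comm_ring_1) \<Rightarrow> ('t multiset \<times> 't multiset \<Rightarrow>\<^sub>0 'k)" where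
  "qtens b = lin_ext (\<lambda>(\<mu>, \<nu>). Poly_Mapping.single (filter_mset (\<lambda>\<alpha>. \<alpha> \<noteq> b) \<mu>, filter_mset (\<lambda>\<alpha>. \<alpha> \<noteq> b) \<nu>) 1)"

end

theory Submission
  imports Defs
begin

section \<open>Generic algebra of finitely supported functions\<close>

lemma lookup_smult_pm [simp]: "Poly_Mapping.lookup (smult_pm c p) x = c * Poly_Mapping.lookup p x"
  by (simp add: smult_pm_def Poly_Mapping.map.rep_eq when_def)

lemma smult_pm_0 [simp]: "smult_pm 0 p = 0" and smult_pm_0r [simp]: "smult_pm c 0 = 0"
  and smult_pm_1 [simp]: "smult_pm 1 p = p"
  by (auto intro!: poly_mapping_eqI)

lemma smult_pm_add: "smult_pm c (p + q) = smult_pm c p + smult_pm c q"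
  and smult_pm_add2: "smult_pm (c + d) p = smult_pm c p + smult_pm d p"
  and smult_pm_smult [simp]: "smult_pm c (smult_pm d p) = smult_pm (c * d) p"
  by (auto intro!: poly_mapping_eqI simp: lookup_add algebra_simps)

lemma smult_pm_sum: "smult_pm c (sum f I) = (\<Sum>i\<in>I. smult_pm c (f i))"
  by (induction I rule: infinite_finite_induct) (auto simp: smult_pm_add)

lemma smult_pm_sum2: "smult_pm (sum g I) p = (\<Sum>i\<in>I. smult_pm (g i) p)"
  by (induction I rule: infinite_finite_induct) (auto simp: smult_pm_add2)

lemma smult_pm_single [simp]: "smult_pm c (Poly_Mapping.single x d) = Poly_Mapping.single x (c * d)"
  by (auto intro!: poly_mapping_eqI simp: lookup_single when_def)

lemma smult_pm_conv: "smult_pm c (p :: 'a::monoid_add \<Rightarrow>\<^sub>0 'k::comm_ring_1) = Poly_Mapping.single 0 c * p"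
  by (simp add: smult_pm_def mult_map_scale_conv_mult)

lemma smult_pm_mult:
  fixes p q :: "'a::comm_monoid_add \<Rightarrow>\<^sub>0 'k::comm_ring_1"
  shows "smult_pm c p * smult_pm d q = smult_pm (c * d) (p * q)"
  by (simp add: smult_pm_conv mult_single algebra_simps flip: mult_single[of 0 c 0 d, simplified])

lemma smult_pm_mult1:
  fixes p q :: "'a::comm_monoid_add \<Rightarrow>\<^sub>0 'k::comm_ring_1"
  shows "smult_pm c p * q = smult_pm c (p * q)"
  by (simp add: smult_pm_conv algebra_simps)

lemma smult_pm_mult2:
  fixes p q :: "'a::comm_monoid_add \<Rightarrow>\<^sub>0 'k::comm_ring_1"
  shows "p * smult_pm c q = smult_pm c (p * q)"
  by (simp add: smult_pm_conv algebra_simps)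

lemma lookup_sum_pm: "Poly_Mapping.lookup (sum f I) x = (\<Sum>i\<in>I. Poly_Mapping.lookup (f i) x)"
  by (induction I rule: infinite_finite_induct) (auto simp: lookup_add)

lemma pm_expand:
  assumes "finite S" "Poly_Mapping.keys p \<subseteq> S"
  shows "p = (\<Sum>x\<in>S. Poly_Mapping.single x (Poly_Mapping.lookup p x))"
proof (rule poly_mapping_eqI)
  fix k
  have "(\<Sum>x\<in>S. Poly_Mapping.lookup (Poly_Mapping.single x (Poly_Mapping.lookup p x)) k)
      = (\<Sum>x\<in>S. if x = k then Poly_Mapping.lookup p k else 0)"
    by (intro sum.cong) (auto simp: lookup_single when_def)
  also have "\<dots> = Poly_Mapping.lookup p k"
    using assms by (auto simp: in_keys_iff)
  finally show "Poly_Mapping.lookup p k = Poly_Mapping.lookup (\<Sum>x\<in>S. Poly_Mapping.single x (Poly_Mapping.lookup p x)) k"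
    by (simp add: lookup_sum_pm)
qed

lemma pm_expand_keys: "p = (\<Sum>x\<in>Poly_Mapping.keys p. Poly_Mapping.single x (Poly_Mapping.lookup p x))"
  by (rule pm_expand) auto

lemma lin_ext_superset:
  assumes "finite S" "Poly_Mapping.keys p \<subseteq> S"
  shows "lin_ext f p = (\<Sum>x\<in>S. smult_pm (Poly_Mapping.lookup p x) (f x))"
  unfolding lin_ext_def using assms
  by (intro sum.mono_neutral_left) (auto simp: in_keys_iff)

lemma lin_ext_0 [simp]: "lin_ext f 0 = 0"
  by (simp add: lin_ext_def)

lemma lin_ext_single [simp]: "lin_ext f (Poly_Mapping.single x c) = smult_pm c (f x)"
  by (subst lin_ext_superset[of "{x}"]) auto

lemma lin_ext_add: "lin_ext f (p + q) = lin_ext f p + lin_ext f q"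
proof -
  let ?S = "Poly_Mapping.keys p \<union> Poly_Mapping.keys q"
  have k: "Poly_Mapping.keys (p + q) \<subseteq> ?S" by (rule keys_add)
  show ?thesis
    by (simp add: lin_ext_superset[of ?S] k lookup_add smult_pm_add2 sum.distrib)
qed

lemma lin_ext_smult: "lin_ext f (smult_pm c p) = smult_pm c (lin_ext f p)"
proof -
  have k: "Poly_Mapping.keys (smult_pm c p) \<subseteq> Poly_Mapping.keys p"
    by (auto simp: in_keys_iff)
  show ?thesis
    by (simp add: lin_ext_superset[of "Poly_Mapping.keys p"] k smult_pm_sum)
qed

lemma lin_ext_sum: "lin_ext f (sum g I) = (\<Sum>i\<in>I. lin_ext f (g i))"
  by (induction I rule: infinite_finite_induct) (auto simp: lin_ext_add)

lemma lin_ext_cong: "(\<And>x. x \<in> Poly_Mapping.keys p \<Longrightarrow> f x = g x) \<Longrightarrow> lin_ext f p = lin_ext g p"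
  by (simp add: lin_ext_def)

lemma lin_ext_fun_0 [simp]: "lin_ext (\<lambda>x. 0) p = 0"
  by (simp add: lin_ext_def)

lemma lin_ext_fun_add: "lin_ext (\<lambda>x. f x + g x) p = lin_ext f p + lin_ext g p"
  by (simp add: lin_ext_def smult_pm_add sum.distrib)

lemma lin_ext_fun_sum: "lin_ext (\<lambda>x. \<Sum>i\<in>I. f i x) p = (\<Sum>i\<in>I. lin_ext (f i) p)"
  by (induction I rule: infinite_finite_induct) (auto simp: lin_ext_fun_add)

lemma lin_ext_fun_smult: "lin_ext (\<lambda>x. smult_pm c (f x)) p = smult_pm c (lin_ext f p)"
  by (simp add: lin_ext_def smult_pm_sum mult.commute)

lemma lin_ext_id: "lin_ext (\<lambda>x. Poly_Mapping.single x 1) p = p"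
  by (subst (2) pm_expand_keys) (simp add: lin_ext_def)

lemma keys_lin_ext: "Poly_Mapping.keys (lin_ext f p) \<subseteq> (\<Union>x\<in>Poly_Mapping.keys p. Poly_Mapping.keys (f x))"
proof -
  have "Poly_Mapping.keys (lin_ext f p) \<subseteq> (\<Union>x\<in>Poly_Mapping.keys p. Poly_Mapping.keys (smult_pm (Poly_Mapping.lookup p x) (f x)))"
    unfolding lin_ext_def by (rule keys_sum)
  also have "\<dots> \<subseteq> (\<Union>x\<in>Poly_Mapping.keys p. Poly_Mapping.keys (f x))"
  proof (rule UN_mono)
    show "Poly_Mapping.keys (smult_pm (Poly_Mapping.lookup p x) (f x)) \<subseteq> Poly_Mapping.keys (f x)" for x
      by (auto simp: in_keys_iff)
  qed simp
  finally show ?thesis .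
qed

lemma lin_ext_compose: "lin_ext g (lin_ext f p) = lin_ext (\<lambda>x. lin_ext g (f x)) p"
  unfolding lin_ext_def[of f p] lin_ext_def[of "\<lambda>x. lin_ext g (f x)" p]
  by (simp add: lin_ext_sum lin_ext_smult)

lemma lin_ext_induct:
  fixes p :: "'a \<Rightarrow>\<^sub>0 'k::comm_ring_1"
  assumes "P 0" "\<And>x c. x \<in> Poly_Mapping.keys p \<Longrightarrow> P (Poly_Mapping.single x c)"
    "\<And>a b. P a \<Longrightarrow> P b \<Longrightarrow> P (a + b)"
  shows "P p"
proof -
  have "P (\<Sum>x\<in>X. Poly_Mapping.single x (Poly_Mapping.lookup p x))" if "X \<subseteq> Poly_Mapping.keys p" for X
    using finite_subset[OF that] that
    by (induction X rule: finite_induct) (auto intro: assms)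
  then show ?thesis by (subst pm_expand_keys) auto
qed

lemma lin_ext_mult:
  fixes f :: "'a::comm_monoid_add \<Rightarrow> ('b::comm_monoid_add \<Rightarrow>\<^sub>0 'k::comm_ring_1)"
  assumes "\<And>x y. x \<in> Poly_Mapping.keys p \<Longrightarrow> y \<in> Poly_Mapping.keys q \<Longrightarrow> f (x + y) = f x * f y"
  shows "lin_ext f (p * q) = lin_ext f p * lin_ext f q"
proof -
  let ?P = "Poly_Mapping.keys p" and ?Q = "Poly_Mapping.keys q"
  have "p * q = (\<Sum>x\<in>?P. Poly_Mapping.single x (Poly_Mapping.lookup p x)) *
                (\<Sum>y\<in>?Q. Poly_Mapping.single y (Poly_Mapping.lookup q y))"
    by (simp flip: pm_expand_keys)
  also have "\<dots> = (\<Sum>x\<in>?P. \<Sum>y\<in>?Q. Poly_Mapping.single (x + y) (Poly_Mapping.lookup p x * Poly_Mapping.lookup q y))"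
    by (simp add: sum_product mult_single)
  finally have pq: "p * q = \<dots>" .
  have "lin_ext f (p * q) = (\<Sum>x\<in>?P. \<Sum>y\<in>?Q. smult_pm (Poly_Mapping.lookup p x * Poly_Mapping.lookup q y) (f (x + y)))"
    by (simp add: pq lin_ext_sum)
  also have "\<dots> = (\<Sum>x\<in>?P. \<Sum>y\<in>?Q. smult_pm (Poly_Mapping.lookup p x) (f x) * smult_pm (Poly_Mapping.lookup q y) (f y))"
    by (intro sum.cong refl) (simp add: assms smult_pm_mult)
  also have "\<dots> = lin_ext f p * lin_ext f q"
    by (simp add: lin_ext_def sum_product)
  finally show ?thesis .
qed

definition mapk :: "('a \<Rightarrow> 'b) \<Rightarrow> ('a \<Rightarrow>\<^sub>0 'k::comm_ring_1) \<Rightarrow> ('b \<Rightarrow>\<^sub>0 'k)" where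
  "mapk h = lin_ext (\<lambda>x. Poly_Mapping.single (h x) 1)"

lemma mapk_single [simp]: "mapk h (Poly_Mapping.single x c) = Poly_Mapping.single (h x) c"
  by (simp add: mapk_def)

lemma mapk_add: "mapk h (p + q) = mapk h p + mapk h q"
  by (simp add: mapk_def lin_ext_add)

lemma mapk_sum: "mapk h (sum g I) = (\<Sum>i\<in>I. mapk h (g i))"
  by (simp add: mapk_def lin_ext_sum)

lemma mapk_smult: "mapk h (smult_pm c p) = smult_pm c (mapk h p)"
  by (simp add: mapk_def lin_ext_smult)

lemma mapk_0 [simp]: "mapk h 0 = 0"
  by (simp add: mapk_def)

lemma lin_ext_mapk: "lin_ext g (mapk h p) = lin_ext (\<lambda>x. g (h x)) p"
  by (simp add: mapk_def lin_ext_compose)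

lemma mapk_lin_ext: "mapk h (lin_ext g p) = lin_ext (\<lambda>x. mapk h (g x)) p"
  by (simp add: mapk_def lin_ext_compose)

lemma mapk_mapk: "mapk h (mapk g p) = mapk (h \<circ> g) p"
  by (simp add: mapk_def lin_ext_compose)

lemma mapk_id: "mapk (\<lambda>x. x) p = p"
  by (simp add: mapk_def lin_ext_id)

lemma lookup_mapk_inj: "inj h \<Longrightarrow> Poly_Mapping.lookup (mapk h p) (h x) = Poly_Mapping.lookup p x"
  unfolding mapk_def lin_ext_def lookup_sum_pm
  by (simp add: lookup_single when_def inj_eq in_keys_iff)

lemma mapk_mult:
  fixes h :: "'a::comm_monoid_add \<Rightarrow> 'b::comm_monoid_add"
  assumes "\<And>x y. h (x + y) = h x + h y"
  shows "mapk h (p * q :: 'a \<Rightarrow>\<^sub>0 'k::comm_ring_1) = mapk h p * mapk h q"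
  unfolding mapk_def by (rule lin_ext_mult) (simp add: assms mult_single)

lemma mapk_one:
  fixes h :: "'a::comm_monoid_add \<Rightarrow> 'b::comm_monoid_add"
  assumes "h 0 = 0"
  shows "mapk h (1 :: 'a \<Rightarrow>\<^sub>0 'k::comm_ring_1) = 1"
  using assms by (simp flip: single_one)

lemma keys_mapk: "Poly_Mapping.keys (mapk h p) \<subseteq> h ` Poly_Mapping.keys p"
  using keys_lin_ext[of "\<lambda>x. Poly_Mapping.single (h x) 1" p] by (auto simp: mapk_def)

lemma ptens_lin_ext: "ptens p q = lin_ext (\<lambda>x. lin_ext (\<lambda>y. Poly_Mapping.single (x, y) 1) q) p"
  by (simp add: ptens_def lin_ext_def smult_pm_sum)

lemma ptens_single [simp]: "ptens (Poly_Mapping.single x a) (Poly_Mapping.single y b) = Poly_Mapping.single (x, y) (a * b)"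
  by (simp add: ptens_lin_ext)

lemma ptens_add1: "ptens (p + p') q = ptens p q + ptens p' q"
  and ptens_add2: "ptens p (q + q') = ptens p q + ptens p q'"
  by (simp_all add: ptens_lin_ext lin_ext_add lin_ext_fun_add)

lemma ptens_smult1: "ptens (smult_pm c p) q = smult_pm c (ptens p q)"
  and ptens_smult2: "ptens p (smult_pm c q) = smult_pm c (ptens p q)"
  by (simp_all add: ptens_lin_ext lin_ext_smult lin_ext_fun_smult)

lemma ptens_sum1: "ptens (sum f I) q = (\<Sum>i\<in>I. ptens (f i) q)"
  and ptens_sum2: "ptens p (sum g I) = (\<Sum>i\<in>I. ptens p (g i))"
  by (simp_all add: ptens_lin_ext lin_ext_sum lin_ext_fun_sum)

lemma ptens_0 [simp]: "ptens 0 q = 0" "ptens p 0 = 0"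
  by (simp_all add: ptens_lin_ext)

lemma ptens_as_mult:
  fixes p :: "'a::comm_monoid_add \<Rightarrow>\<^sub>0 'k::comm_ring_1" and q :: "'b::comm_monoid_add \<Rightarrow>\<^sub>0 'k"
  shows "ptens p q = mapk (\<lambda>x. (x, 0)) p * mapk (\<lambda>y. (0, y)) q"
proof -
  have "ptens p q = lin_ext (\<lambda>x. lin_ext (\<lambda>y. Poly_Mapping.single (x, 0) 1 * Poly_Mapping.single (0, y) 1) q) p"
    unfolding ptens_lin_ext by (simp add: mult_single)
  also have "\<dots> = lin_ext (\<lambda>x. Poly_Mapping.single (x, 0) 1 * mapk (\<lambda>y. (0, y)) q) p"
    by (simp add: mapk_def lin_ext_def smult_pm_mult2 sum_distrib_left mult_single)
  also have "\<dots> = mapk (\<lambda>x. (x, 0)) p * mapk (\<lambda>y. (0, y)) q"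
    by (simp add: mapk_def lin_ext_def sum_distrib_right flip: smult_pm_mult1)
  finally show ?thesis .
qed

lemma ptens_mult:
  fixes p p' :: "'a::comm_monoid_add \<Rightarrow>\<^sub>0 'k::comm_ring_1" and q q' :: "'b::comm_monoid_add \<Rightarrow>\<^sub>0 'k"
  shows "ptens (p * p') (q * q') = ptens p q * ptens p' q'"
  by (simp add: ptens_as_mult mapk_mult algebra_simps)

lemma ptens_one [simp]: "ptens (1 :: 'a::comm_monoid_add \<Rightarrow>\<^sub>0 'k::comm_ring_1) (1 :: 'b::comm_monoid_add \<Rightarrow>\<^sub>0 'k) = 1"
  by (simp flip: single_one add: zero_prod_def)

lemma ptens_mapk: "ptens (mapk h p) (mapk g q) = mapk (\<lambda>(x, y). (h x, g y)) (ptens p q)"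
  by (simp add: ptens_lin_ext mapk_def lin_ext_compose lin_ext_smult lin_ext_fun_smult)

lemma lin_ext_ptens: "lin_ext F (ptens p q) = lin_ext (\<lambda>x. lin_ext (\<lambda>y. F (x, y)) q) p"
  by (simp add: ptens_lin_ext lin_ext_compose)

locale oper =
  fixes M :: "nat set \<Rightarrow> 's set"
    and Mf :: "(nat \<Rightarrow> nat) \<Rightarrow> nat set \<Rightarrow> 's \<Rightarrow> 's"
    and eta :: "nat set \<Rightarrow> nat set set \<Rightarrow> (nat set \<Rightarrow> 's) \<Rightarrow> 's \<Rightarrow> 's"
  assumes op: "set_operad M Mf eta"
begin

lemma S: "species M Mf" using op unfolding set_operad_def by (elim conjE)

lemma spc1: "\<forall>U. finite U \<longrightarrow> finite (M U)"
  using S unfolding species_def by (elim conjE) assumption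

lemma spc2: "\<forall>U. \<not> finite U \<longrightarrow> M U = {}"
  using S unfolding species_def by (elim conjE) assumption

lemma spc3: "\<forall>f U V m. finite U \<and> bij_betw f U V \<and> m \<in> M U \<longrightarrow> Mf f U m \<in> M V"
  using S unfolding species_def by (elim conjE) assumption

lemma spc4: "\<forall>U m. finite U \<and> m \<in> M U \<longrightarrow> Mf id U m = m"
  using S unfolding species_def by (elim conjE) assumption

lemma spc5: "\<forall>f g U V m. finite U \<and> bij_betw f U V \<and> bij_betw g V (g ` V) \<and> m \<in> M U
        \<longrightarrow> Mf (g \<circ> f) U m = Mf g V (Mf f U m)"
  using S unfolding species_def by (elim conjE) assumption

lemma spc6: "\<forall>f g U m. finite U \<and> (\<forall>x\<in>U. f x = g x) \<longrightarrow> Mf f U m = Mf g U m"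
  using S unfolding species_def by (elim conjE) assumption



lemma sp_fin: "finite U \<Longrightarrow> finite (M U)" using spc1 by blast
lemma sp_inf: "\<not> finite U \<Longrightarrow> M U = {}" using spc2 by blast
lemma sp_in: "finite U \<Longrightarrow> bij_betw f U V \<Longrightarrow> m \<in> M U \<Longrightarrow> Mf f U m \<in> M V" using spc3 by blast
lemma sp_id: "finite U \<Longrightarrow> m \<in> M U \<Longrightarrow> Mf id U m = m" using spc4 by blast
lemma sp_comp: "finite U \<Longrightarrow> bij_betw f U V \<Longrightarrow> bij_betw g V (g ` V) \<Longrightarrow> m \<in> M U
        \<Longrightarrow> Mf (g \<circ> f) U m = Mf g V (Mf f U m)" using spc5 by blast
lemma sp_cong: "finite U \<Longrightarrow> (\<And>x. x \<in> U \<Longrightarrow> f x = g x) \<Longrightarrow> Mf f U m = Mf g U m"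
  using spc6 by blast

lemma opc1: "M {} = {}"
  using op unfolding set_operad_def by (elim conjE) assumption

lemma opc2: "\<forall>U. card U = 1 \<longrightarrow> card (M U) = 1"
  using op unfolding set_operad_def by (elim conjE) assumption

lemma opc3: "\<forall>U \<pi> a m'. finite U \<and> (\<pi>, a, m') \<in> subst M M U \<longrightarrow> eta U \<pi> a m' \<in> M U"
  using op unfolding set_operad_def by (elim conjE) assumption

lemma opc4: "\<forall>U V f \<pi> a m'. finite U \<and> bij_betw f U V \<and> (\<pi>, a, m') \<in> subst M M U \<longrightarrow>
        (case subst_transport Mf f U (\<pi>, a, m') of (\<pi>2, a2, m2) \<Rightarrow> eta V \<pi>2 a2 m2)
          = Mf f U (eta U \<pi> a m')"
  using op unfolding set_operad_def by (elim conjE) assumption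

lemma opc5: "\<forall>U \<pi> a \<sigma> b m''. finite U \<and> partition_on U \<pi> \<and> a \<in> Pi\<^sub>E \<pi> M \<and> partition_on (cd \<pi>) \<sigma>
        \<and> b \<in> Pi\<^sub>E \<sigma> M \<and> m'' \<in> M (cd \<sigma>) \<longrightarrow>
        (let \<rho> = (\<lambda>C. \<Union> (set_decode ` C)) ` \<sigma>;
             c = (\<lambda>R\<in>\<rho>. let C = (THE C. C \<in> \<sigma> \<and> \<Union> (set_decode ` C) = R)
                          in eta R (set_decode ` C) (restrict a (set_decode ` C)) (b C));
             m3 = Mf (\<lambda>n. set_encode (\<Union> (set_decode ` set_decode n))) (cd \<sigma>) m''
         in eta U \<pi> a (eta (cd \<pi>) \<sigma> b m'') = eta U \<rho> c m3)"
  using op unfolding set_operad_def by (elim conjE) assumption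

lemma opc6: "\<forall>U m. finite U \<and> m \<in> M U \<longrightarrow>
        eta U ((\<lambda>u. {u}) ` U) (\<lambda>B\<in>(\<lambda>u. {u}) ` U. unit_str M B)
            (Mf (\<lambda>u. set_encode {u}) U m) = m"
  using op unfolding set_operad_def by (elim conjE) assumption

lemma opc7: "\<forall>U m. finite U \<and> m \<in> M U \<longrightarrow>
        eta U {U} (\<lambda>B\<in>{U}. m) (unit_str M {set_encode U}) = m"
  using op unfolding set_operad_def by (elim conjE) assumption



lemma M_empty: "M {} = {}" by (rule opc1)
lemma M_single: "card U = 1 \<Longrightarrow> card (M U) = 1" using opc2 by blast
lemma eta_in: "finite U \<Longrightarrow> (\<pi>, a, m') \<in> subst M M U \<Longrightarrow> eta U \<pi> a m' \<in> M U"
  using opc3 by blast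
lemma eta_nat: "finite U \<Longrightarrow> bij_betw f U V \<Longrightarrow> (\<pi>, a, m') \<in> subst M M U \<Longrightarrow>
        (case subst_transport Mf f U (\<pi>, a, m') of (\<pi>2, a2, m2) \<Rightarrow> eta V \<pi>2 a2 m2)
          = Mf f U (eta U \<pi> a m')"
  using opc4 by blast
lemma eta_assoc: "finite U \<Longrightarrow> partition_on U \<pi> \<Longrightarrow> a \<in> Pi\<^sub>E \<pi> M \<Longrightarrow> partition_on (cd \<pi>) \<sigma>
        \<Longrightarrow> b \<in> Pi\<^sub>E \<sigma> M \<Longrightarrow> m'' \<in> M (cd \<sigma>) \<Longrightarrow>
        (let \<rho> = (\<lambda>C. \<Union> (set_decode ` C)) ` \<sigma>;
             c = (\<lambda>R\<in>\<rho>. let C = (THE C. C \<in> \<sigma> \<and> \<Union> (set_decode ` C) = R)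
                          in eta R (set_decode ` C) (restrict a (set_decode ` C)) (b C));
             m3 = Mf (\<lambda>n. set_encode (\<Union> (set_decode ` set_decode n))) (cd \<sigma>) m''
         in eta U \<pi> a (eta (cd \<pi>) \<sigma> b m'') = eta U \<rho> c m3)"
  using opc5 by (simp only: imp_conjL)
lemma eta_runit: "finite U \<Longrightarrow> m \<in> M U \<Longrightarrow>
        eta U ((\<lambda>u. {u}) ` U) (\<lambda>B\<in>(\<lambda>u. {u}) ` U. unit_str M B)
            (Mf (\<lambda>u. set_encode {u}) U m) = m"
  using opc6 by blast
lemma eta_lunit: "finite U \<Longrightarrow> m \<in> M U \<Longrightarrow> eta U {U} (\<lambda>B\<in>{U}. m) (unit_str M {set_encode U}) = m"
  using opc7 by blast

lemma sp_inv:
  assumes "finite U" "bij_betw f U V" "m \<in> M U"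
  shows "Mf (inv_into U f) V (Mf f U m) = m"
proof -
  have b: "bij_betw (inv_into U f) V U" using assms(2) by (rule bij_betw_inv_into)
  then have "inv_into U f ` V = U" by (simp add: bij_betw_def)
  with b have b': "bij_betw (inv_into U f) V (inv_into U f ` V)" by simp
  have "Mf (inv_into U f) V (Mf f U m) = Mf (inv_into U f \<circ> f) U m"
    using sp_comp[OF assms(1,2) b' assms(3)] by simp
  also have "\<dots> = Mf id U m"
    using assms(2) by (intro sp_cong[OF assms(1)]) (auto simp: bij_betw_def)
  also have "\<dots> = m" by (rule sp_id[OF assms(1,3)])
  finally show ?thesis .
qed

lemma bij_finite: "finite U \<Longrightarrow> bij_betw f U V \<Longrightarrow> finite V"
  using bij_betw_finite by blast

lemma tau_self: "finite U \<Longrightarrow> m \<in> M U \<Longrightarrow> (U, m) \<in> tau M Mf U m"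
  unfolding tau_def using sp_id[of U m] by (auto intro!: exI[of _ id])

lemma tau_transport:
  assumes U: "finite U" and f: "bij_betw f U V" and m: "m \<in> M U"
  shows "tau M Mf V (Mf f U m) = tau M Mf U m"
proof
  show "tau M Mf V (Mf f U m) \<subseteq> tau M Mf U m"
  proof
    fix x assume "x \<in> tau M Mf V (Mf f U m)"
    then obtain W y g where x: "x = (W, y)" and g: "bij_betw g V W" and y: "y = Mf g V (Mf f U m)"
      unfolding tau_def by auto
    have g': "bij_betw g V (g ` V)" using g by (simp add: bij_betw_def)
    have "y = Mf (g \<circ> f) U m" using sp_comp[OF U f g' m] y by simp
    moreover have "bij_betw (g \<circ> f) U W" using f g by (rule bij_betw_trans)
    ultimately show "x \<in> tau M Mf U m" unfolding tau_def x by auto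
  qed
next
  show "tau M Mf U m \<subseteq> tau M Mf V (Mf f U m)"
  proof
    fix x assume "x \<in> tau M Mf U m"
    then obtain W y h where x: "x = (W, y)" and h: "bij_betw h U W" and y: "y = Mf h U m"
      unfolding tau_def by auto
    define g where "g = h \<circ> inv_into U f"
    have gb: "bij_betw g V W" unfolding g_def
      using bij_betw_inv_into[OF f] h by (rule bij_betw_trans)
    have g': "bij_betw g V (g ` V)" using gb by (simp add: bij_betw_def)
    have "Mf g V (Mf f U m) = Mf (g \<circ> f) U m" using sp_comp[OF U f g' m] by simp
    also have "\<dots> = Mf h U m"
      using f by (intro sp_cong[OF U]) (auto simp: g_def bij_betw_def)
    finally show "x \<in> tau M Mf V (Mf f U m)" unfolding tau_def x y using gb by auto
  qed
qed

lemma tau_memD: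
  assumes "finite U" "m \<in> M U" "(V, m') \<in> tau M Mf U m"
  shows "finite V" "m' \<in> M V" "tau M Mf V m' = tau M Mf U m" "card V = card U"
    "\<exists>f. bij_betw f U V \<and> m' = Mf f U m"
proof -
  obtain f where f: "bij_betw f U V" and m': "m' = Mf f U m"
    using assms(3) unfolding tau_def by auto
  show "\<exists>f. bij_betw f U V \<and> m' = Mf f U m" using f m' by blast
  show "finite V" using bij_finite[OF assms(1) f] .
  show "m' \<in> M V" using sp_in[OF assms(1) f assms(2)] m' by simp
  show "tau M Mf V m' = tau M Mf U m" using tau_transport[OF assms(1) f assms(2)] m' by simp
  show "card V = card U" using f by (simp add: bij_betw_same_card)
qed

lemma tau_eq_imp_mem:
  assumes "finite U" "m \<in> M U" "tau M Mf U m = tau M Mf V m'" "finite V" "m' \<in> M V"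
  shows "(V, m') \<in> tau M Mf U m"
  using assms tau_self[of V m'] by simp

end

lemma part_blocks:
  assumes "partition_on U \<pi>" "B \<in> \<pi>"
  shows "B \<subseteq> U" "B \<noteq> {}"
  using assms unfolding partition_on_def by auto

lemma part_finite:
  assumes "finite U" "partition_on U \<pi>"
  shows "finite \<pi>" "\<And>B. B \<in> \<pi> \<Longrightarrow> finite B"
  using assms finite_elements[OF assms] part_blocks[OF assms(2)] by (auto intro: finite_subset)

lemma cd_inj:
  assumes "\<And>B. B \<in> \<pi> \<Longrightarrow> finite B"
  shows "inj_on set_encode \<pi>"
  using assms by (auto intro!: inj_onI simp: set_encode_eq)

lemma decode_cd:
  assumes "\<And>B. B \<in> \<pi> \<Longrightarrow> finite B"
  shows "set_decode ` cd \<pi> = \<pi>"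
  using assms unfolding cd_def by (force simp: image_image)

lemma finite_cd: "finite \<pi> \<Longrightarrow> finite (cd \<pi>)"
  by (simp add: cd_def)

lemma card_cd: "(\<And>B. B \<in> \<pi> \<Longrightarrow> finite B) \<Longrightarrow> card (cd \<pi>) = card \<pi>"
  unfolding cd_def by (rule card_image[OF cd_inj])

context oper
begin

definition Dec :: "nat set \<Rightarrow> 's \<Rightarrow> (nat set set \<times> (nat set \<Rightarrow> 's) \<times> 's) set" where
  "Dec U m = {(\<pi>, a, m') \<in> subst M M U. eta U \<pi> a m' = m}"

definition keyD :: "nat set set \<times> (nat set \<Rightarrow> 's) \<times> 's \<Rightarrow> (nat set \<times> 's) set multiset \<times> (nat set \<times> 's) set multiset" where
  "keyD x = (case x of (\<pi>, a, m') \<Rightarrow> (image_mset (\<lambda>B. tau M Mf B (a B)) (mset_set \<pi>), {# tau M Mf (cd \<pi>) m' #}))"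

lemma DeltaRep_eq: "DeltaRep M Mf eta U m = (\<Sum>x\<in>Dec U m. Poly_Mapping.single (keyD x) 1)"
  unfolding DeltaRep_def Dec_def keyD_def by (intro sum.cong) auto

lemma finite_subst:
  assumes "finite U"
  shows "finite (subst M M U)"
proof -
  have "subst M M U \<subseteq> Sigma {\<pi>. partition_on U \<pi>} (\<lambda>\<pi>. Pi\<^sub>E \<pi> M \<times> M (cd \<pi>))"
    unfolding subst_def by auto
  moreover have "finite (Sigma {\<pi>. partition_on U \<pi>} (\<lambda>\<pi>. Pi\<^sub>E \<pi> M \<times> M (cd \<pi>)))"
  proof (rule finite_SigmaI)
    show "finite {\<pi>. partition_on U \<pi>}" using assms by (rule finitely_many_partition_on)
    fix \<pi> assume "\<pi> \<in> {\<pi>. partition_on U \<pi>}"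
    then have p: "partition_on U \<pi>" by simp
    note pf = part_finite[OF assms p]
    show "finite (Pi\<^sub>E \<pi> M \<times> M (cd \<pi>))"
      using pf by (intro finite_cartesian_product finite_PiE sp_fin finite_cd) auto
  qed
  ultimately show ?thesis by (rule finite_subset)
qed

lemma finite_Dec: "finite U \<Longrightarrow> finite (Dec U m)"
  unfolding Dec_def by (rule finite_subset[OF _ finite_subst]) auto

lemma substD:
  assumes "(\<pi>, a, m') \<in> subst M M U"
  shows "partition_on U \<pi>" "a \<in> Pi\<^sub>E \<pi> M" "m' \<in> M (cd \<pi>)"
  using assms unfolding subst_def by auto

lemma Dec_iff: "(\<pi>, a, m') \<in> Dec U m \<longleftrightarrow> (\<pi>, a, m') \<in> subst M M U \<and> eta U \<pi> a m' = m"
  unfolding Dec_def by auto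

section \<open>Transport of decompositions\<close>

lemma transport_cd:
  assumes U: "finite U" and f: "inj_on f U" and p: "partition_on U \<pi>"
  shows "bij_betw (\<lambda>n. set_encode (f ` set_decode n)) (cd \<pi>) (cd ((`) f ` \<pi>))"
proof -
  note pf = part_finite[OF U p]
  have sub: "B \<in> \<pi> \<Longrightarrow> B \<subseteq> U" for B using part_blocks[OF p] by auto
  have h: "set_encode (f ` set_decode (set_encode B)) = set_encode (f ` B)" if "B \<in> \<pi>" for B
    using pf(2)[OF that] by simp
  show ?thesis
  proof (rule bij_betw_imageI)
    show "inj_on (\<lambda>n. set_encode (f ` set_decode n)) (cd \<pi>)"
    proof (rule inj_onI)
      fix x y assume "x \<in> cd \<pi>" "y \<in> cd \<pi>" and eq: "set_encode (f ` set_decode x) = set_encode (f ` set_decode y)"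
      then obtain B C where B: "B \<in> \<pi>" "x = set_encode B" and C: "C \<in> \<pi>" "y = set_encode C"
        unfolding cd_def by auto
      have "f ` B = f ` C" using eq B C pf(2)[OF B(1)] pf(2)[OF C(1)] by (simp add: set_encode_eq)
      then have "B = C" using f sub[OF B(1)] sub[OF C(1)] by (simp add: inj_on_image_eq_iff)
      then show "x = y" using B C by simp
    qed
    show "(\<lambda>n. set_encode (f ` set_decode n)) ` cd \<pi> = cd ((`) f ` \<pi>)"
      unfolding cd_def using h by (auto simp: image_image)
  qed
qed

lemma transport_part:
  assumes U: "finite U" and f: "bij_betw f U V" and p: "partition_on U \<pi>"
  shows "partition_on V ((`) f ` \<pi>)"
proof -
  have "partition_on (f ` U) ((`) f ` \<pi> - {{}})"
    using p f by (intro partition_on_inj_image) (auto simp: bij_betw_def)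
  moreover have "(`) f ` \<pi> - {{}} = (`) f ` \<pi>" using part_blocks[OF p] by auto
  moreover have "f ` U = V" using f by (simp add: bij_betw_def)
  ultimately show ?thesis by simp
qed

lemma preimage_block:
  assumes f: "bij_betw f U V" and B: "B \<subseteq> U"
  shows "U \<inter> f -` (f ` B) = B"
  using f B by (auto simp: bij_betw_def inj_on_def)

lemma transport_props:
  assumes U: "finite U" and f: "bij_betw f U V" and x: "(\<pi>, a, m') \<in> subst M M U"
  shows "subst_transport Mf f U (\<pi>, a, m') \<in> subst M M V"
    "keyD (subst_transport Mf f U (\<pi>, a, m')) = keyD (\<pi>, a, m')"
    "subst_transport Mf (inv_into U f) V (subst_transport Mf f U (\<pi>, a, m')) = (\<pi>, a, m')"
proof -
  note xD = substD[OF x]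
  note pf = part_finite[OF U xD(1)]
  have sub: "B \<in> \<pi> \<Longrightarrow> B \<subseteq> U" for B using part_blocks[OF xD(1)] by auto
  have finj: "inj_on f U" using f by (simp add: bij_betw_def)
  define \<pi>' where "\<pi>' = (`) f ` \<pi>"
  define a' where "a' = (\<lambda>B'\<in>\<pi>'. Mf f (U \<inter> f -` B') (a (U \<inter> f -` B')))"
  define h where "h = (\<lambda>n. set_encode (f ` set_decode n))"
  have st: "subst_transport Mf f U (\<pi>, a, m') = (\<pi>', a', Mf h (cd \<pi>) m')"
    unfolding subst_transport_def \<pi>'_def a'_def h_def by simp
  have fB: "bij_betw f B (f ` B)" if "B \<in> \<pi>" for B
    using finj sub[OF that] by (auto intro: inj_on_subset simp: bij_betw_def)
  have a'f: "a' (f ` B) = Mf f B (a B)" if "B \<in> \<pi>" for B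
    using that preimage_block[OF f sub[OF that]] unfolding a'_def \<pi>'_def by auto
  have pV: "partition_on V \<pi>'" unfolding \<pi>'_def by (rule transport_part[OF U f xD(1)])
  have a'in: "a' \<in> Pi\<^sub>E \<pi>' M"
  proof
    fix B' assume "B' \<in> \<pi>'"
    then obtain B where B: "B \<in> \<pi>" "B' = f ` B" unfolding \<pi>'_def by auto
    show "a' B' \<in> M B'" using B a'f sp_in[OF pf(2)[OF B(1)] fB[OF B(1)]] xD(2) by auto
  next
    fix B' assume "B' \<notin> \<pi>'" then show "a' B' = undefined" unfolding a'_def by simp
  qed
  have hb: "bij_betw h (cd \<pi>) (cd \<pi>')"
    unfolding h_def \<pi>'_def by (rule transport_cd[OF U finj xD(1)])
  have fincd: "finite (cd \<pi>)" using pf(1) by (rule finite_cd)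
  have m2: "Mf h (cd \<pi>) m' \<in> M (cd \<pi>')" by (rule sp_in[OF fincd hb xD(3)])
  show "subst_transport Mf f U (\<pi>, a, m') \<in> subst M M V"
    unfolding st subst_def using pV a'in m2 by auto
  have inj\<pi>: "inj_on ((`) f) \<pi>"
    using finj sub by (auto intro!: inj_onI simp: inj_on_image_eq_iff)
  have k1: "image_mset (\<lambda>B. tau M Mf B (a' B)) (mset_set \<pi>') = image_mset (\<lambda>B. tau M Mf B (a B)) (mset_set \<pi>)"
  proof -
    have "image_mset (\<lambda>B. tau M Mf B (a' B)) (mset_set \<pi>') =
          image_mset (\<lambda>B. tau M Mf B (a' B)) (image_mset ((`) f) (mset_set \<pi>))"
      unfolding \<pi>'_def by (simp add: image_mset_mset_set[OF inj\<pi>])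
    also have "\<dots> = image_mset (\<lambda>B. tau M Mf (f ` B) (a' (f ` B))) (mset_set \<pi>)"
      by (simp add: multiset.map_comp comp_def)
    also have "\<dots> = image_mset (\<lambda>B. tau M Mf B (a B)) (mset_set \<pi>)"
    proof (rule image_mset_cong)
      fix B assume "B \<in># mset_set \<pi>"
      then have B: "B \<in> \<pi>" using pf(1) by simp
      show "tau M Mf (f ` B) (a' (f ` B)) = tau M Mf B (a B)"
        using a'f[OF B] tau_transport[OF pf(2)[OF B] fB[OF B]] xD(2) B by auto
    qed
    finally show ?thesis .
  qed
  have k2: "tau M Mf (cd \<pi>') (Mf h (cd \<pi>) m') = tau M Mf (cd \<pi>) m'"
    by (rule tau_transport[OF fincd hb xD(3)])
  show "keyD (subst_transport Mf f U (\<pi>, a, m')) = keyD (\<pi>, a, m')"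
    unfolding st keyD_def using k1 k2 by simp
  define g where "g = inv_into U f"
  have gb: "bij_betw g V U" unfolding g_def by (rule bij_betw_inv_into[OF f])
  have gf: "u \<in> U \<Longrightarrow> g (f u) = u" for u unfolding g_def using finj by simp
  have Vfin: "finite V" by (rule bij_finite[OF U f])
  have gimg: "(`) g ` \<pi>' = \<pi>"
  proof -
    have "g ` (f ` B) = B" if "B \<in> \<pi>" for B
      using gf sub[OF that] by (force simp: image_image)
    then show ?thesis unfolding \<pi>'_def by (force simp: image_image)
  qed
  have pre: "V \<inter> g -` B = f ` B" if "B \<in> \<pi>" for B
  proof -
    have "V = f ` U" using f by (simp add: bij_betw_def)
    then show ?thesis using sub[OF that] gf by auto
  qed
  define h' where "h' = (\<lambda>n. set_encode (g ` set_decode n))"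
  have st2: "subst_transport Mf g V (\<pi>', a', Mf h (cd \<pi>) m') =
     (\<pi>, (\<lambda>B\<in>\<pi>. Mf g (V \<inter> g -` B) (a' (V \<inter> g -` B))), Mf h' (cd \<pi>') (Mf h (cd \<pi>) m'))"
    unfolding subst_transport_def h'_def by (simp add: gimg)
  have aeq: "(\<lambda>B\<in>\<pi>. Mf g (V \<inter> g -` B) (a' (V \<inter> g -` B))) = a"
  proof (rule ext)
    fix B
    show "(\<lambda>B\<in>\<pi>. Mf g (V \<inter> g -` B) (a' (V \<inter> g -` B))) B = a B"
    proof (cases "B \<in> \<pi>")
      case True
      have "Mf g (f ` B) (Mf f B (a B)) = Mf (inv_into B f) (f ` B) (Mf f B (a B))"
      proof (rule sp_cong)
        show "finite (f ` B)" using pf(2)[OF True] by simp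
        fix y assume "y \<in> f ` B"
        then obtain u where u: "u \<in> B" "y = f u" by auto
        have "inv_into B f (f u) = u" using u fB[OF True] by (simp add: bij_betw_def)
        then show "g y = inv_into B f y" using u gf sub[OF True] by auto
      qed
      also have "\<dots> = a B"
        using sp_inv[OF pf(2)[OF True] fB[OF True]] xD(2) True by auto
      finally show ?thesis using True pre a'f by simp
    next
      case False
      then show ?thesis using xD(2) by auto
    qed
  qed
  have hb': "bij_betw h' (cd \<pi>') (cd \<pi>)"
  proof -
    have "bij_betw h' (cd \<pi>') (cd ((`) g ` \<pi>'))"
      unfolding h'_def by (rule transport_cd[OF Vfin _ pV]) (use gb in \<open>simp add: bij_betw_def\<close>)
    then show ?thesis using gimg by simp
  qed
  have meq: "Mf h' (cd \<pi>') (Mf h (cd \<pi>) m') = m'"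
  proof -
    have hb'': "bij_betw h' (cd \<pi>') (h' ` cd \<pi>')" using hb' by (simp add: bij_betw_def)
    have "Mf h' (cd \<pi>') (Mf h (cd \<pi>) m') = Mf (h' \<circ> h) (cd \<pi>) m'"
      using sp_comp[OF fincd hb hb'' xD(3)] by simp
    also have "\<dots> = Mf id (cd \<pi>) m'"
    proof (rule sp_cong[OF fincd])
      fix n assume "n \<in> cd \<pi>"
      then obtain B where B: "B \<in> \<pi>" "n = set_encode B" unfolding cd_def by auto
      have "g ` f ` B = B" using gf sub[OF B(1)] by (force simp: image_image)
      then show "(h' \<circ> h) n = id n" using B pf(2)[OF B(1)] unfolding h_def h'_def by simp
    qed
    also have "\<dots> = m'" by (rule sp_id[OF fincd xD(3)])
    finally show ?thesis .
  qed
  show "subst_transport Mf (inv_into U f) V (subst_transport Mf f U (\<pi>, a, m')) = (\<pi>, a, m')"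
    unfolding st g_def[symmetric] st2 aeq meq by simp
qed

lemma st_cong:
  assumes U: "finite U" and x: "(\<pi>, a, m') \<in> subst M M U" and fg: "\<And>u. u \<in> U \<Longrightarrow> f u = f' u"
  shows "subst_transport Mf f U (\<pi>, a, m') = subst_transport Mf f' U (\<pi>, a, m')"
proof -
  note xD = substD[OF x]
  note pf = part_finite[OF U xD(1)]
  have sub: "B \<in> \<pi> \<Longrightarrow> B \<subseteq> U" for B using part_blocks[OF xD(1)] by auto
  have img: "f ` B = f' ` B" if "B \<in> \<pi>" for B
    by (rule image_cong[OF refl]) (use fg sub[OF that] in auto)
  have p1: "(`) f ` \<pi> = (`) f' ` \<pi>" using img by (auto simp: image_iff)
  have pre: "U \<inter> f -` B' = U \<inter> f' -` B'" for B' using fg by auto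
  have a1: "Mf f (U \<inter> f' -` B') y = Mf f' (U \<inter> f' -` B') y" for B' y
    using U fg by (intro sp_cong) auto
  have m1: "Mf (\<lambda>n. set_encode (f ` set_decode n)) (cd \<pi>) m' = Mf (\<lambda>n. set_encode (f' ` set_decode n)) (cd \<pi>) m'"
  proof (rule sp_cong[OF finite_cd[OF pf(1)]])
    fix n assume "n \<in> cd \<pi>"
    then obtain B where "B \<in> \<pi>" "n = set_encode B" unfolding cd_def by auto
    then show "set_encode (f ` set_decode n) = set_encode (f' ` set_decode n)"
      using img pf(2) by simp
  qed
  show ?thesis unfolding subst_transport_def prod.case by (simp only: p1 pre a1 m1)
qed

lemma Dec_transport:
  assumes U: "finite U" and f: "bij_betw f U V" and m: "m \<in> M U"
  shows "DeltaRep M Mf eta V (Mf f U m) = DeltaRep M Mf eta U m"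
proof -
  define g where "g = inv_into U f"
  have gb: "bij_betw g V U" unfolding g_def by (rule bij_betw_inv_into[OF f])
  have Vfin: "finite V" by (rule bij_finite[OF U f])
  have mm: "Mf g V (Mf f U m) = m" unfolding g_def by (rule sp_inv[OF U f m])
  have fg: "\<And>u. u \<in> U \<Longrightarrow> inv_into V g u = f u"
  proof -
    fix u assume u: "u \<in> U"
    have "f u \<in> V" using f u by (auto simp: bij_betw_def)
    moreover have "g (f u) = u" unfolding g_def using f u by (simp add: bij_betw_def)
    ultimately show "inv_into V g u = f u"
      using gb by (intro inv_into_f_eq) (auto simp: bij_betw_def)
  qed
  have gen: "x \<in> Dec U0 m0 \<Longrightarrow> finite U0 \<Longrightarrow> bij_betw f0 U0 V0 \<Longrightarrow>
      subst_transport Mf f0 U0 x \<in> Dec V0 (Mf f0 U0 m0)" for x U0 m0 f0 V0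
  proof -
    assume x: "x \<in> Dec U0 m0" and U0: "finite U0" and f0: "bij_betw f0 U0 V0"
    obtain \<pi> a m' where xe: "x = (\<pi>, a, m')" by (cases x) auto
    have xs: "(\<pi>, a, m') \<in> subst M M U0" and e: "eta U0 \<pi> a m' = m0" using x xe Dec_iff by auto
    obtain \<pi>2 a2 m2 where te: "subst_transport Mf f0 U0 (\<pi>, a, m') = (\<pi>2, a2, m2)"
      by (cases "subst_transport Mf f0 U0 (\<pi>, a, m')") auto
    have "eta V0 \<pi>2 a2 m2 = Mf f0 U0 m0"
      using eta_nat[OF U0 f0 xs] e unfolding te by simp
    moreover have "(\<pi>2, a2, m2) \<in> subst M M V0" using transport_props(1)[OF U0 f0 xs] te by simp
    ultimately show ?thesis unfolding xe te Dec_iff by simp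
  qed
  show ?thesis
    unfolding DeltaRep_eq
  proof (rule sum.reindex_bij_witness[where i = "subst_transport Mf f U" and j = "subst_transport Mf g V"])
    fix x assume x: "x \<in> Dec V (Mf f U m)"
    obtain \<pi> a m' where xe: "x = (\<pi>, a, m')" by (cases x) auto
    have xs: "(\<pi>, a, m') \<in> subst M M V" using x xe Dec_iff by auto
    have ys: "subst_transport Mf g V x \<in> subst M M U"
      using transport_props(1)[OF Vfin gb xs] xe by simp
    obtain \<pi>2 a2 m2 where ye: "subst_transport Mf g V x = (\<pi>2, a2, m2)" by (cases "subst_transport Mf g V x") auto
    have "subst_transport Mf f U (\<pi>2, a2, m2) = subst_transport Mf (inv_into V g) U (\<pi>2, a2, m2)"
      by (rule st_cong[OF U ys[unfolded ye]]) (rule sym, rule fg)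
    then have "subst_transport Mf f U (subst_transport Mf g V x) = subst_transport Mf (inv_into V g) U (subst_transport Mf g V x)"
      unfolding ye .
    then show "subst_transport Mf f U (subst_transport Mf g V x) = x"
      using transport_props(3)[OF Vfin gb xs] unfolding xe by simp
    show "subst_transport Mf g V x \<in> Dec U m"
      using gen[OF x Vfin gb] mm by simp
    show "Poly_Mapping.single (keyD (subst_transport Mf g V x)) 1 = Poly_Mapping.single (keyD x) 1"
      using transport_props(2)[OF Vfin gb xs] unfolding xe by simp
  next
    fix x assume x: "x \<in> Dec U m"
    obtain \<pi> a m' where xe: "x = (\<pi>, a, m')" by (cases x) auto
    have xs: "(\<pi>, a, m') \<in> subst M M U" using x xe Dec_iff by auto
    show "subst_transport Mf g V (subst_transport Mf f U x) = x"
      using transport_props(3)[OF U f xs] unfolding xe g_def .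
    show "subst_transport Mf f U x \<in> Dec V (Mf f U m)"
      using gen[OF x U f] .
  qed
qed

end

definition RR :: "nat set \<Rightarrow> nat set" where "RR C = \<Union> (set_decode ` C)"
definition hh :: "nat \<Rightarrow> nat" where "hh n = set_encode (\<Union> (set_decode ` set_decode n))"

lemma decode_inj: "inj set_decode"
  by (metis injI set_decode_inverse)

lemma cd_decode: "cd (set_decode ` C) = C"
  unfolding cd_def by (simp add: image_image)

context
  fixes U :: "nat set" and \<pi> \<sigma> :: "nat set set"
  assumes U: "finite U" and p: "partition_on U \<pi>" and s: "partition_on (cd \<pi>) \<sigma>"
begin

lemma pi_fin: "finite \<pi>" "B \<in> \<pi> \<Longrightarrow> finite B" "B \<in> \<pi> \<Longrightarrow> B \<subseteq> U" "B \<in> \<pi> \<Longrightarrow> B \<noteq> {}"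
  using part_finite[OF U p] part_blocks[OF p] by auto

lemma cdpi_fin: "finite (cd \<pi>)" using pi_fin(1) by (rule finite_cd)

lemma sig_fin: "finite \<sigma>" "C \<in> \<sigma> \<Longrightarrow> finite C" "C \<in> \<sigma> \<Longrightarrow> C \<subseteq> cd \<pi>" "C \<in> \<sigma> \<Longrightarrow> C \<noteq> {}"
  using part_finite[OF cdpi_fin s] part_blocks[OF s] by auto

lemma dec_sub: "C \<in> \<sigma> \<Longrightarrow> set_decode ` C \<subseteq> \<pi>"
  using sig_fin(3) decode_cd[OF pi_fin(2)] by blast

lemma pi_union: "\<pi> = (\<Union>C\<in>\<sigma>. set_decode ` C)"
proof -
  have "\<Union> \<sigma> = cd \<pi>" using s by (simp add: partition_on_def)
  then have "(\<Union>C\<in>\<sigma>. set_decode ` C) = set_decode ` cd \<pi>" by blast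
  then show ?thesis using decode_cd[OF pi_fin(2)] by simp
qed

lemma sig_disj: "C \<in> \<sigma> \<Longrightarrow> C' \<in> \<sigma> \<Longrightarrow> C \<noteq> C' \<Longrightarrow> C \<inter> C' = {}"
  using s unfolding partition_on_def disjoint_def by blast

lemma dec_disj: "C \<in> \<sigma> \<Longrightarrow> C' \<in> \<sigma> \<Longrightarrow> C \<noteq> C' \<Longrightarrow> set_decode ` C \<inter> set_decode ` C' = {}"
  using sig_disj[of C C'] by (simp add: image_Int[OF decode_inj, symmetric])

lemma pi_disj: "B \<in> \<pi> \<Longrightarrow> B' \<in> \<pi> \<Longrightarrow> B \<noteq> B' \<Longrightarrow> B \<inter> B' = {}"
  using p unfolding partition_on_def disjoint_def by blast

lemma RR_sub: "C \<in> \<sigma> \<Longrightarrow> RR C \<subseteq> U"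
proof
  fix x assume C: "C \<in> \<sigma>" and "x \<in> RR C"
  then obtain n where n: "n \<in> C" "x \<in> set_decode n" unfolding RR_def by auto
  have "set_decode n \<in> \<pi>" using dec_sub[OF C] n(1) by auto
  then show "x \<in> U" using pi_fin(3) n(2) by auto
qed

lemma RR_ne: "C \<in> \<sigma> \<Longrightarrow> RR C \<noteq> {}"
proof -
  assume C: "C \<in> \<sigma>"
  obtain n where n: "n \<in> C" using sig_fin(4)[OF C] by auto
  have B: "set_decode n \<in> \<pi>" using dec_sub[OF C] n by auto
  then obtain x where "x \<in> set_decode n" using pi_fin(4)[OF B] by auto
  then show "RR C \<noteq> {}" using n unfolding RR_def by auto
qed

lemma RR_fin: "C \<in> \<sigma> \<Longrightarrow> finite (RR C)"
  using RR_sub U finite_subset by blast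

lemma RR_disj:
  assumes C: "C \<in> \<sigma>" and C': "C' \<in> \<sigma>" and ne: "C \<noteq> C'"
  shows "RR C \<inter> RR C' = {}"
proof (rule ccontr)
  assume "RR C \<inter> RR C' \<noteq> {}"
  then obtain x n n' where n: "n \<in> C" "x \<in> set_decode n" and n': "n' \<in> C'" "x \<in> set_decode n'"
    unfolding RR_def by auto
  have B: "set_decode n \<in> \<pi>" using dec_sub[OF C] n by auto
  have B': "set_decode n' \<in> \<pi>" using dec_sub[OF C'] n' by auto
  have "set_decode n = set_decode n'" using pi_disj[OF B B'] n n' by auto
  then have "n = n'" using decode_inj by (auto dest: injD)
  then show False using sig_disj[OF C C' ne] n n' by auto
qed

lemma RR_inj: "inj_on RR \<sigma>"
proof (rule inj_onI)
  fix C C' assume C: "C \<in> \<sigma>" and C': "C' \<in> \<sigma>" and e: "RR C = RR C'"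
  show "C = C'"
  proof (rule ccontr)
    assume "C \<noteq> C'"
    then have "RR C \<inter> RR C' = {}" by (rule RR_disj[OF C C'])
    then show False using e RR_ne[OF C] by auto
  qed
qed

lemma rho_part: "partition_on U (RR ` \<sigma>)"
proof (rule partition_onI)
  have "\<Union> (RR ` \<sigma>) = \<Union> (\<Union>C\<in>\<sigma>. set_decode ` C)" by (auto simp: RR_def)
  also have "\<dots> = \<Union> \<pi>" using pi_union by simp
  also have "\<dots> = U" using p by (simp add: partition_on_def)
  finally show "\<Union> (RR ` \<sigma>) = U" .
  show "{} \<notin> RR ` \<sigma>" using RR_ne by auto
  fix R R' assume "R \<in> RR ` \<sigma>" "R' \<in> RR ` \<sigma>" "R \<noteq> R'"
  then obtain C C' where "C \<in> \<sigma>" "C' \<in> \<sigma>" "R = RR C" "R' = RR C'" "C \<noteq> C'" by auto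
  then show "disjnt R R'" using RR_disj by (auto simp: disjnt_def)
qed

lemma block_part: "C \<in> \<sigma> \<Longrightarrow> partition_on (RR C) (set_decode ` C)"
proof (rule partition_onI)
  assume C: "C \<in> \<sigma>"
  show "\<Union> (set_decode ` C) = RR C" by (simp add: RR_def)
  show "{} \<notin> set_decode ` C"
  proof
    assume "{} \<in> set_decode ` C"
    then have "{} \<in> \<pi>" using dec_sub[OF C] by auto
    then show False using pi_fin(4) by auto
  qed
  fix B B' assume "B \<in> set_decode ` C" "B' \<in> set_decode ` C" "B \<noteq> B'"
  then have "B \<in> \<pi>" "B' \<in> \<pi>" "B \<noteq> B'" using dec_sub[OF C] by auto
  then show "disjnt B B'" using pi_disj by (auto simp: disjnt_def)
qed

lemma the_C: "C \<in> \<sigma> \<Longrightarrow> (THE C'. C' \<in> \<sigma> \<and> \<Union> (set_decode ` C') = RR C) = C"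
proof (rule the_equality)
  assume C: "C \<in> \<sigma>"
  show "C \<in> \<sigma> \<and> \<Union> (set_decode ` C) = RR C" using C by (simp add: RR_def)
  fix C' assume "C' \<in> \<sigma> \<and> \<Union> (set_decode ` C') = RR C"
  then have "C' \<in> \<sigma>" "RR C' = RR C" by (auto simp: RR_def)
  then show "C' = C" using RR_inj C by (auto dest: inj_onD)
qed

lemma hh_enc: "C \<in> \<sigma> \<Longrightarrow> hh (set_encode C) = set_encode (RR C)"
  using sig_fin(2) by (simp add: hh_def RR_def)

lemma hh_bij: "bij_betw hh (cd \<sigma>) (cd (RR ` \<sigma>))"
proof (rule bij_betw_imageI)
  show "inj_on hh (cd \<sigma>)"
  proof (rule inj_onI)
    fix x y assume "x \<in> cd \<sigma>" "y \<in> cd \<sigma>" and e: "hh x = hh y"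
    then obtain C C' where C: "C \<in> \<sigma>" "x = set_encode C" and C': "C' \<in> \<sigma>" "y = set_encode C'"
      unfolding cd_def by auto
    have "RR C = RR C'" using e C C' hh_enc RR_fin by (simp add: set_encode_eq)
    then have "C = C'" using RR_inj C C' by (auto dest: inj_onD)
    then show "x = y" using C C' by simp
  qed
  show "hh ` cd \<sigma> = cd (RR ` \<sigma>)" unfolding cd_def using hh_enc by (auto simp: image_image)
qed

lemma cd_rho_fin: "finite (cd \<sigma>)" using sig_fin(1) by (rule finite_cd)

end

context
  fixes U :: "nat set" and \<rho> :: "nat set set" and P :: "nat set \<Rightarrow> nat set set"
  assumes U: "finite U" and r: "partition_on U \<rho>" and pr: "\<And>R. R \<in> \<rho> \<Longrightarrow> partition_on R (P R)"
begin

lemma rho_fin: "finite \<rho>" "R \<in> \<rho> \<Longrightarrow> finite R" "R \<in> \<rho> \<Longrightarrow> R \<subseteq> U" "R \<in> \<rho> \<Longrightarrow> R \<noteq> {}"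
  using part_finite[OF U r] part_blocks[OF r] by auto

lemma P_blocks: "R \<in> \<rho> \<Longrightarrow> B \<in> P R \<Longrightarrow> B \<subseteq> R \<and> B \<noteq> {} \<and> finite B"
proof -
  assume R: "R \<in> \<rho>" and B: "B \<in> P R"
  have "B \<subseteq> R" "B \<noteq> {}" using part_blocks[OF pr[OF R] B] by auto
  moreover have "finite B" using \<open>B \<subseteq> R\<close> rho_fin(2)[OF R] by (rule finite_subset)
  ultimately show ?thesis by simp
qed

lemma P_fin: "R \<in> \<rho> \<Longrightarrow> finite (P R)"
  using part_finite(1)[OF rho_fin(2) pr] by blast

lemma rho_disj: "R \<in> \<rho> \<Longrightarrow> R' \<in> \<rho> \<Longrightarrow> R \<noteq> R' \<Longrightarrow> R \<inter> R' = {}"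
  using r unfolding partition_on_def disjoint_def by blast

lemma P_disj:
  assumes R: "R \<in> \<rho>" and R': "R' \<in> \<rho>" and ne: "R \<noteq> R'"
  shows "P R \<inter> P R' = {}"
proof (rule ccontr)
  assume "P R \<inter> P R' \<noteq> {}"
  then obtain B where B: "B \<in> P R" "B \<in> P R'" by auto
  have "B \<subseteq> R" "B \<subseteq> R'" "B \<noteq> {}" using P_blocks[OF R B(1)] P_blocks[OF R' B(2)] by auto
  then show False using rho_disj[OF R R' ne] by auto
qed

lemma P_unique: "R \<in> \<rho> \<Longrightarrow> R' \<in> \<rho> \<Longrightarrow> B \<in> P R \<Longrightarrow> B \<in> P R' \<Longrightarrow> R = R'"
  using P_disj by blast

lemma pi_part: "partition_on U (\<Union>R\<in>\<rho>. P R)"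
proof (rule partition_onI)
  have "\<Union> (\<Union>R\<in>\<rho>. P R) = (\<Union>R\<in>\<rho>. \<Union> (P R))" by auto
  also have "\<dots> = (\<Union>R\<in>\<rho>. R)" using pr by (simp add: partition_on_def)
  also have "\<dots> = U" using r by (simp add: partition_on_def)
  finally show "\<Union> (\<Union>R\<in>\<rho>. P R) = U" .
  show "{} \<notin> (\<Union>R\<in>\<rho>. P R)"
  proof
    assume "{} \<in> (\<Union>R\<in>\<rho>. P R)"
    then obtain R where "R \<in> \<rho>" "{} \<in> P R" by auto
    then show False using P_blocks by auto
  qed
  fix B B' assume B: "B \<in> (\<Union>R\<in>\<rho>. P R)" and B': "B' \<in> (\<Union>R\<in>\<rho>. P R)" and ne: "B \<noteq> B'"
  then obtain R R' where R: "R \<in> \<rho>" "B \<in> P R" and R': "R' \<in> \<rho>" "B' \<in> P R'" by auto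
  show "disjnt B B'"
  proof (cases "R = R'")
    case True
    then show ?thesis using pr[OF R(1)] R(2) R'(2) ne by (auto simp: partition_on_def pairwise_def)
  next
    case False
    have "B \<subseteq> R" "B' \<subseteq> R'" using P_blocks R R' by auto
    then show ?thesis using rho_disj[OF R(1) R'(1) False] by (auto simp: disjnt_def)
  qed
qed

lemma P_ne: "R \<in> \<rho> \<Longrightarrow> P R \<noteq> {}"
proof
  assume R: "R \<in> \<rho>" and "P R = {}"
  then have "\<Union> (P R) = {}" by simp
  moreover have "\<Union> (P R) = R" using pr[OF R] by (simp add: partition_on_def)
  ultimately show False using rho_fin(4)[OF R] by simp
qed

lemma cdP_inj: "inj_on (\<lambda>R. cd (P R)) \<rho>"
proof (rule inj_onI)
  fix R R' assume R: "R \<in> \<rho>" and R': "R' \<in> \<rho>" and e: "cd (P R) = cd (P R')"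
  have f1: "\<And>B. B \<in> P R \<Longrightarrow> finite B" using P_blocks[OF R] by auto
  have f2: "\<And>B. B \<in> P R' \<Longrightarrow> finite B" using P_blocks[OF R'] by auto
  have d1: "set_decode ` cd (P R) = P R" by (rule decode_cd) (rule f1)
  have d2: "set_decode ` cd (P R') = P R'" by (rule decode_cd) (rule f2)
  have "P R = set_decode ` cd (P R)" using d1 by (rule sym)
  also have "\<dots> = set_decode ` cd (P R')" using e by (rule arg_cong)
  also have "\<dots> = P R'" by (rule d2)
  finally have "P R = P R'" .
  then show "R = R'"
  proof -
    assume eq: "P R = P R'"
    show "R = R'"
    proof (rule ccontr)
      assume "R \<noteq> R'"
      then have "P R \<inter> P R' = {}" by (rule P_disj[OF R R'])
      then show False using eq P_ne[OF R] by auto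
    qed
  qed
qed

lemma RR_cdP: "R \<in> \<rho> \<Longrightarrow> RR (cd (P R)) = R"
proof -
  assume R: "R \<in> \<rho>"
  have f1: "\<And>B. B \<in> P R \<Longrightarrow> finite B" using P_blocks[OF R] by auto
  have d1: "set_decode ` cd (P R) = P R" by (rule decode_cd) (rule f1)
  have "RR (cd (P R)) = \<Union> (P R)" unfolding RR_def by (simp only: d1)
  also have "\<dots> = R" using pr[OF R] by (simp add: partition_on_def)
  finally show ?thesis .
qed

lemma cd_pi: "cd (\<Union>R\<in>\<rho>. P R) = (\<Union>R\<in>\<rho>. cd (P R))"
  unfolding cd_def by (rule image_UN)

lemma sig_part: "partition_on (cd (\<Union>R\<in>\<rho>. P R)) ((\<lambda>R. cd (P R)) ` \<rho>)"
proof (rule partition_onI)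
  show "\<Union> ((\<lambda>R. cd (P R)) ` \<rho>) = cd (\<Union>R\<in>\<rho>. P R)" by (simp add: cd_pi)
  show "{} \<notin> (\<lambda>R. cd (P R)) ` \<rho>"
  proof
    assume "{} \<in> (\<lambda>R. cd (P R)) ` \<rho>"
    then obtain R where "R \<in> \<rho>" "cd (P R) = {}" by auto
    then show False using P_ne by (auto simp: cd_def)
  qed
  fix C C' assume "C \<in> (\<lambda>R. cd (P R)) ` \<rho>" "C' \<in> (\<lambda>R. cd (P R)) ` \<rho>" "C \<noteq> C'"
  then obtain R R' where R: "R \<in> \<rho>" "C = cd (P R)" and R': "R' \<in> \<rho>" "C' = cd (P R')" and ne: "R \<noteq> R'"
    by auto
  have d: "P R \<inter> P R' = {}" by (rule P_disj[OF R(1) R'(1) ne])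
  have "set_encode B \<noteq> set_encode B'" if "B \<in> P R" "B' \<in> P R'" for B B'
  proof
    assume "set_encode B = set_encode B'"
    then have "B = B'" using that P_blocks R R' by (auto simp: set_encode_eq)
    then show False using d that by auto
  qed
  then show "disjnt C C'" using R R' by (auto simp: disjnt_def cd_def)
qed

lemma rho_eq: "RR ` ((\<lambda>R. cd (P R)) ` \<rho>) = \<rho>"
proof -
  have "RR ` ((\<lambda>R. cd (P R)) ` \<rho>) = (\<lambda>R. RR (cd (P R))) ` \<rho>" by (simp add: image_image)
  also have "\<dots> = (\<lambda>R. R) ` \<rho>" by (rule image_cong[OF refl]) (rule RR_cdP)
  finally show ?thesis by simp
qed

end

lemma RR_abs: "(\<lambda>C. \<Union> (set_decode ` C)) = RR" by (simp add: RR_def fun_eq_iff)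
lemma hh_abs: "(\<lambda>n. set_encode (\<Union> (set_decode ` set_decode n))) = hh" by (simp add: hh_def fun_eq_iff)

definition Cof :: "nat set set \<Rightarrow> nat set \<Rightarrow> nat set" where
  "Cof \<sigma> R = (THE C. C \<in> \<sigma> \<and> \<Union> (set_decode ` C) = R)"

lemma restrict_PiE_eq: "f \<in> Pi\<^sub>E A B \<Longrightarrow> (\<And>x. x \<in> A \<Longrightarrow> f x = g x) \<Longrightarrow> f = restrict g A"
  by (auto simp: PiE_def extensional_def fun_eq_iff)

context oper
begin

definition cfun :: "nat set set \<Rightarrow> (nat set \<Rightarrow> 's) \<Rightarrow> (nat set \<Rightarrow> 's) \<Rightarrow> nat set \<Rightarrow> 's" where
  "cfun \<sigma> a b = (\<lambda>R\<in>RR ` \<sigma>. eta R (set_decode ` Cof \<sigma> R) (restrict a (set_decode ` Cof \<sigma> R)) (b (Cof \<sigma> R)))"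

lemma eta_assoc':
  assumes "finite U" "partition_on U \<pi>" "a \<in> Pi\<^sub>E \<pi> M" "partition_on (cd \<pi>) \<sigma>" "b \<in> Pi\<^sub>E \<sigma> M" "m'' \<in> M (cd \<sigma>)"
  shows "eta U \<pi> a (eta (cd \<pi>) \<sigma> b m'') = eta U (RR ` \<sigma>) (cfun \<sigma> a b) (Mf hh (cd \<sigma>) m'')"
  using eta_assoc[OF assms] unfolding Let_def RR_abs hh_abs cfun_def Cof_def .

lemma sp_inv2:
  assumes V: "finite V" and f: "bij_betw f V W" and m: "m \<in> M W"
  shows "Mf f V (Mf (inv_into V f) W m) = m"
proof -
  have W: "finite W" using bij_finite[OF V f] .
  have g: "bij_betw (inv_into V f) W V" by (rule bij_betw_inv_into[OF f])
  have "Mf (inv_into W (inv_into V f)) V (Mf (inv_into V f) W m) = m" by (rule sp_inv[OF W g m])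
  moreover have "Mf (inv_into W (inv_into V f)) V x = Mf f V x" for x
  proof (rule sp_cong[OF V])
    fix u assume u: "u \<in> V"
    have "f u \<in> W" using f u by (auto simp: bij_betw_def)
    moreover have "inv_into V f (f u) = u" using f u by (simp add: bij_betw_def)
    ultimately show "inv_into W (inv_into V f) u = f u"
      using g f u by (intro inv_into_f_eq) (auto simp: bij_betw_def)
  qed
  ultimately show ?thesis by simp
qed

definition S1 :: "nat set \<Rightarrow> 's \<Rightarrow> ((nat set set \<times> (nat set \<Rightarrow> 's) \<times> 's) \<times> (nat set \<Rightarrow> nat set set \<times> (nat set \<Rightarrow> 's) \<times> 's)) set" where
  "S1 U m = Sigma (Dec U m) (\<lambda>(\<rho>, c, m3). Pi\<^sub>E \<rho> (\<lambda>R. Dec R (c R)))"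

definition S2 :: "nat set \<Rightarrow> 's \<Rightarrow> ((nat set set \<times> (nat set \<Rightarrow> 's) \<times> 's) \<times> (nat set set \<times> (nat set \<Rightarrow> 's) \<times> 's)) set" where
  "S2 U m = Sigma (Dec U m) (\<lambda>(\<pi>, a, m'). Dec (cd \<pi>) m')"

definition Phi where
  "Phi y = (case y of ((\<pi>, a, m'), (\<sigma>, b, m'')) \<Rightarrow>
     ((RR ` \<sigma>, cfun \<sigma> a b, Mf hh (cd \<sigma>) m''),
      (\<lambda>R\<in>RR ` \<sigma>. (set_decode ` Cof \<sigma> R, restrict a (set_decode ` Cof \<sigma> R), b (Cof \<sigma> R)))))"

definition Rof :: "nat set set \<Rightarrow> (nat set \<Rightarrow> nat set set \<times> (nat set \<Rightarrow> 's) \<times> 's) \<Rightarrow> nat set \<Rightarrow> nat set" where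
  "Rof \<rho> ch B = (THE R. R \<in> \<rho> \<and> B \<in> fst (ch R))"

definition Qof :: "nat set set \<Rightarrow> (nat set \<Rightarrow> nat set set \<times> (nat set \<Rightarrow> 's) \<times> 's) \<Rightarrow> nat set \<Rightarrow> nat set" where
  "Qof \<rho> ch C = (THE R. R \<in> \<rho> \<and> cd (fst (ch R)) = C)"

definition Psi where
  "Psi z = (case z of ((\<rho>, c, m3), ch) \<Rightarrow>
     (let \<pi> = (\<Union>R\<in>\<rho>. fst (ch R));
          \<sigma> = (\<lambda>R. cd (fst (ch R))) ` \<rho>;
          b = (\<lambda>C\<in>\<sigma>. snd (snd (ch (Qof \<rho> ch C))));
          m'' = Mf (inv_into (cd \<sigma>) hh) (cd \<rho>) m3
      in ((\<pi>, (\<lambda>B\<in>\<pi>. fst (snd (ch (Rof \<rho> ch B))) B), eta (cd \<pi>) \<sigma> b m''), (\<sigma>, b, m''))))"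

lemma Phi_simp: "Phi ((\<pi>, a, m'), (\<sigma>, b, m'')) = ((RR ` \<sigma>, cfun \<sigma> a b, Mf hh (cd \<sigma>) m''),
      (\<lambda>R\<in>RR ` \<sigma>. (set_decode ` Cof \<sigma> R, restrict a (set_decode ` Cof \<sigma> R), b (Cof \<sigma> R))))"
  by (simp add: Phi_def)

lemma Psi_simp: "Psi ((\<rho>, c, m3), ch) =
   ((\<Union>R\<in>\<rho>. fst (ch R),
     (\<lambda>B\<in>(\<Union>R\<in>\<rho>. fst (ch R)). fst (snd (ch (Rof \<rho> ch B))) B),
     eta (cd (\<Union>R\<in>\<rho>. fst (ch R))) ((\<lambda>R. cd (fst (ch R))) ` \<rho>)
        (\<lambda>C\<in>(\<lambda>R. cd (fst (ch R))) ` \<rho>. snd (snd (ch (Qof \<rho> ch C))))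
        (Mf (inv_into (cd ((\<lambda>R. cd (fst (ch R))) ` \<rho>)) hh) (cd \<rho>) m3)),
    ((\<lambda>R. cd (fst (ch R))) ` \<rho>,
     (\<lambda>C\<in>(\<lambda>R. cd (fst (ch R))) ` \<rho>. snd (snd (ch (Qof \<rho> ch C)))),
     Mf (inv_into (cd ((\<lambda>R. cd (fst (ch R))) ` \<rho>)) hh) (cd \<rho>) m3))"
  by (simp add: Psi_def Let_def)

lemma phi_facts:
  assumes U: "finite U" and y: "((\<pi>, a, m'), (\<sigma>, b, m'')) \<in> S2 U m"
  shows "Phi ((\<pi>, a, m'), (\<sigma>, b, m'')) \<in> S1 U m"
    "Psi (Phi ((\<pi>, a, m'), (\<sigma>, b, m''))) = ((\<pi>, a, m'), (\<sigma>, b, m''))"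
proof -
  have d1: "(\<pi>, a, m') \<in> Dec U m" and d2: "(\<sigma>, b, m'') \<in> Dec (cd \<pi>) m'" using y by (auto simp: S2_def)
  have x1: "(\<pi>, a, m') \<in> subst M M U" "eta U \<pi> a m' = m" using d1 Dec_iff by auto
  have x2: "(\<sigma>, b, m'') \<in> subst M M (cd \<pi>)" "eta (cd \<pi>) \<sigma> b m'' = m'" using d2 Dec_iff by auto
  note s1 = substD[OF x1(1)] and s2 = substD[OF x2(1)]
  note p = s1(1) and s = s2(1)
  have thC: "C \<in> \<sigma> \<Longrightarrow> Cof \<sigma> (RR C) = C" for C unfolding Cof_def by (rule the_C[OF U p s])
  have blk: "C \<in> \<sigma> \<Longrightarrow> (set_decode ` C, restrict a (set_decode ` C), b C) \<in> subst M M (RR C)" for C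
  proof -
    assume C: "C \<in> \<sigma>"
    have "partition_on (RR C) (set_decode ` C)" by (rule block_part[OF U p s C])
    moreover have "restrict a (set_decode ` C) \<in> Pi\<^sub>E (set_decode ` C) M"
      using s1(2) dec_sub[OF U p s C] by (auto simp: PiE_def Pi_def)
    moreover have "b C \<in> M (cd (set_decode ` C))" using s2(2) C by (auto simp: cd_decode)
    ultimately show ?thesis unfolding subst_def by auto
  qed
  have cin: "cfun \<sigma> a b \<in> Pi\<^sub>E (RR ` \<sigma>) M"
  proof
    fix R assume "R \<in> RR ` \<sigma>"
    then obtain C where C: "C \<in> \<sigma>" "R = RR C" by auto
    show "cfun \<sigma> a b R \<in> M R" unfolding cfun_def C(2) using C(1) thC[OF C(1)] eta_in[OF RR_fin[OF U p s C(1)] blk[OF C(1)]] by simp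
  next
    fix R assume "R \<notin> RR ` \<sigma>" then show "cfun \<sigma> a b R = undefined" by (simp add: cfun_def)
  qed
  have hb: "bij_betw hh (cd \<sigma>) (cd (RR ` \<sigma>))" by (rule hh_bij[OF U p s])
  have fcs: "finite (cd \<sigma>)" by (rule cd_rho_fin[OF U p s])
  have m3: "Mf hh (cd \<sigma>) m'' \<in> M (cd (RR ` \<sigma>))" by (rule sp_in[OF fcs hb s2(3)])
  have e: "eta U (RR ` \<sigma>) (cfun \<sigma> a b) (Mf hh (cd \<sigma>) m'') = m"
    using eta_assoc'[OF U p s1(2) s s2(2,3)] x1(2) x2(2) by simp
  have D1: "(RR ` \<sigma>, cfun \<sigma> a b, Mf hh (cd \<sigma>) m'') \<in> Dec U m"
    unfolding Dec_iff subst_def using rho_part[OF U p s] cin m3 e by auto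
  let ?ch = "\<lambda>R\<in>RR ` \<sigma>. (set_decode ` Cof \<sigma> R, restrict a (set_decode ` Cof \<sigma> R), b (Cof \<sigma> R))"
  have D2: "?ch \<in> Pi\<^sub>E (RR ` \<sigma>) (\<lambda>R. Dec R (cfun \<sigma> a b R))"
  proof
    fix R assume "R \<in> RR ` \<sigma>"
    then obtain C where C: "C \<in> \<sigma>" "R = RR C" by auto
    show "?ch R \<in> Dec R (cfun \<sigma> a b R)"
      using C blk[OF C(1)] thC[OF C(1)] by (simp add: cfun_def Dec_iff)
  qed simp
  show "Phi ((\<pi>, a, m'), (\<sigma>, b, m'')) \<in> S1 U m"
    unfolding Phi_def S1_def using D1 D2 by simp
  let ?\<rho> = "RR ` \<sigma>"
  have fstch: "(\<Union>R\<in>?\<rho>. fst (?ch R)) = \<pi>"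
  proof -
    have "(\<Union>R\<in>?\<rho>. fst (?ch R)) = (\<Union>C\<in>\<sigma>. fst (?ch (RR C)))" by simp
    also have "\<dots> = (\<Union>C\<in>\<sigma>. set_decode ` C)" using thC by (intro SUP_cong) auto
    also have "\<dots> = \<pi>" by (rule pi_union[OF U p s, symmetric])
    finally show ?thesis .
  qed
  have sig: "(\<lambda>R. cd (fst (?ch R))) ` ?\<rho> = \<sigma>"
  proof -
    have "(\<lambda>R. cd (fst (?ch R))) ` ?\<rho> = (\<lambda>C. cd (fst (?ch (RR C)))) ` \<sigma>" by (simp add: image_image)
    also have "\<dots> = (\<lambda>C. C) ` \<sigma>" using thC by (intro image_cong) (auto simp: cd_decode)
    finally show ?thesis by simp
  qed
  have Q: "C \<in> \<sigma> \<Longrightarrow> Qof ?\<rho> ?ch C = RR C" for C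
  proof -
    assume C: "C \<in> \<sigma>"
    show ?thesis unfolding Qof_def
    proof (rule the_equality)
      show "RR C \<in> ?\<rho> \<and> cd (fst (?ch (RR C))) = C" using C thC[OF C] by (simp add: cd_decode)
      fix R assume "R \<in> ?\<rho> \<and> cd (fst (?ch R)) = C"
      then obtain C' where "C' \<in> \<sigma>" "R = RR C'" "cd (fst (?ch R)) = C" by auto
      then show "R = RR C" using thC by (simp add: cd_decode)
    qed
  qed
  have bb: "(\<lambda>C\<in>(\<lambda>R. cd (fst (?ch R))) ` ?\<rho>. snd (snd (?ch (Qof ?\<rho> ?ch C)))) = b"
  proof -
    have "b = restrict (\<lambda>C. snd (snd (?ch (Qof ?\<rho> ?ch C)))) \<sigma>"
      by (rule restrict_PiE_eq[OF s2(2)]) (use Q thC in simp)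
    then show ?thesis unfolding sig by simp
  qed
  have Rf: "B \<in> set_decode ` C \<Longrightarrow> C \<in> \<sigma> \<Longrightarrow> Rof ?\<rho> ?ch B = RR C" for B C
  proof -
    assume B: "B \<in> set_decode ` C" and C: "C \<in> \<sigma>"
    show ?thesis unfolding Rof_def
    proof (rule the_equality)
      show "RR C \<in> ?\<rho> \<and> B \<in> fst (?ch (RR C))" using B C thC[OF C] by simp
      fix R assume "R \<in> ?\<rho> \<and> B \<in> fst (?ch R)"
      then obtain C' where C': "C' \<in> \<sigma>" "R = RR C'" "B \<in> set_decode ` C'" using thC by auto
      have "C' = C"
      proof (rule ccontr)
        assume "C' \<noteq> C"
        then have "set_decode ` C' \<inter> set_decode ` C = {}" by (rule dec_disj[OF U p s C'(1) C])
        then show False using B C'(3) by auto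
      qed
      then show "R = RR C" using C' by simp
    qed
  qed
  have aa: "(\<lambda>B\<in>(\<Union>R\<in>?\<rho>. fst (?ch R)). fst (snd (?ch (Rof ?\<rho> ?ch B))) B) = a"
  proof -
    have "a = restrict (\<lambda>B. fst (snd (?ch (Rof ?\<rho> ?ch B))) B) \<pi>"
    proof (rule restrict_PiE_eq[OF s1(2)])
      fix B assume "B \<in> \<pi>"
      then obtain C where C: "C \<in> \<sigma>" "B \<in> set_decode ` C" using pi_union[OF U p s] by auto
      show "a B = fst (snd (?ch (Rof ?\<rho> ?ch B))) B" using Rf[OF C(2,1)] C thC[OF C(1)] by simp
    qed
    then show ?thesis unfolding fstch by simp
  qed
  have mm: "Mf (inv_into (cd \<sigma>) hh) (cd ?\<rho>) (Mf hh (cd \<sigma>) m'') = m''" by (rule sp_inv[OF fcs hb s2(3)])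
  have PhiE: "Phi ((\<pi>, a, m'), (\<sigma>, b, m'')) = ((?\<rho>, cfun \<sigma> a b, Mf hh (cd \<sigma>) m''), ?ch)"
    by (simp add: Phi_def)
  show "Psi (Phi ((\<pi>, a, m'), (\<sigma>, b, m''))) = ((\<pi>, a, m'), (\<sigma>, b, m''))"
    apply (unfold PhiE)
    apply (unfold Psi_simp)
    apply (unfold bb)
    apply (unfold aa)
    apply (unfold fstch sig mm)
    using x2(2) by simp
qed

lemma psi_facts:
  assumes U: "finite U" and z: "((\<rho>, c, m3), ch) \<in> S1 U m"
  shows "Psi ((\<rho>, c, m3), ch) \<in> S2 U m"
    "Phi (Psi ((\<rho>, c, m3), ch)) = ((\<rho>, c, m3), ch)"
proof -
  have d1: "(\<rho>, c, m3) \<in> Dec U m" and chin: "ch \<in> Pi\<^sub>E \<rho> (\<lambda>R. Dec R (c R))"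
    using z by (auto simp: S1_def)
  have x1: "(\<rho>, c, m3) \<in> subst M M U" "eta U \<rho> c m3 = m" using d1 Dec_iff by auto
  note s1 = substD[OF x1(1)]
  note r = s1(1)
  define P where "P R = fst (ch R)" for R
  define aR where "aR R = fst (snd (ch R))" for R
  define bR where "bR R = snd (snd (ch R))" for R
  have chR: "R \<in> \<rho> \<Longrightarrow> ch R = (P R, aR R, bR R)" for R by (simp add: P_def aR_def bR_def)
  have chD: "R \<in> \<rho> \<Longrightarrow> (P R, aR R, bR R) \<in> Dec R (c R)" for R
    using chin chR by (metis PiE_mem)
  have chs: "R \<in> \<rho> \<Longrightarrow> partition_on R (P R) \<and> aR R \<in> Pi\<^sub>E (P R) M \<and> bR R \<in> M (cd (P R))
      \<and> eta R (P R) (aR R) (bR R) = c R" for R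
    using chD[of R] substD[of "P R" "aR R" "bR R" R] Dec_iff by auto
  have pr: "\<And>R. R \<in> \<rho> \<Longrightarrow> partition_on R (P R)" using chs by blast
  define \<pi> where "\<pi> = (\<Union>R\<in>\<rho>. P R)"
  define \<sigma> where "\<sigma> = (\<lambda>R. cd (P R)) ` \<rho>"
  have p: "partition_on U \<pi>" unfolding \<pi>_def by (rule pi_part[OF U r pr])
  have s: "partition_on (cd \<pi>) \<sigma>" unfolding \<pi>_def \<sigma>_def by (rule sig_part[OF U r pr])
  have rq: "RR ` \<sigma> = \<rho>" unfolding \<sigma>_def by (rule rho_eq[OF U r pr])
  have Rf: "R \<in> \<rho> \<Longrightarrow> B \<in> P R \<Longrightarrow> Rof \<rho> ch B = R" for R B
  proof -
    assume R: "R \<in> \<rho>" and B: "B \<in> P R"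
    show ?thesis unfolding Rof_def P_def[symmetric]
    proof (rule the_equality)
      show "R \<in> \<rho> \<and> B \<in> P R" using R B by simp
      fix R' assume "R' \<in> \<rho> \<and> B \<in> P R'"
      then show "R' = R" using P_unique[OF U r pr R _ B] by blast
    qed
  qed
  have Qf: "R \<in> \<rho> \<Longrightarrow> Qof \<rho> ch (cd (P R)) = R" for R
  proof -
    assume R: "R \<in> \<rho>"
    show ?thesis unfolding Qof_def P_def[symmetric]
    proof (rule the_equality)
      show "R \<in> \<rho> \<and> cd (P R) = cd (P R)" using R by simp
      fix R' assume "R' \<in> \<rho> \<and> cd (P R') = cd (P R)"
      then show "R' = R" using inj_onD[OF cdP_inj[OF U r pr], of R' R] R by blast
    qed
  qed
  have Cf: "R \<in> \<rho> \<Longrightarrow> Cof \<sigma> R = cd (P R)" for R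
  proof -
    assume R: "R \<in> \<rho>"
    have "cd (P R) \<in> \<sigma>" using R by (simp add: \<sigma>_def)
    then have "Cof \<sigma> (RR (cd (P R))) = cd (P R)" unfolding Cof_def by (rule the_C[OF U p s])
    then show ?thesis using RR_cdP[OF U r pr R] by simp
  qed
  have Pfin: "R \<in> \<rho> \<Longrightarrow> B \<in> P R \<Longrightarrow> finite B" for R B using P_blocks[OF U r pr] by blast
  have dP: "R \<in> \<rho> \<Longrightarrow> set_decode ` cd (P R) = P R" for R by (rule decode_cd) (rule Pfin)
  define a where "a = (\<lambda>B\<in>\<pi>. aR (Rof \<rho> ch B) B)"
  define b where "b = (\<lambda>C\<in>\<sigma>. bR (Qof \<rho> ch C))"
  define m'' where "m'' = Mf (inv_into (cd \<sigma>) hh) (cd \<rho>) m3"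
  define m' where "m' = eta (cd \<pi>) \<sigma> b m''"
  have ain: "a \<in> Pi\<^sub>E \<pi> M"
  proof
    fix B assume "B \<in> \<pi>"
    then obtain R where R: "R \<in> \<rho>" "B \<in> P R" unfolding \<pi>_def by auto
    show "a B \<in> M B" using R Rf[OF R] chs[OF R(1)] \<open>B \<in> \<pi>\<close> by (auto simp: a_def)
  qed (simp add: a_def)
  have bin: "b \<in> Pi\<^sub>E \<sigma> M"
  proof
    fix C assume "C \<in> \<sigma>"
    then obtain R where R: "R \<in> \<rho>" "C = cd (P R)" unfolding \<sigma>_def by auto
    show "b C \<in> M C" using R Qf[OF R(1)] chs[OF R(1)] \<open>C \<in> \<sigma>\<close> by (auto simp: b_def)
  qed (simp add: b_def)
  have hb: "bij_betw hh (cd \<sigma>) (cd \<rho>)" using hh_bij[OF U p s] rq by simp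
  have fcs: "finite (cd \<sigma>)" by (rule cd_rho_fin[OF U p s])
  have fcr: "finite (cd \<rho>)" by (rule finite_cd[OF part_finite(1)[OF U r]])
  have m''in: "m'' \<in> M (cd \<sigma>)" unfolding m''_def
    by (rule sp_in[OF fcr bij_betw_inv_into[OF hb] s1(3)])
  have mh: "Mf hh (cd \<sigma>) m'' = m3" unfolding m''_def by (rule sp_inv2[OF fcs hb s1(3)])
  have aR_eq: "R \<in> \<rho> \<Longrightarrow> restrict a (P R) = aR R" for R
  proof -
    assume R: "R \<in> \<rho>"
    have "aR R = restrict a (P R)"
    proof (rule restrict_PiE_eq)
      show "aR R \<in> Pi\<^sub>E (P R) M" using chs[OF R] by blast
      fix B assume "B \<in> P R"
      then show "aR R B = a B" using R Rf[OF R] by (auto simp: a_def \<pi>_def)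
    qed
    then show ?thesis by simp
  qed
  have cf: "cfun \<sigma> a b = c"
  proof -
    have "c = restrict (cfun \<sigma> a b) \<rho>"
    proof (rule restrict_PiE_eq)
      show "c \<in> Pi\<^sub>E \<rho> M" by (rule s1(2))
      fix R assume R: "R \<in> \<rho>"
      have "cfun \<sigma> a b R = eta R (P R) (aR R) (bR R)"
        unfolding cfun_def rq using R Cf[OF R] dP[OF R] aR_eq[OF R] Qf[OF R] by (simp add: b_def \<sigma>_def)
      then show "c R = cfun \<sigma> a b R" using chs[OF R] by simp
    qed
    moreover have "restrict (cfun \<sigma> a b) \<rho> = cfun \<sigma> a b" unfolding cfun_def rq[symmetric] by simp
    ultimately show ?thesis by simp
  qed
  have eU: "eta U \<pi> a m' = m"
    using eta_assoc'[OF U p ain s bin m''in] unfolding m'_def[symmetric] rq cf mh using x1(2) by simp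
  have PsiE: "Psi ((\<rho>, c, m3), ch) = ((\<pi>, a, m'), (\<sigma>, b, m''))"
    unfolding Psi_simp \<pi>_def[symmetric] P_def[symmetric] \<sigma>_def[symmetric] bR_def[symmetric] aR_def[symmetric]
    unfolding b_def[symmetric] m''_def[symmetric] m'_def[symmetric] a_def[symmetric] by simp
  have m'in: "m' \<in> M (cd \<pi>)" unfolding m'_def
    by (rule eta_in[OF finite_cd[OF part_finite(1)[OF U p]]]) (simp add: subst_def s bin m''in)
  show "Psi ((\<rho>, c, m3), ch) \<in> S2 U m"
    unfolding PsiE S2_def using p ain eU s bin m''in m'in by (auto simp: Dec_iff subst_def m'_def)
  have chE: "(\<lambda>R\<in>RR ` \<sigma>. (set_decode ` Cof \<sigma> R, restrict a (set_decode ` Cof \<sigma> R), b (Cof \<sigma> R))) = ch"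
  proof -
    have "ch = restrict (\<lambda>R. (set_decode ` Cof \<sigma> R, restrict a (set_decode ` Cof \<sigma> R), b (Cof \<sigma> R))) \<rho>"
    proof (rule restrict_PiE_eq[OF chin])
      fix R assume R: "R \<in> \<rho>"
      show "ch R = (set_decode ` Cof \<sigma> R, restrict a (set_decode ` Cof \<sigma> R), b (Cof \<sigma> R))"
        using chR[OF R] Cf[OF R] dP[OF R] aR_eq[OF R] Qf[OF R] R by (simp add: b_def \<sigma>_def)
    qed
    then show ?thesis unfolding rq by (rule sym)
  qed
  show "Phi (Psi ((\<rho>, c, m3), ch)) = ((\<rho>, c, m3), ch)"
    apply (unfold PsiE Phi_simp)
    apply (unfold chE)
    apply (unfold cf mh rq)
    by simp
qed

definition K1 where
  "K1 z = (case z of ((\<rho>, c, m3), ch) \<Rightarrow>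
     ((\<Sum>R\<in>\<rho>. fst (keyD (ch R))), (\<Sum>R\<in>\<rho>. snd (keyD (ch R))), {# tau M Mf (cd \<rho>) m3 #}))"

definition K2 where
  "K2 y = (case y of ((\<pi>, a, m'), (\<sigma>, b, m'')) \<Rightarrow> (fst (keyD (\<pi>, a, m')), keyD (\<sigma>, b, m'')))"

lemma mset_img_sum: "finite A \<Longrightarrow> image_mset g (mset_set A) = (\<Sum>x\<in>A. {# g x #})"
  by (induction A rule: finite_induct) auto

lemma key_match:
  assumes U: "finite U" and y: "((\<pi>, a, m'), (\<sigma>, b, m'')) \<in> S2 U m"
  shows "K1 (Phi ((\<pi>, a, m'), (\<sigma>, b, m''))) = K2 ((\<pi>, a, m'), (\<sigma>, b, m''))"
proof -
  have d1: "(\<pi>, a, m') \<in> Dec U m" and d2: "(\<sigma>, b, m'') \<in> Dec (cd \<pi>) m'" using y by (auto simp: S2_def)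
  have x1: "(\<pi>, a, m') \<in> subst M M U" using d1 Dec_iff by auto
  have x2: "(\<sigma>, b, m'') \<in> subst M M (cd \<pi>)" using d2 Dec_iff by auto
  note s1 = substD[OF x1] and s2 = substD[OF x2]
  note p = s1(1) and s = s2(1)
  have thC: "C \<in> \<sigma> \<Longrightarrow> Cof \<sigma> (RR C) = C" for C unfolding Cof_def by (rule the_C[OF U p s])
  let ?ch = "\<lambda>R\<in>RR ` \<sigma>. (set_decode ` Cof \<sigma> R, restrict a (set_decode ` Cof \<sigma> R), b (Cof \<sigma> R))"
  have PhiE: "Phi ((\<pi>, a, m'), (\<sigma>, b, m'')) = ((RR ` \<sigma>, cfun \<sigma> a b, Mf hh (cd \<sigma>) m''), ?ch)"
    by (simp add: Phi_def)
  have fins: "finite \<sigma>" by (rule sig_fin(1)[OF U p s])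
  have finpi: "finite \<pi>" by (rule pi_fin(1)[OF U p s])
  have findec: "C \<in> \<sigma> \<Longrightarrow> finite (set_decode ` C)" for C using sig_fin(2)[OF U p s] by blast
  have sub: "C \<in> \<sigma> \<Longrightarrow> set_decode ` C \<subseteq> \<pi>" for C by (rule dec_sub[OF U p s])
  have e1: "(\<Sum>R\<in>RR ` \<sigma>. fst (keyD (?ch R))) = fst (keyD (\<pi>, a, m'))"
  proof -
    have "(\<Sum>R\<in>RR ` \<sigma>. fst (keyD (?ch R))) = (\<Sum>C\<in>\<sigma>. fst (keyD (?ch (RR C))))"
      by (rule sum.reindex[OF RR_inj[OF U p s], unfolded comp_def])
    also have "\<dots> = (\<Sum>C\<in>\<sigma>. \<Sum>B\<in>set_decode ` C. {# tau M Mf B (a B) #})"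
    proof (rule sum.cong[OF refl])
      fix C assume C: "C \<in> \<sigma>"
      have "fst (keyD (?ch (RR C))) = image_mset (\<lambda>B. tau M Mf B (restrict a (set_decode ` C) B)) (mset_set (set_decode ` C))"
        using C thC[OF C] by (simp add: keyD_def)
      also have "\<dots> = image_mset (\<lambda>B. tau M Mf B (a B)) (mset_set (set_decode ` C))"
        by (rule image_mset_cong) (use findec[OF C] in simp)
      also have "\<dots> = (\<Sum>B\<in>set_decode ` C. {# tau M Mf B (a B) #})" by (rule mset_img_sum[OF findec[OF C]])
      finally show "fst (keyD (?ch (RR C))) = (\<Sum>B\<in>set_decode ` C. {# tau M Mf B (a B) #})" .
    qed
    also have "\<dots> = (\<Sum>B\<in>(\<Union>C\<in>\<sigma>. set_decode ` C). {# tau M Mf B (a B) #})"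
      by (rule sum.UNION_disjoint[symmetric]) (use fins findec dec_disj[OF U p s] in auto)
    also have "\<dots> = (\<Sum>B\<in>\<pi>. {# tau M Mf B (a B) #})" unfolding pi_union[OF U p s, symmetric] ..
    also have "\<dots> = fst (keyD (\<pi>, a, m'))" by (simp add: keyD_def mset_img_sum[OF finpi])
    finally show ?thesis .
  qed
  have e2: "(\<Sum>R\<in>RR ` \<sigma>. snd (keyD (?ch R))) = image_mset (\<lambda>C. tau M Mf C (b C)) (mset_set \<sigma>)"
  proof -
    have "(\<Sum>R\<in>RR ` \<sigma>. snd (keyD (?ch R))) = (\<Sum>C\<in>\<sigma>. snd (keyD (?ch (RR C))))"
      by (rule sum.reindex[OF RR_inj[OF U p s], unfolded comp_def])
    also have "\<dots> = (\<Sum>C\<in>\<sigma>. {# tau M Mf C (b C) #})"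
      by (rule sum.cong[OF refl]) (simp add: keyD_def thC cd_decode)
    also have "\<dots> = image_mset (\<lambda>C. tau M Mf C (b C)) (mset_set \<sigma>)" by (simp add: mset_img_sum[OF fins])
    finally show ?thesis .
  qed
  have e3: "tau M Mf (cd (RR ` \<sigma>)) (Mf hh (cd \<sigma>) m'') = tau M Mf (cd \<sigma>) m''"
    by (rule tau_transport[OF cd_rho_fin[OF U p s] hh_bij[OF U p s] s2(3)])
  show ?thesis unfolding PhiE K1_def K2_def prod.case
    apply (unfold e1 e2 e3)
    by (simp add: keyD_def)
qed

end

lemma prod_single_pm:
  "(\<Prod>R\<in>A. Poly_Mapping.single (k R) (1::'k::comm_ring_1)) = Poly_Mapping.single (\<Sum>R\<in>A. k R :: 'a::comm_monoid_add) 1"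
  by (induction A rule: infinite_finite_induct) (auto simp: mult_single)

context oper
begin

definition Dmon :: "(nat set \<times> 's) set multiset \<Rightarrow> ((nat set \<times> 's) set multiset \<times> (nat set \<times> 's) set multiset \<Rightarrow>\<^sub>0 'k::comm_ring_1)" where
  "Dmon \<mu> = prod_mset (image_mset (DeltaGen M Mf eta) \<mu>)"

lemma Delta_lin: "Delta M Mf eta = lin_ext Dmon"
  by (simp add: Delta_def Dmon_def[abs_def])

lemma Dmon_add: "Dmon (\<mu> + \<nu>) = Dmon \<mu> * Dmon \<nu>"
  by (simp add: Dmon_def)

lemma Dmon_0 [simp]: "Dmon 0 = 1" by (simp add: Dmon_def)

lemma D_single: "Delta M Mf eta (Poly_Mapping.single \<mu> c) = smult_pm c (Dmon \<mu>)"
  by (simp add: Delta_lin)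

lemma D_add: "Delta M Mf eta (p + q) = Delta M Mf eta p + Delta M Mf eta q"
  by (simp add: Delta_lin lin_ext_add)

lemma D_smult: "Delta M Mf eta (smult_pm c p) = smult_pm c (Delta M Mf eta p)"
  by (simp add: Delta_lin lin_ext_smult)

lemma D_mult: "Delta M Mf eta (p * q) = Delta M Mf eta p * Delta M Mf eta q"
  unfolding Delta_lin by (rule lin_ext_mult) (simp add: Dmon_add)

lemma D_one: "Delta M Mf eta 1 = 1"
  by (simp add: Delta_lin flip: single_one)

lemma DeltaGen_rep:
  assumes U: "finite U" and m: "m \<in> M U"
  shows "DeltaGen M Mf eta (tau M Mf U m) = DeltaRep M Mf eta U m"
proof -
  let ?r = "SOME r. r \<in> tau M Mf U m"
  have "?r \<in> tau M Mf U m" using tau_self[OF U m] by (rule someI)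
  then obtain V m' where r: "?r = (V, m')" "(V, m') \<in> tau M Mf U m" by (cases ?r) auto
  then obtain f where f: "bij_betw f U V" "m' = Mf f U m" using tau_memD(5)[OF U m r(2)] by blast
  show ?thesis unfolding DeltaGen_def Let_def r(1) using Dec_transport[OF U f(1) m] f(2) by simp
qed

lemma Dmon_tau: "finite U \<Longrightarrow> m \<in> M U \<Longrightarrow> Dmon {# tau M Mf U m #} = DeltaRep M Mf eta U m"
  by (simp add: Dmon_def DeltaGen_rep)

definition L1 where
  "L1 q = lin_ext (\<lambda>(x, y). ptens (Delta M Mf eta (Poly_Mapping.single x 1)) (Poly_Mapping.single y (1::'k::comm_ring_1))) q"

definition L2 where
  "L2 q = lin_ext (\<lambda>(x, y). ptens (Poly_Mapping.single x (1::'k::comm_ring_1)) (Delta M Mf eta (Poly_Mapping.single y 1))) q"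

definition ra :: "('a \<times> 'b) \<times> 'c \<Rightarrow> 'a \<times> ('b \<times> 'c)" where "ra t = (fst (fst t), (snd (fst t), snd t))"

lemma subst_cd_fin: "(\<pi>, a, m') \<in> subst M M U \<Longrightarrow> finite U \<Longrightarrow> finite (cd \<pi>)"
  using substD(1) part_finite(1) finite_cd by blast

lemma subst_pi_fin: "(\<pi>, a, m') \<in> subst M M U \<Longrightarrow> finite U \<Longrightarrow> finite \<pi>"
  using substD(1) part_finite(1) by blast

lemma subst_blk_fin: "(\<pi>, a, m') \<in> subst M M U \<Longrightarrow> finite U \<Longrightarrow> R \<in> \<pi> \<Longrightarrow> finite R"
  using substD(1) part_finite(2) by blast

lemma gen_coassoc:
  assumes U: "finite U" and m: "m \<in> M U"
  shows "mapk ra (L1 (DeltaRep M Mf eta U m :: _ \<Rightarrow>\<^sub>0 'k::comm_ring_1)) = L2 (DeltaRep M Mf eta U m)"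
proof -
  have fD: "finite (Dec U m)" by (rule finite_Dec[OF U])
  have F2: "L2 (DeltaRep M Mf eta U m) = (\<Sum>s\<in>S2 U m. Poly_Mapping.single (K2 s) (1::'k))"
  proof -
    have "L2 (DeltaRep M Mf eta U m) = (\<Sum>x\<in>Dec U m. \<Sum>y\<in>Dec (cd (fst x)) (snd (snd x)). Poly_Mapping.single (K2 (x, y)) (1::'k))"
      unfolding DeltaRep_eq L2_def lin_ext_sum
    proof (rule sum.cong[OF refl])
      fix x assume x: "x \<in> Dec U m"
      obtain \<pi> a m' where xe: "x = (\<pi>, a, m')" by (cases x) auto
      have xs: "(\<pi>, a, m') \<in> subst M M U" using x xe Dec_iff by auto
      note sD = substD[OF xs]
      have fc: "finite (cd \<pi>)" using part_finite(1)[OF U sD(1)] by (rule finite_cd)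
      have "Delta M Mf eta (Poly_Mapping.single {#tau M Mf (cd \<pi>) m'#} 1) = (DeltaRep M Mf eta (cd \<pi>) m' :: _ \<Rightarrow>\<^sub>0 'k)"
        using Dmon_tau[OF fc sD(3)] by (simp add: D_single)
      then show "lin_ext (\<lambda>(x, y). ptens (Poly_Mapping.single x (1::'k)) (Delta M Mf eta (Poly_Mapping.single y 1)))
             (Poly_Mapping.single (keyD x) 1) =
            (\<Sum>y\<in>Dec (cd (fst x)) (snd (snd x)). Poly_Mapping.single (K2 (x, y)) 1)"
        unfolding xe by (simp add: keyD_def DeltaRep_eq ptens_sum2 K2_def split: prod.splits)
          (rule sum.cong[OF refl], simp split: prod.splits)
    qed
    also have "\<dots> = (\<Sum>s\<in>S2 U m. Poly_Mapping.single (K2 s) (1::'k))"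
      unfolding S2_def
      by (subst sum.Sigma[OF fD]) (auto simp: Dec_iff split_def U intro!: sum.cong finite_Dec subst_cd_fin)
    finally show ?thesis .
  qed
  have F1: "mapk ra (L1 (DeltaRep M Mf eta U m)) = (\<Sum>z\<in>S1 U m. Poly_Mapping.single (K1 z) (1::'k))"
  proof -
    have "mapk ra (L1 (DeltaRep M Mf eta U m)) =
      (\<Sum>x\<in>Dec U m. \<Sum>ch\<in>Pi\<^sub>E (fst x) (\<lambda>R. Dec R (fst (snd x) R)). Poly_Mapping.single (K1 (x, ch)) (1::'k))"
      unfolding DeltaRep_eq L1_def lin_ext_sum mapk_sum
    proof (rule sum.cong[OF refl])
      fix x assume x: "x \<in> Dec U m"
      obtain \<rho> c m3 where xe: "x = (\<rho>, c, m3)" by (cases x) auto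
      have xs: "(\<rho>, c, m3) \<in> subst M M U" using x xe Dec_iff by auto
      note sD = substD[OF xs]
      note rf = part_finite[OF U sD(1)]
      have cR: "R \<in> \<rho> \<Longrightarrow> c R \<in> M R" for R using sD(2) by auto
      have "Delta M Mf eta (Poly_Mapping.single (image_mset (\<lambda>R. tau M Mf R (c R)) (mset_set \<rho>)) 1)
          = (\<Prod>R\<in>\<rho>. DeltaGen M Mf eta (tau M Mf R (c R)) :: _ \<Rightarrow>\<^sub>0 'k)"
        by (simp add: D_single Dmon_def multiset.map_comp comp_def prod_unfold_prod_mset)
      also have "\<dots> = (\<Prod>R\<in>\<rho>. DeltaRep M Mf eta R (c R))"
        by (rule prod.cong[OF refl]) (simp add: DeltaGen_rep rf(2) cR)
      also have "\<dots> = (\<Prod>R\<in>\<rho>. \<Sum>s\<in>Dec R (c R). Poly_Mapping.single (keyD s) 1)"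
        by (simp add: DeltaRep_eq)
      also have "\<dots> = (\<Sum>ch\<in>Pi\<^sub>E \<rho> (\<lambda>R. Dec R (c R)). \<Prod>R\<in>\<rho>. Poly_Mapping.single (keyD (ch R)) 1)"
        by (rule prod_sum_PiE) (auto simp: rf finite_Dec)
      also have "\<dots> = (\<Sum>ch\<in>Pi\<^sub>E \<rho> (\<lambda>R. Dec R (c R)). Poly_Mapping.single (\<Sum>R\<in>\<rho>. keyD (ch R)) 1)"
        by (simp add: prod_single_pm)
      finally have DD: "Delta M Mf eta (Poly_Mapping.single (image_mset (\<lambda>R. tau M Mf R (c R)) (mset_set \<rho>)) 1)
         = (\<Sum>ch\<in>Pi\<^sub>E \<rho> (\<lambda>R. Dec R (c R)). Poly_Mapping.single (\<Sum>R\<in>\<rho>. keyD (ch R)) (1::'k))" .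
      show "mapk ra (lin_ext (\<lambda>(x, y). ptens (Delta M Mf eta (Poly_Mapping.single x 1)) (Poly_Mapping.single y (1::'k)))
             (Poly_Mapping.single (keyD x) 1)) =
         (\<Sum>ch\<in>Pi\<^sub>E (fst x) (\<lambda>R. Dec R (fst (snd x) R)). Poly_Mapping.single (K1 (x, ch)) 1)"
        unfolding xe by (simp add: keyD_def DD ptens_sum1 mapk_sum K1_def ra_def fst_sum snd_sum)
    qed
    also have "\<dots> = (\<Sum>z\<in>S1 U m. Poly_Mapping.single (K1 z) (1::'k))"
      unfolding S1_def
      by (subst sum.Sigma[OF fD]) (auto simp: Dec_iff split_def U intro!: sum.cong finite_PiE finite_Dec
          intro: subst_pi_fin subst_blk_fin)
    finally show ?thesis .
  qed
  show ?thesis unfolding F1 F2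
  proof (rule sum.reindex_bij_witness[where i = Phi and j = Psi])
    fix z assume z: "z \<in> S1 U m"
    obtain \<rho> c m3 ch where ze: "z = ((\<rho>, c, m3), ch)" by (cases z) auto
    show "Phi (Psi z) = z" using psi_facts(2)[OF U z[unfolded ze]] ze by simp
    show "Psi z \<in> S2 U m" using psi_facts(1)[OF U z[unfolded ze]] ze by simp
    obtain \<pi> a m' \<sigma> b m'' where pe: "Psi z = ((\<pi>, a, m'), (\<sigma>, b, m''))" by (cases "Psi z") auto
    have ps: "Psi z \<in> S2 U m" using psi_facts(1)[OF U z[unfolded ze]] ze by simp
    have "K1 (Phi (Psi z)) = K2 (Psi z)"
      using key_match[OF U ps[unfolded pe]] pe by simp
    then show "Poly_Mapping.single (K2 (Psi z)) 1 = Poly_Mapping.single (K1 z) (1::'k)"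
      using psi_facts(2)[OF U z[unfolded ze]] ze by simp
  next
    fix s assume s: "s \<in> S2 U m"
    obtain \<pi> a m' \<sigma> b m'' where se: "s = ((\<pi>, a, m'), (\<sigma>, b, m''))" by (cases s) (auto simp: prod_eq_iff)
    show "Psi (Phi s) = s" using phi_facts(2)[OF U s[unfolded se]] se by simp
    show "Phi s \<in> S1 U m" using phi_facts(1)[OF U s[unfolded se]] se by simp
  qed
qed

end

context oper
begin

lemma unit_str_in: "card B = 1 \<Longrightarrow> unit_str M B \<in> M B"
proof -
  assume "card B = 1"
  then have "card (M B) = 1" by (rule M_single)
  then obtain s where "M B = {s}" by (rule card_1_singletonE)
  then show ?thesis unfolding unit_str_def by simp
qed

lemma single_struct: "card B = 1 \<Longrightarrow> s \<in> M B \<Longrightarrow> s = unit_str M B"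
proof -
  assume "card B = 1" "s \<in> M B"
  moreover from \<open>card B = 1\<close> have "card (M B) = 1" by (rule M_single)
  then obtain t where "M B = {t}" by (rule card_1_singletonE)
  ultimately show ?thesis unfolding unit_str_def by simp
qed

lemma tau_bullet_iff:
  assumes B: "finite B" and s: "s \<in> M B"
  shows "tau M Mf B s = bullet M Mf \<longleftrightarrow> card B = 1"
proof
  have u0: "unit_str M {0} \<in> M {0}" by (rule unit_str_in) simp
  assume "tau M Mf B s = bullet M Mf"
  then have "(B, s) \<in> tau M Mf {0} (unit_str M {0})" using tau_self[OF B s] by (simp add: bullet_def)
  then show "card B = 1" using tau_memD(4)[OF _ u0] by simp
next
  assume c: "card B = 1"
  then obtain u where Bu: "B = {u}" by (rule card_1_singletonE)
  have f: "bij_betw (\<lambda>_. 0::nat) B {0}" unfolding Bu by (simp add: bij_betw_def)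
  have "Mf (\<lambda>_. 0) B s \<in> M {0}" by (rule sp_in[OF B f s])
  then have "Mf (\<lambda>_. 0) B s = unit_str M {0}" by (rule single_struct[rotated]) simp
  then show "tau M Mf B s = bullet M Mf"
    using tau_transport[OF B f s] by (simp add: bullet_def)
qed

definition w :: "(nat set \<times> 's) set multiset \<Rightarrow> 'k::comm_ring_1" where
  "w x = (if set_mset x \<subseteq> {bullet M Mf} then 1 else 0)"

lemma eps_single: "eps M Mf (Poly_Mapping.single x c) = c * w x"
  by (cases "c = 0") (simp_all add: eps_def w_def)

lemma w_add: "w (x + y) = w x * w y"
  by (simp add: w_def)

lemma Dec_singletons:
  assumes U: "finite U" and m: "m \<in> M U"
  defines "x0 \<equiv> ((\<lambda>u. {u}) ` U, (\<lambda>B\<in>(\<lambda>u. {u}) ` U. unit_str M B), Mf (\<lambda>u. set_encode {u}) U m)"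
  shows "x0 \<in> Dec U m" "\<And>x. x \<in> Dec U m \<Longrightarrow> w (fst (keyD x)) = (if x = x0 then 1 else (0::'k::comm_ring_1))"
    "snd (keyD x0) = {# tau M Mf U m #}"
proof -
  let ?\<pi> = "(\<lambda>u. {u}) ` U"
  let ?g = "\<lambda>u. set_encode {u}"
  have cdpi: "cd ?\<pi> = ?g ` U" unfolding cd_def by (simp add: image_image)
  have gb: "bij_betw ?g U (cd ?\<pi>)"
    unfolding cdpi by (rule inj_on_imp_bij_betw) (auto intro!: inj_onI simp: set_encode_eq)
  have fcd: "finite (cd ?\<pi>)" using U cdpi by simp
  have a0: "(\<lambda>B\<in>?\<pi>. unit_str M B) \<in> Pi\<^sub>E ?\<pi> M" by (auto intro: unit_str_in)
  have x0s: "x0 \<in> subst M M U" unfolding x0_def subst_def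
    using partition_on_singletons[of U] a0 sp_in[OF U gb m] by auto
  show x0D: "x0 \<in> Dec U m" using x0s eta_runit[OF U m] unfolding x0_def by (simp add: Dec_iff)
  show "snd (keyD x0) = {# tau M Mf U m #}"
    unfolding x0_def keyD_def using tau_transport[OF U gb m] by simp
  have bl: "set_mset (fst (keyD x0)) \<subseteq> {bullet M Mf}"
  proof -
    have "tau M Mf B (unit_str M B) = bullet M Mf" if "B \<in> ?\<pi>" for B
      using that tau_bullet_iff[of B "unit_str M B"] unit_str_in[of B] by auto
    then show ?thesis unfolding x0_def keyD_def using U by auto
  qed
  fix x assume x: "x \<in> Dec U m"
  show "w (fst (keyD x)) = (if x = x0 then 1 else (0::'k))"
  proof (cases "x = x0")
    case True then show ?thesis using bl by (simp add: w_def)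
  next
    case False
    obtain \<pi> a m' where xe: "x = (\<pi>, a, m')" by (cases x) auto
    have xs: "(\<pi>, a, m') \<in> subst M M U" and e: "eta U \<pi> a m' = m" using x xe Dec_iff by auto
    note sD = substD[OF xs]
    note pf = part_finite[OF U sD(1)]
    have "\<not> set_mset (fst (keyD x)) \<subseteq> {bullet M Mf}"
    proof
      assume "set_mset (fst (keyD x)) \<subseteq> {bullet M Mf}"
      then have tb: "B \<in> \<pi> \<Longrightarrow> tau M Mf B (a B) = bullet M Mf" for B
        unfolding xe keyD_def using pf(1) by auto
      have c1: "B \<in> \<pi> \<Longrightarrow> card B = 1" for B
        using tb[of B] tau_bullet_iff[OF pf(2), of B "a B"] sD(2) by auto
      have pe: "\<pi> = ?\<pi>"
      proof
        show "\<pi> \<subseteq> ?\<pi>"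
        proof
          fix B assume B: "B \<in> \<pi>"
          then obtain u where "B = {u}" using c1 by (meson card_1_singletonE)
          moreover have "B \<subseteq> U" using part_blocks[OF sD(1) B] by simp
          ultimately show "B \<in> ?\<pi>" by auto
        qed
        show "?\<pi> \<subseteq> \<pi>"
        proof
          fix B assume "B \<in> ?\<pi>"
          then obtain u where u: "u \<in> U" "B = {u}" by auto
          have "U = \<Union> \<pi>" using sD(1) by (simp add: partition_on_def)
          then obtain B' where B': "B' \<in> \<pi>" "u \<in> B'" using u by auto
          then obtain v where "B' = {v}" using c1 by (meson card_1_singletonE)
          then show "B \<in> \<pi>" using B' u by auto
        qed
      qed
      have ae: "a = (\<lambda>B\<in>?\<pi>. unit_str M B)"
      proof (rule restrict_PiE_eq)
        show "a \<in> Pi\<^sub>E ?\<pi> M" using sD(2) pe by simp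
        fix B assume B: "B \<in> ?\<pi>"
        have "a B \<in> M B" using sD(2) pe B by (auto intro: PiE_mem)
        moreover have "card B = 1" using B by auto
        ultimately show "a B = unit_str M B" by (intro single_struct)
      qed
      define m0 where "m0 = Mf (inv_into U ?g) (cd ?\<pi>) m'"
      have m'in: "m' \<in> M (cd ?\<pi>)" using sD(3) pe by simp
      have m0in: "m0 \<in> M U" unfolding m0_def by (rule sp_in[OF fcd bij_betw_inv_into[OF gb] m'in])
      have gm: "Mf ?g U m0 = m'" unfolding m0_def by (rule sp_inv2[OF U gb m'in])
      have "eta U \<pi> a m' = m0" using eta_runit[OF U m0in] unfolding gm pe ae .
      then have "m0 = m" using e by simp
      then have "x = x0" unfolding xe x0_def using pe ae gm by simp
      then show False using False by simp
    qed
    then show ?thesis using False by (simp add: w_def)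
  qed
qed

lemma Dec_whole:
  assumes U: "finite U" and m: "m \<in> M U"
  defines "x0 \<equiv> ({U}, (\<lambda>B\<in>{U}. m), unit_str M {set_encode U})"
  shows "x0 \<in> Dec U m" "\<And>x. x \<in> Dec U m \<Longrightarrow> w (snd (keyD x)) = (if x = x0 then 1 else (0::'k::comm_ring_1))"
    "fst (keyD x0) = {# tau M Mf U m #}"
proof -
  have Une: "U \<noteq> {}" using m M_empty by auto
  have cdU: "cd {U} = {set_encode U}" by (simp add: cd_def)
  have u0: "unit_str M {set_encode U} \<in> M {set_encode U}" by (rule unit_str_in) simp
  have x0s: "x0 \<in> subst M M U" unfolding x0_def subst_def
    using partition_on_space[OF Une] m u0 cdU by auto
  show "x0 \<in> Dec U m" using x0s eta_lunit[OF U m] unfolding x0_def by (simp add: Dec_iff)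
  show "fst (keyD x0) = {# tau M Mf U m #}" unfolding x0_def keyD_def by simp
  have bl: "w (snd (keyD x0)) = (1::'k)"
    unfolding x0_def keyD_def w_def using tau_bullet_iff[of "{set_encode U}" "unit_str M {set_encode U}"] u0 by (simp add: cdU)
  fix x assume x: "x \<in> Dec U m"
  show "w (snd (keyD x)) = (if x = x0 then 1 else (0::'k))"
  proof (cases "x = x0")
    case True then show ?thesis using bl by simp
  next
    case False
    obtain \<pi> a m' where xe: "x = (\<pi>, a, m')" by (cases x) auto
    have xs: "(\<pi>, a, m') \<in> subst M M U" and e: "eta U \<pi> a m' = m" using x xe Dec_iff by auto
    note sD = substD[OF xs]
    note pf = part_finite[OF U sD(1)]
    have "tau M Mf (cd \<pi>) m' \<noteq> bullet M Mf"
    proof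
      assume "tau M Mf (cd \<pi>) m' = bullet M Mf"
      then have "card (cd \<pi>) = 1" using tau_bullet_iff[OF finite_cd[OF pf(1)] sD(3)] by simp
      then have "card \<pi> = 1" using card_cd[of \<pi>] pf(2) by simp
      then obtain B where pB: "\<pi> = {B}" by (rule card_1_singletonE)
      have BU: "B = U" using sD(1) pB by (simp add: partition_on_def)
      have pe: "\<pi> = {U}" using pB BU by simp
      have m'e: "m' = unit_str M {set_encode U}"
        using sD(3) pe cdU by (intro single_struct) auto
      have aU: "a U \<in> M U" using sD(2) pe by auto
      have ae: "a = (\<lambda>B\<in>{U}. a U)"
        by (rule restrict_PiE_eq) (use sD(2) pe in auto)
      have "eta U \<pi> a m' = a U" using eta_lunit[OF U aU] pe ae m'e by simp
      then have "a U = m" using e by simp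
      then have "x = x0" unfolding xe x0_def using pe ae m'e by simp
      then show False using False by simp
    qed
    then show ?thesis using False unfolding xe keyD_def w_def by simp
  qed
qed

lemma gen_counit:
  assumes U: "finite U" and m: "m \<in> M U"
  shows "lin_ext (\<lambda>(x, y). smult_pm (w x) (Poly_Mapping.single y 1)) (DeltaRep M Mf eta U m)
           = Poly_Mapping.single {# tau M Mf U m #} (1::'k::comm_ring_1)"
    "lin_ext (\<lambda>(x, y). smult_pm (w y) (Poly_Mapping.single x 1)) (DeltaRep M Mf eta U m)
           = Poly_Mapping.single {# tau M Mf U m #} (1::'k::comm_ring_1)"
proof -
  define x0 where "x0 = ((\<lambda>u. {u}) ` U, (\<lambda>B\<in>(\<lambda>u. {u}) ` U. unit_str M B), Mf (\<lambda>u. set_encode {u}) U m)"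
  note DS = Dec_singletons[OF U m, folded x0_def]
  have "lin_ext (\<lambda>(x, y). smult_pm (w x) (Poly_Mapping.single y 1)) (DeltaRep M Mf eta U m)
      = (\<Sum>x\<in>Dec U m. smult_pm (w (fst (keyD x))) (Poly_Mapping.single (snd (keyD x)) (1::'k)))"
    unfolding DeltaRep_eq lin_ext_sum by (simp add: split_def)
  also have "\<dots> = (\<Sum>x\<in>Dec U m. if x = x0 then Poly_Mapping.single (snd (keyD x0)) (1::'k) else 0)"
    by (rule sum.cong[OF refl]) (simp add: DS(2))
  also have "\<dots> = Poly_Mapping.single {# tau M Mf U m #} 1"
    using DS(1,3) finite_Dec[OF U] by simp
  finally show "lin_ext (\<lambda>(x, y). smult_pm (w x) (Poly_Mapping.single y 1)) (DeltaRep M Mf eta U m)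
           = Poly_Mapping.single {# tau M Mf U m #} (1::'k)" .
next
  define x0 where "x0 = ({U}, (\<lambda>B\<in>{U}. m), unit_str M {set_encode U})"
  note DW = Dec_whole[OF U m, folded x0_def]
  have "lin_ext (\<lambda>(x, y). smult_pm (w y) (Poly_Mapping.single x 1)) (DeltaRep M Mf eta U m)
      = (\<Sum>x\<in>Dec U m. smult_pm (w (snd (keyD x))) (Poly_Mapping.single (fst (keyD x)) (1::'k)))"
    unfolding DeltaRep_eq lin_ext_sum by (simp add: split_def)
  also have "\<dots> = (\<Sum>x\<in>Dec U m. if x = x0 then Poly_Mapping.single (fst (keyD x0)) (1::'k) else 0)"
    by (rule sum.cong[OF refl]) (simp add: DW(2))
  also have "\<dots> = Poly_Mapping.single {# tau M Mf U m #} 1"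
    using DW(1,3) finite_Dec[OF U] by simp
  finally show "lin_ext (\<lambda>(x, y). smult_pm (w y) (Poly_Mapping.single x 1)) (DeltaRep M Mf eta U m)
           = Poly_Mapping.single {# tau M Mf U m #} (1::'k)" .
qed

end

type_synonym 's mon = "(nat set \<times> 's) set multiset"

lemma lin_ext_linear_rep:
  "lin_ext f p = lin_ext (\<lambda>x. lin_ext f (Poly_Mapping.single x 1)) p"
  by (simp)

context oper
begin

abbreviation "TT \<equiv> stypes M Mf"
abbreviation "BB \<equiv> monomials_over TT"

lemma tau_in_T: "finite U \<Longrightarrow> m \<in> M U \<Longrightarrow> tau M Mf U m \<in> TT"
  unfolding stypes_def by blast

lemma T_rep: "\<alpha> \<in> TT \<Longrightarrow> \<exists>U m. finite U \<and> m \<in> M U \<and> \<alpha> = tau M Mf U m"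
  unfolding stypes_def by blast

lemma BB_add: "x \<in> BB \<Longrightarrow> y \<in> BB \<Longrightarrow> x + y \<in> BB"
  by (auto simp: monomials_over_def)

lemma BB_0: "0 \<in> BB" by (simp add: monomials_over_def)

lemma keyD_in: "finite U \<Longrightarrow> x \<in> Dec U m \<Longrightarrow> keyD x \<in> BB \<times> BB"
proof -
  assume U: "finite U" and x: "x \<in> Dec U m"
  obtain \<pi> a m' where xe: "x = (\<pi>, a, m')" by (cases x) auto
  have xs: "(\<pi>, a, m') \<in> subst M M U" using x xe Dec_iff by auto
  note sD = substD[OF xs]
  note pf = part_finite[OF U sD(1)]
  have "tau M Mf B (a B) \<in> TT" if "B \<in> \<pi>" for B using tau_in_T[OF pf(2)[OF that]] sD(2) that by auto
  moreover have "tau M Mf (cd \<pi>) m' \<in> TT" by (rule tau_in_T[OF finite_cd[OF pf(1)] sD(3)])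
  ultimately show ?thesis unfolding xe keyD_def monomials_over_def using pf(1) by auto
qed

lemma keys_DeltaRep: "finite U \<Longrightarrow> Poly_Mapping.keys (DeltaRep M Mf eta U m :: _ \<Rightarrow>\<^sub>0 'k::comm_ring_1) \<subseteq> BB \<times> BB"
proof -
  assume U: "finite U"
  have "Poly_Mapping.keys (DeltaRep M Mf eta U m :: _ \<Rightarrow>\<^sub>0 'k) \<subseteq> (\<Union>x\<in>Dec U m. Poly_Mapping.keys (Poly_Mapping.single (keyD x) (1::'k)))"
    unfolding DeltaRep_eq by (rule keys_sum)
  also have "\<dots> \<subseteq> BB \<times> BB"
  proof (rule UN_least)
    fix x assume "x \<in> Dec U m"
    then show "Poly_Mapping.keys (Poly_Mapping.single (keyD x) (1::'k)) \<subseteq> BB \<times> BB" using keyD_in[OF U] by simp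
  qed
  finally show ?thesis .
qed

lemma keys_mult_BB:
  fixes X Y :: "_ \<Rightarrow>\<^sub>0 'k::comm_ring_1"
  assumes "Poly_Mapping.keys X \<subseteq> BB \<times> BB" "Poly_Mapping.keys Y \<subseteq> BB \<times> BB"
  shows "Poly_Mapping.keys (X * Y) \<subseteq> BB \<times> BB"
proof
  fix k assume "k \<in> Poly_Mapping.keys (X * Y)"
  then obtain a b where "k = a + b" "a \<in> Poly_Mapping.keys X" "b \<in> Poly_Mapping.keys Y"
    using keys_mult[of X Y] by blast
  then show "k \<in> BB \<times> BB" using assms BB_add by (cases a, cases b) auto
qed

lemma DeltaGen_T: "\<alpha> \<in> TT \<Longrightarrow> \<exists>U m. finite U \<and> m \<in> M U \<and> \<alpha> = tau M Mf U m \<and> DeltaGen M Mf eta \<alpha> = DeltaRep M Mf eta U m"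
  using T_rep DeltaGen_rep by blast

lemma keys_Dmon: "\<mu> \<in> BB \<Longrightarrow> Poly_Mapping.keys (Dmon \<mu> :: _ \<Rightarrow>\<^sub>0 'k::comm_ring_1) \<subseteq> BB \<times> BB"
proof (induction \<mu>)
  case empty
  then show ?case using BB_0 by (simp add: zero_prod_def)
next
  case (add \<alpha> \<mu>)
  then have a: "\<alpha> \<in> TT" and mu: "\<mu> \<in> BB" by (auto simp: monomials_over_def)
  obtain U m where U: "finite U" "m \<in> M U" "DeltaGen M Mf eta \<alpha> = (DeltaRep M Mf eta U m :: _ \<Rightarrow>\<^sub>0 'k)"
    using DeltaGen_T[OF a] by blast
  have e: "Dmon (add_mset \<alpha> \<mu>) = DeltaRep M Mf eta U m * (Dmon \<mu> :: _ \<Rightarrow>\<^sub>0 'k)" using U(3) by (simp add: Dmon_def)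
  show ?case unfolding e by (rule keys_mult_BB[OF keys_DeltaRep[OF U(1)] add.IH[OF mu]])
qed

lemma keys_D: "Poly_Mapping.keys p \<subseteq> BB \<Longrightarrow> Poly_Mapping.keys (Delta M Mf eta p :: _ \<Rightarrow>\<^sub>0 'k::comm_ring_1) \<subseteq> BB \<times> BB"
  unfolding Delta_lin using keys_lin_ext[of Dmon p] keys_Dmon by blast

section \<open>Coassociativity\<close>

lemma sa: "Poly_Mapping.single (a + b) (1::'k::comm_ring_1) = Poly_Mapping.single a 1 * Poly_Mapping.single b 1"
  by (simp add: mult_single)

lemma D_sa: "Delta M Mf eta (Poly_Mapping.single (a + b) (1::'k::comm_ring_1)) = Delta M Mf eta (Poly_Mapping.single a 1) * Delta M Mf eta (Poly_Mapping.single b 1)"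
  by (simp only: sa D_mult)

lemma L1_mult: fixes X Y :: "'s mon \<times> 's mon \<Rightarrow>\<^sub>0 'k::comm_ring_1" shows "L1 (X * Y) = L1 X * L1 Y"
  unfolding L1_def
  by (rule lin_ext_mult) (auto simp: sa D_mult ptens_mult)

lemma L2_mult: fixes X Y :: "'s mon \<times> 's mon \<Rightarrow>\<^sub>0 'k::comm_ring_1" shows "L2 (X * Y) = L2 X * L2 Y"
  unfolding L2_def
  by (rule lin_ext_mult) (auto simp: sa D_mult ptens_mult)

lemma L1_one: "L1 (1 :: 's mon \<times> 's mon \<Rightarrow>\<^sub>0 'k::comm_ring_1) = 1"
proof -
  have "L1 (Poly_Mapping.single (0, 0) (1::'k)) = (1 :: ('s mon \<times> 's mon) \<times> 's mon \<Rightarrow>\<^sub>0 'k)" by (simp add: L1_def D_one)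
  then show ?thesis by (metis single_one zero_prod_def)
qed

lemma L2_one: "L2 (1 :: 's mon \<times> 's mon \<Rightarrow>\<^sub>0 'k::comm_ring_1) = 1"
proof -
  have "L2 (Poly_Mapping.single (0, 0) (1::'k)) = (1 :: 's mon \<times> 's mon \<times> 's mon \<Rightarrow>\<^sub>0 'k)" by (simp add: L2_def D_one)
  then show ?thesis by (metis single_one zero_prod_def)
qed

lemma ra_add: "ra (x + y) = ra x + ra y"
  by (simp add: ra_def)

lemma ra_inj: "inj ra"
  by (auto intro!: injI simp: ra_def prod_eq_iff)

lemma mapk_ra_mult: fixes X Y :: "('s mon \<times> 's mon) \<times> 's mon \<Rightarrow>\<^sub>0 'k::comm_ring_1"
  shows "mapk ra (X * Y) = mapk ra X * mapk ra Y"
  by (rule mapk_mult) (rule ra_add)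

lemma mapk_ra_one: "mapk ra (1 :: ('s mon \<times> 's mon) \<times> 's mon \<Rightarrow>\<^sub>0 'k::comm_ring_1) = 1"
  by (rule mapk_one) (simp add: ra_def zero_prod_def)

lemma coassoc_mon:
  "\<mu> \<in> BB \<Longrightarrow> mapk ra (L1 (Dmon \<mu> :: _ \<Rightarrow>\<^sub>0 'k::comm_ring_1)) = L2 (Dmon \<mu>)"
proof (induction \<mu>)
  case empty
  then show ?case by (simp add: L1_one L2_one mapk_ra_one)
next
  case (add \<alpha> \<mu>)
  then have a: "\<alpha> \<in> TT" and mu: "\<mu> \<in> BB" by (auto simp: monomials_over_def)
  obtain U m where U: "finite U" "m \<in> M U" "DeltaGen M Mf eta \<alpha> = (DeltaRep M Mf eta U m :: _ \<Rightarrow>\<^sub>0 'k)"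
    using DeltaGen_T[OF a] by blast
  have e: "Dmon (add_mset \<alpha> \<mu>) = DeltaRep M Mf eta U m * (Dmon \<mu> :: _ \<Rightarrow>\<^sub>0 'k)" using U(3) by (simp add: Dmon_def)
  have "mapk ra (L1 (Dmon (add_mset \<alpha> \<mu>) :: _ \<Rightarrow>\<^sub>0 'k)) = mapk ra (L1 (DeltaRep M Mf eta U m :: _ \<Rightarrow>\<^sub>0 'k)) * mapk ra (L1 (Dmon \<mu> :: _ \<Rightarrow>\<^sub>0 'k))"
    by (simp only: e L1_mult mapk_ra_mult)
  also have "\<dots> = L2 (DeltaRep M Mf eta U m) * L2 (Dmon \<mu>)"
    by (simp only: gen_coassoc[OF U(1,2)] add.IH[OF mu])
  also have "\<dots> = L2 (Dmon (add_mset \<alpha> \<mu>))" by (simp only: e L2_mult)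
  finally show ?case .
qed

lemma coassoc:
  assumes p: "Poly_Mapping.keys p \<subseteq> BB"
  shows "mapk ra (L1 (Delta M Mf eta p :: _ \<Rightarrow>\<^sub>0 'k::comm_ring_1)) = L2 (Delta M Mf eta p)"
proof -
  have "mapk ra (L1 (Delta M Mf eta p :: _ \<Rightarrow>\<^sub>0 'k)) = lin_ext (\<lambda>\<mu>. mapk ra (L1 (Dmon \<mu> :: _ \<Rightarrow>\<^sub>0 'k))) p"
    unfolding Delta_lin L1_def by (simp add: lin_ext_compose mapk_lin_ext)
  also have "\<dots> = lin_ext (\<lambda>\<mu>. L2 (Dmon \<mu>)) p"
    by (rule lin_ext_cong) (use p coassoc_mon in blast)
  also have "\<dots> = L2 (Delta M Mf eta p)"
    unfolding Delta_lin L2_def by (simp add: lin_ext_compose)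
  finally show ?thesis .
qed

lemma coassoc_lookup:
  assumes p: "Poly_Mapping.keys p \<subseteq> BB"
  shows "Poly_Mapping.lookup (L1 (Delta M Mf eta p :: _ \<Rightarrow>\<^sub>0 'k::comm_ring_1)) ((x, y), z)
       = Poly_Mapping.lookup (L2 (Delta M Mf eta p)) (x, (y, z))"
proof -
  have "Poly_Mapping.lookup (L2 (Delta M Mf eta p :: _ \<Rightarrow>\<^sub>0 'k)) (ra ((x, y), z))
      = Poly_Mapping.lookup (L1 (Delta M Mf eta p)) ((x, y), z)"
    unfolding coassoc[OF p, symmetric] by (rule lookup_mapk_inj[OF ra_inj])
  then show ?thesis by (simp add: ra_def)
qed

section \<open>Counit\<close>

definition CLg where "CLg q = lin_ext (\<lambda>(x, y). smult_pm (w x) (Poly_Mapping.single y 1)) q"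
definition CRg where "CRg q = lin_ext (\<lambda>(x, y). smult_pm (w y) (Poly_Mapping.single x 1)) q"

lemma CLg_mult: fixes X Y :: "'s mon \<times> 's mon \<Rightarrow>\<^sub>0 'k::comm_ring_1" shows "CLg (X * Y) = CLg X * CLg Y"
  unfolding CLg_def by (rule lin_ext_mult) (auto simp: w_add mult_single)

lemma CRg_mult: fixes X Y :: "'s mon \<times> 's mon \<Rightarrow>\<^sub>0 'k::comm_ring_1" shows "CRg (X * Y) = CRg X * CRg Y"
  unfolding CRg_def by (rule lin_ext_mult) (auto simp: w_add mult_single)

lemma w0: "w 0 = 1" by (simp add: w_def)

lemma counit_mon:
  "\<mu> \<in> BB \<Longrightarrow> CLg (Dmon \<mu>) = Poly_Mapping.single \<mu> (1::'k::comm_ring_1) \<and> CRg (Dmon \<mu>) = Poly_Mapping.single \<mu> (1::'k)"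
proof (induction \<mu>)
  case empty
  then show ?case by (simp add: CLg_def CRg_def w0 zero_prod_def flip: single_one)
next
  case (add \<alpha> \<mu>)
  then have a: "\<alpha> \<in> TT" and mu: "\<mu> \<in> BB" by (auto simp: monomials_over_def)
  obtain U m where U: "finite U" "m \<in> M U" "\<alpha> = tau M Mf U m" "DeltaGen M Mf eta \<alpha> = (DeltaRep M Mf eta U m :: _ \<Rightarrow>\<^sub>0 'k)"
    using DeltaGen_T[OF a] by blast
  have e: "Dmon (add_mset \<alpha> \<mu>) = DeltaRep M Mf eta U m * (Dmon \<mu> :: _ \<Rightarrow>\<^sub>0 'k)" using U(4) by (simp add: Dmon_def)
  have am: "Poly_Mapping.single (add_mset \<alpha> \<mu>) (1::'k) = Poly_Mapping.single {#tau M Mf U m#} 1 * Poly_Mapping.single \<mu> 1"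
    using U(3) by (simp add: mult_single)
  have "CLg (Dmon (add_mset \<alpha> \<mu>) :: _ \<Rightarrow>\<^sub>0 'k) = CLg (DeltaRep M Mf eta U m :: _ \<Rightarrow>\<^sub>0 'k) * CLg (Dmon \<mu> :: _ \<Rightarrow>\<^sub>0 'k)"
    by (simp only: e CLg_mult)
  also have "\<dots> = Poly_Mapping.single (add_mset \<alpha> \<mu>) 1"
    using add.IH[OF mu] by (simp add: gen_counit(1)[OF U(1,2), folded CLg_def] am)
  finally have 1: "CLg (Dmon (add_mset \<alpha> \<mu>) :: _ \<Rightarrow>\<^sub>0 'k) = Poly_Mapping.single (add_mset \<alpha> \<mu>) 1" .
  have "CRg (Dmon (add_mset \<alpha> \<mu>) :: _ \<Rightarrow>\<^sub>0 'k) = CRg (DeltaRep M Mf eta U m :: _ \<Rightarrow>\<^sub>0 'k) * CRg (Dmon \<mu> :: _ \<Rightarrow>\<^sub>0 'k)"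
    by (simp only: e CRg_mult)
  also have "\<dots> = Poly_Mapping.single (add_mset \<alpha> \<mu>) 1"
    using add.IH[OF mu] by (simp add: gen_counit(2)[OF U(1,2), folded CRg_def] am)
  finally show ?case using 1 by simp
qed

lemma counitL:
  assumes p: "Poly_Mapping.keys p \<subseteq> BB"
  shows "lin_ext (\<lambda>(x, y). smult_pm (eps M Mf (Poly_Mapping.single x 1)) (Poly_Mapping.single y 1)) (Delta M Mf eta p) = (p :: _ \<Rightarrow>\<^sub>0 'k::comm_ring_1)"
proof -
  have "lin_ext (\<lambda>(x, y). smult_pm (eps M Mf (Poly_Mapping.single x 1)) (Poly_Mapping.single y 1)) (Delta M Mf eta p)
      = CLg (Delta M Mf eta p :: _ \<Rightarrow>\<^sub>0 'k)"
    unfolding CLg_def by (simp add: eps_single split_def)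
  also have "\<dots> = lin_ext (\<lambda>\<mu>. CLg (Dmon \<mu>)) p"
    unfolding Delta_lin CLg_def by (simp add: lin_ext_compose)
  also have "\<dots> = lin_ext (\<lambda>\<mu>. Poly_Mapping.single \<mu> 1) p"
    by (rule lin_ext_cong) (use p counit_mon in blast)
  also have "\<dots> = p" by (rule lin_ext_id)
  finally show ?thesis .
qed

lemma counitR:
  assumes p: "Poly_Mapping.keys p \<subseteq> BB"
  shows "lin_ext (\<lambda>(x, y). smult_pm (eps M Mf (Poly_Mapping.single y 1)) (Poly_Mapping.single x 1)) (Delta M Mf eta p) = (p :: _ \<Rightarrow>\<^sub>0 'k::comm_ring_1)"
proof -
  have "lin_ext (\<lambda>(x, y). smult_pm (eps M Mf (Poly_Mapping.single y 1)) (Poly_Mapping.single x 1)) (Delta M Mf eta p)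
      = CRg (Delta M Mf eta p :: _ \<Rightarrow>\<^sub>0 'k)"
    unfolding CRg_def by (simp add: eps_single split_def)
  also have "\<dots> = lin_ext (\<lambda>\<mu>. CRg (Dmon \<mu>)) p"
    unfolding Delta_lin CRg_def by (simp add: lin_ext_compose)
  also have "\<dots> = lin_ext (\<lambda>\<mu>. Poly_Mapping.single \<mu> 1) p"
    by (rule lin_ext_cong) (use p counit_mon in blast)
  also have "\<dots> = p" by (rule lin_ext_id)
  finally show ?thesis .
qed

lemma sum_single_pm: "(\<Sum>x\<in>A. Poly_Mapping.single k (f x)) = Poly_Mapping.single k (\<Sum>x\<in>A. f x)"
  by (induction A rule: infinite_finite_induct) (auto simp: single_add)

definition Eps where "Eps p = lin_ext (\<lambda>x. Poly_Mapping.single (0::nat) (w x)) p"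

lemma Eps_eq: "Eps p = Poly_Mapping.single 0 (eps M Mf p :: 'k::comm_ring_1)"
proof -
  have "Eps p = (\<Sum>x\<in>Poly_Mapping.keys p. Poly_Mapping.single 0 (Poly_Mapping.lookup p x * w x))"
    by (simp add: Eps_def lin_ext_def)
  also have "\<dots> = Poly_Mapping.single 0 (\<Sum>x\<in>Poly_Mapping.keys p. Poly_Mapping.lookup p x * w x)"
    by (rule sum_single_pm)
  also have "(\<Sum>x\<in>Poly_Mapping.keys p. Poly_Mapping.lookup p x * w x) = eps M Mf p"
    by (simp add: eps_def w_def)
  finally show ?thesis .
qed

lemma eps_add: "eps M Mf (p + q) = eps M Mf p + (eps M Mf q :: 'k::comm_ring_1)"
proof -
  have "Poly_Mapping.single (0::nat) (eps M Mf (p + q) :: 'k) = Poly_Mapping.single 0 (eps M Mf p + eps M Mf q)"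
    by (simp only: single_add Eps_eq[symmetric] Eps_def lin_ext_add)
  then show ?thesis by (metis lookup_single_eq)
qed

lemma eps_smult: "eps M Mf (smult_pm c p) = c * (eps M Mf p :: 'k::comm_ring_1)"
proof -
  have "Poly_Mapping.single (0::nat) (eps M Mf (smult_pm c p) :: 'k) = Poly_Mapping.single 0 (c * eps M Mf p)"
    by (simp only: smult_pm_single[symmetric] Eps_eq[symmetric] Eps_def lin_ext_smult)
  then show ?thesis by (metis lookup_single_eq)
qed

lemma eps_mult: "eps M Mf (p * q) = eps M Mf p * (eps M Mf q :: 'k::comm_ring_1)"
proof -
  have "Eps (p * q) = Eps p * (Eps q :: nat \<Rightarrow>\<^sub>0 'k)"
    unfolding Eps_def by (rule lin_ext_mult) (simp add: w_add mult_single)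
  then have "Poly_Mapping.single (0::nat) (eps M Mf (p * q) :: 'k) = Poly_Mapping.single 0 (eps M Mf p * eps M Mf q)"
    by (simp add: Eps_eq mult_single)
  then show ?thesis by (metis lookup_single_eq)
qed

lemma eps_one: "eps M Mf (1 :: _ \<Rightarrow>\<^sub>0 'k::comm_ring_1) = 1"
  by (simp add: eps_single w0 flip: single_one)

theorem bialg: "bialgebra_on BB (Delta M Mf eta) (eps M Mf :: ('s mon \<Rightarrow>\<^sub>0 'k::comm_ring_1) \<Rightarrow> 'k)"
proof -
  let ?A = "{p :: 's mon \<Rightarrow>\<^sub>0 'k. Poly_Mapping.keys p \<subseteq> BB}"
  let ?D = "Delta M Mf eta :: ('s mon \<Rightarrow>\<^sub>0 'k) \<Rightarrow> _"
  let ?e = "eps M Mf :: ('s mon \<Rightarrow>\<^sub>0 'k) \<Rightarrow> 'k"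
  have h1: "0 \<in> BB" by (rule BB_0)
  have h2: "\<forall>x\<in>BB. \<forall>y\<in>BB. x + y \<in> BB" using BB_add by blast
  have h3: "\<forall>p\<in>?A. Poly_Mapping.keys (?D p) \<subseteq> BB \<times> BB" using keys_D by blast
  have h4: "\<forall>p\<in>?A. \<forall>q\<in>?A. ?D (p + q) = ?D p + ?D q \<and> ?D (p * q) = ?D p * ?D q"
    by (simp add: D_add D_mult)
  have h5: "\<forall>c. \<forall>p\<in>?A. ?D (smult_pm c p) = smult_pm c (?D p)" by (simp add: D_smult)
  have h6: "?D 1 = 1" by (rule D_one)
  have h7: "\<forall>p\<in>?A. \<forall>q\<in>?A. ?e (p + q) = ?e p + ?e q \<and> ?e (p * q) = ?e p * ?e q"
    by (simp add: eps_add eps_mult)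
  have h8: "\<forall>c. \<forall>p\<in>?A. ?e (smult_pm c p) = c * ?e p" by (simp add: eps_smult)
  have h9: "?e 1 = 1" by (rule eps_one)
  have h10: "\<forall>p\<in>?A. \<forall>x y z.
        Poly_Mapping.lookup (lin_ext (\<lambda>(x, y). ptens (?D (Poly_Mapping.single x 1)) (Poly_Mapping.single y 1)) (?D p)) ((x, y), z)
      = Poly_Mapping.lookup (lin_ext (\<lambda>(x, y). ptens (Poly_Mapping.single x 1) (?D (Poly_Mapping.single y 1))) (?D p)) (x, (y, z))"
    using coassoc_lookup[unfolded L1_def L2_def] by blast
  have h11: "\<forall>p\<in>?A. lin_ext (\<lambda>(x, y). smult_pm (?e (Poly_Mapping.single x 1)) (Poly_Mapping.single y 1)) (?D p) = p"
    using counitL by blast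
  have h12: "\<forall>p\<in>?A. lin_ext (\<lambda>(x, y). smult_pm (?e (Poly_Mapping.single y 1)) (Poly_Mapping.single x 1)) (?D p) = p"
    using counitR by blast
  show ?thesis unfolding bialgebra_on_def Let_def
    by (intro conjI h1 h2 h3 h4 h5 h6 h7 h8 h9 h10 h11 h12)
qed

end

context oper
begin

abbreviation "bb \<equiv> bullet M Mf"
definition filt :: "'s mon \<Rightarrow> 's mon" where "filt \<mu> = filter_mset (\<lambda>\<alpha>. \<alpha> \<noteq> bb) \<mu>"
definition qq :: "'s mon \<times> 's mon \<Rightarrow> 's mon \<times> 's mon" where "qq t = (filt (fst t), filt (snd t))"

abbreviation "BQ \<equiv> monomials_over (TT - {bb})"

lemma filt_add: "filt (x + y) = filt x + filt y" by (simp add: filt_def)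
lemma filt_0 [simp]: "filt 0 = 0" by (simp add: filt_def)
lemma qq_add: "qq (x + y) = qq x + qq y" by (simp add: qq_def filt_add)
lemma qq_0: "qq 0 = 0" by (simp add: qq_def zero_prod_def)

lemma qmap_eq: "qmap bb p = mapk filt (p :: 's mon \<Rightarrow>\<^sub>0 'k::comm_ring_1)"
  by (simp add: qmap_def mapk_def filt_def)

lemma qtens_eq: "qtens bb X = mapk qq (X :: 's mon \<times> 's mon \<Rightarrow>\<^sub>0 'k::comm_ring_1)"
  by (simp add: qtens_def mapk_def qq_def filt_def split_def)

lemma Q_mult: "mapk qq (X * Y) = mapk qq X * (mapk qq Y :: 's mon \<times> 's mon \<Rightarrow>\<^sub>0 'k::comm_ring_1)"
  by (rule mapk_mult) (rule qq_add)

lemma Q_one: "mapk qq (1 :: 's mon \<times> 's mon \<Rightarrow>\<^sub>0 'k::comm_ring_1) = 1"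
  by (rule mapk_one) (rule qq_0)

lemma bullet_rep: "finite {0::nat}" "unit_str M {0} \<in> M {0}" "bb = tau M Mf {0} (unit_str M {0})"
  by (auto simp: bullet_def intro: unit_str_in)

lemma DeltaGen_bullet: "DeltaGen M Mf eta bb = Poly_Mapping.single ({#bb#}, {#bb#}) (1::'k::comm_ring_1)"
proof -
  let ?u = "unit_str M {0}"
  have u: "?u \<in> M {0}" by (rule bullet_rep(2))
  define x0 where "x0 = ({{0::nat}}, (\<lambda>B\<in>{{0::nat}}. ?u), unit_str M {set_encode {0::nat}})"
  note DW = Dec_whole[OF bullet_rep(1) u, folded x0_def]
  have key: "keyD x = ({#bb#}, {#bb#})" if x: "x \<in> Dec {0} ?u" for x
  proof -
    obtain \<pi> a m' where xe: "x = (\<pi>, a, m')" by (cases x) auto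
    have xs: "(\<pi>, a, m') \<in> subst M M {0}" using x xe Dec_iff by auto
    note sD = substD[OF xs]
    have pe: "\<pi> = {{0}}"
    proof
      show "\<pi> \<subseteq> {{0}}"
      proof
        fix B assume B: "B \<in> \<pi>"
        have "B \<subseteq> {0}" "B \<noteq> {}" using part_blocks[OF sD(1) B] by auto
        then have "B = {0}" using subset_singletonD by blast
        then show "B \<in> {{0}}" by simp
      qed
      show "{{0}} \<subseteq> \<pi>"
      proof -
        have "\<Union> \<pi> = {0}" using sD(1) by (simp add: partition_on_def)
        then obtain B where B: "B \<in> \<pi>" "0 \<in> B" by auto
        have "B \<subseteq> {0}" using part_blocks[OF sD(1) B(1)] by simp
        then have "B = {0}" using B(2) by auto
        then show ?thesis using B(1) by simp
      qed
    qed
    have a0: "a {0} \<in> M {0}" using sD(2) pe by auto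
    have t1: "tau M Mf {0} (a {0}) = bb" using tau_bullet_iff[of "{0}" "a {0}"] a0 by simp
    have cdp: "cd \<pi> = {set_encode {0}}" using pe by (simp add: cd_def)
    have t2: "tau M Mf (cd \<pi>) m' = bb" using tau_bullet_iff[of "cd \<pi>" m'] sD(3) cdp by simp
    show ?thesis unfolding xe keyD_def using pe t1 t2 by simp
  qed
  have "Dec {0} ?u = {x0}"
  proof
    show "{x0} \<subseteq> Dec {0} ?u" using DW(1) by simp
    show "Dec {0} ?u \<subseteq> {x0}"
    proof
      fix x assume x: "x \<in> Dec {0} ?u"
      have "w (snd (keyD x)) = (1::'k)" using key[OF x] by (simp add: w_def)
      moreover have "w (snd (keyD x)) = (if x = x0 then 1 else (0::'k))" by (rule DW(2)[OF x])
      ultimately have "x = x0" by (auto split: if_splits)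
      then show "x \<in> {x0}" by simp
    qed
  qed
  then have "DeltaRep M Mf eta {0} ?u = Poly_Mapping.single ({#bb#}, {#bb#}) (1::'k)"
    using key DW(1) by (simp add: DeltaRep_eq)
  then show ?thesis using bullet_rep(3) by (simp add: DeltaGen_rep[OF bullet_rep(1) u])
qed

lemma Q_Dmon_filt: "mapk qq (Dmon (filt \<mu>) :: _ \<Rightarrow>\<^sub>0 'k::comm_ring_1) = mapk qq (Dmon \<mu>)"
proof (induction \<mu>)
  case empty
  then show ?case by simp
next
  case (add \<alpha> \<mu>)
  show ?case
  proof (cases "\<alpha> = bb")
    case True
    have f: "filt (add_mset \<alpha> \<mu>) = filt \<mu>" using True by (simp add: filt_def)
    have "mapk qq (Dmon (add_mset \<alpha> \<mu>) :: _ \<Rightarrow>\<^sub>0 'k) = mapk qq (DeltaGen M Mf eta \<alpha>) * mapk qq (Dmon \<mu>)"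
      by (simp add: Dmon_def Q_mult)
    also have "mapk qq (DeltaGen M Mf eta \<alpha> :: _ \<Rightarrow>\<^sub>0 'k) = 1"
      using True by (simp add: DeltaGen_bullet qq_def filt_def zero_prod_def flip: single_one)
    finally show ?thesis using f add.IH by simp
  next
    case False
    have f: "filt (add_mset \<alpha> \<mu>) = add_mset \<alpha> (filt \<mu>)" using False by (simp add: filt_def)
    have "mapk qq (Dmon (add_mset \<alpha> \<mu>) :: _ \<Rightarrow>\<^sub>0 'k) = mapk qq (DeltaGen M Mf eta \<alpha>) * mapk qq (Dmon \<mu>)"
      by (simp add: Dmon_def Q_mult)
    moreover have "mapk qq (Dmon (add_mset \<alpha> (filt \<mu>)) :: _ \<Rightarrow>\<^sub>0 'k) = mapk qq (DeltaGen M Mf eta \<alpha>) * mapk qq (Dmon (filt \<mu>))"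
      by (simp add: Dmon_def Q_mult)
    ultimately show ?thesis using f add.IH by simp
  qed
qed

lemma w_filt: "w (filt \<mu>) = w \<mu>"
  by (auto simp: w_def filt_def)

lemma descend_D: "mapk qq (Delta M Mf eta (mapk filt p)) = mapk qq (Delta M Mf eta (p :: _ \<Rightarrow>\<^sub>0 'k::comm_ring_1))"
proof -
  have "mapk qq (Delta M Mf eta (mapk filt p)) = lin_ext (\<lambda>\<mu>. mapk qq (Dmon (filt \<mu>) :: _ \<Rightarrow>\<^sub>0 'k)) p"
    by (simp add: Delta_lin lin_ext_mapk mapk_lin_ext)
  also have "\<dots> = lin_ext (\<lambda>\<mu>. mapk qq (Dmon \<mu>)) p" by (simp add: Q_Dmon_filt)
  also have "\<dots> = mapk qq (Delta M Mf eta p)" by (simp add: Delta_lin mapk_lin_ext)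
  finally show ?thesis .
qed

lemma descend_eps: "eps M Mf (mapk filt p) = (eps M Mf p :: 'k::comm_ring_1)"
proof -
  have "Eps (mapk filt p) = (Eps p :: nat \<Rightarrow>\<^sub>0 'k)" by (simp add: Eps_def lin_ext_mapk w_filt)
  then have "Poly_Mapping.single (0::nat) (eps M Mf (mapk filt p) :: 'k) = Poly_Mapping.single 0 (eps M Mf p)"
    by (simp add: Eps_eq)
  then show ?thesis by (metis lookup_single_eq)
qed

theorem descend:
  "\<forall>p. Poly_Mapping.keys p \<subseteq> BB \<longrightarrow>
     qtens bb (Delta M Mf eta (qmap bb p)) = qtens bb (Delta M Mf eta p) \<and>
     eps M Mf (qmap bb p) = (eps M Mf p :: 'k::comm_ring_1)"
  by (simp add: qtens_eq qmap_eq descend_D descend_eps)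

end

context oper
begin

definition Dq :: "('s mon \<Rightarrow>\<^sub>0 'k::comm_ring_1) \<Rightarrow> ('s mon \<times> 's mon \<Rightarrow>\<^sub>0 'k)" where
  "Dq p = mapk qq (Delta M Mf eta p)"

lemma Dq_eq: "qtens bb (Delta M Mf eta p) = Dq p" by (simp add: Dq_def qtens_eq)

lemma BQ_sub: "BQ \<subseteq> BB" by (auto simp: monomials_over_def)

lemma filt_BQ: "\<mu> \<in> BQ \<Longrightarrow> filt \<mu> = \<mu>"
proof -
  assume "\<mu> \<in> BQ"
  then have "\<And>x. x \<in># \<mu> \<Longrightarrow> x \<noteq> bb" by (auto simp: monomials_over_def)
  then have "filter_mset (\<lambda>\<alpha>. \<alpha> \<noteq> bb) \<mu> = filter_mset (\<lambda>\<alpha>. True) \<mu>"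
    by (intro filter_mset_cong) auto
  then show ?thesis by (simp add: filt_def)
qed

lemma filt_in: "\<mu> \<in> BB \<Longrightarrow> filt \<mu> \<in> BQ"
  by (auto simp: monomials_over_def filt_def)

lemma mapk_filt_id: "Poly_Mapping.keys p \<subseteq> BQ \<Longrightarrow> mapk filt p = (p :: _ \<Rightarrow>\<^sub>0 'k::comm_ring_1)"
proof -
  assume p: "Poly_Mapping.keys p \<subseteq> BQ"
  have "mapk filt p = lin_ext (\<lambda>x. Poly_Mapping.single x (1::'k)) p"
    unfolding mapk_def by (rule lin_ext_cong) (use p filt_BQ in auto)
  then show ?thesis by (simp add: lin_ext_id)
qed

lemma keys_Dq: "Poly_Mapping.keys p \<subseteq> BB \<Longrightarrow> Poly_Mapping.keys (Dq p :: _ \<Rightarrow>\<^sub>0 'k::comm_ring_1) \<subseteq> BQ \<times> BQ"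
proof -
  assume p: "Poly_Mapping.keys p \<subseteq> BB"
  have "Poly_Mapping.keys (Dq p :: _ \<Rightarrow>\<^sub>0 'k) \<subseteq> qq ` Poly_Mapping.keys (Delta M Mf eta p :: _ \<Rightarrow>\<^sub>0 'k)"
    unfolding Dq_def by (rule keys_mapk)
  also have "\<dots> \<subseteq> qq ` (BB \<times> BB)" using keys_D[OF p] by (rule image_mono)
  also have "\<dots> \<subseteq> BQ \<times> BQ" by (auto simp: qq_def filt_in)
  finally show ?thesis .
qed

lemma Dq_add: "Dq (p + q) = Dq p + (Dq q :: _ \<Rightarrow>\<^sub>0 'k::comm_ring_1)"
  by (simp add: Dq_def D_add mapk_add)
lemma Dq_mult: "Dq (p * q) = Dq p * (Dq q :: _ \<Rightarrow>\<^sub>0 'k::comm_ring_1)"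
  by (simp add: Dq_def D_mult Q_mult)
lemma Dq_smult: "Dq (smult_pm c p) = smult_pm c (Dq p :: _ \<Rightarrow>\<^sub>0 'k::comm_ring_1)"
  by (simp add: Dq_def D_smult mapk_smult)
lemma Dq_one: "Dq 1 = (1 :: _ \<Rightarrow>\<^sub>0 'k::comm_ring_1)"
  by (simp add: Dq_def D_one Q_one)

lemma Dq_single: "Dq (Poly_Mapping.single (filt x) (1::'k::comm_ring_1)) = Dq (Poly_Mapping.single x 1)"
  using descend_D[of "Poly_Mapping.single x (1::'k)"] by (simp add: Dq_def)

definition L1q where
  "L1q X = lin_ext (\<lambda>(x, y). ptens (Dq (Poly_Mapping.single x 1)) (Poly_Mapping.single y (1::'k::comm_ring_1))) X"
definition L2q where
  "L2q X = lin_ext (\<lambda>(x, y). ptens (Poly_Mapping.single x (1::'k::comm_ring_1)) (Dq (Poly_Mapping.single y 1))) X"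

definition Q3 :: "('s mon \<times> 's mon) \<times> 's mon \<Rightarrow> ('s mon \<times> 's mon) \<times> 's mon" where
  "Q3 t = (qq (fst t), filt (snd t))"
definition Q3' :: "'s mon \<times> ('s mon \<times> 's mon) \<Rightarrow> 's mon \<times> ('s mon \<times> 's mon)" where
  "Q3' t = (filt (fst t), qq (snd t))"

lemma Q3_fun: "(\<lambda>(x, y). (qq x, filt y)) = Q3" by (auto simp: Q3_def fun_eq_iff)
lemma Q3'_fun: "(\<lambda>(x, y). (filt x, qq y)) = Q3'" by (auto simp: Q3'_def fun_eq_iff)

lemma L1q_Q: "L1q (mapk qq X) = mapk Q3 (L1 (X :: 's mon \<times> 's mon \<Rightarrow>\<^sub>0 'k::comm_ring_1))"
proof -
  have "L1q (mapk qq X) = lin_ext (\<lambda>(x, y). ptens (Dq (Poly_Mapping.single (filt x) 1)) (Poly_Mapping.single (filt y) (1::'k))) X"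
    unfolding L1q_def lin_ext_mapk by (simp add: qq_def split_def)
  also have "\<dots> = lin_ext (\<lambda>(x, y). mapk Q3 (ptens (Delta M Mf eta (Poly_Mapping.single x 1)) (Poly_Mapping.single y (1::'k)))) X"
  proof (rule lin_ext_cong)
    fix t assume "t \<in> Poly_Mapping.keys X"
    obtain x y where t: "t = (x, y)" by (cases t)
    have "ptens (Dq (Poly_Mapping.single (filt x) 1)) (Poly_Mapping.single (filt y) (1::'k))
        = ptens (mapk qq (Delta M Mf eta (Poly_Mapping.single x 1))) (mapk filt (Poly_Mapping.single y (1::'k)))"
      by (simp only: Dq_single) (simp add: Dq_def)
    also have "\<dots> = mapk Q3 (ptens (Delta M Mf eta (Poly_Mapping.single x 1)) (Poly_Mapping.single y (1::'k)))"
      by (simp only: ptens_mapk Q3_fun)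
    finally show "(case t of (x, y) \<Rightarrow> ptens (Dq (Poly_Mapping.single (filt x) 1)) (Poly_Mapping.single (filt y) (1::'k)))
        = (case t of (x, y) \<Rightarrow> mapk Q3 (ptens (Delta M Mf eta (Poly_Mapping.single x 1)) (Poly_Mapping.single y 1)))"
      unfolding t by simp
  qed
  also have "\<dots> = mapk Q3 (L1 X)" unfolding L1_def mapk_lin_ext by (simp add: split_def)
  finally show ?thesis .
qed

lemma L2q_Q: "L2q (mapk qq X) = mapk Q3' (L2 (X :: 's mon \<times> 's mon \<Rightarrow>\<^sub>0 'k::comm_ring_1))"
proof -
  have "L2q (mapk qq X) = lin_ext (\<lambda>(x, y). ptens (Poly_Mapping.single (filt x) (1::'k)) (Dq (Poly_Mapping.single (filt y) 1))) X"
    unfolding L2q_def lin_ext_mapk by (simp add: qq_def split_def)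
  also have "\<dots> = lin_ext (\<lambda>(x, y). mapk Q3' (ptens (Poly_Mapping.single x (1::'k)) (Delta M Mf eta (Poly_Mapping.single y 1)))) X"
  proof (rule lin_ext_cong)
    fix t assume "t \<in> Poly_Mapping.keys X"
    obtain x y where t: "t = (x, y)" by (cases t)
    have "ptens (Poly_Mapping.single (filt x) (1::'k)) (Dq (Poly_Mapping.single (filt y) 1))
        = ptens (mapk filt (Poly_Mapping.single x (1::'k))) (mapk qq (Delta M Mf eta (Poly_Mapping.single y 1)))"
      by (simp only: Dq_single) (simp add: Dq_def)
    also have "\<dots> = mapk Q3' (ptens (Poly_Mapping.single x (1::'k)) (Delta M Mf eta (Poly_Mapping.single y 1)))"
      by (simp only: ptens_mapk Q3'_fun)
    finally show "(case t of (x, y) \<Rightarrow> ptens (Poly_Mapping.single (filt x) (1::'k)) (Dq (Poly_Mapping.single (filt y) 1)))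
        = (case t of (x, y) \<Rightarrow> mapk Q3' (ptens (Poly_Mapping.single x 1) (Delta M Mf eta (Poly_Mapping.single y 1))))"
      unfolding t by simp
  qed
  also have "\<dots> = mapk Q3' (L2 X)" unfolding L2_def mapk_lin_ext by (simp add: split_def)
  finally show ?thesis .
qed

lemma ra_Q3: "ra \<circ> Q3 = Q3' \<circ> ra"
  by (simp add: fun_eq_iff ra_def Q3_def Q3'_def qq_def)

lemma coassoc_q:
  assumes p: "Poly_Mapping.keys p \<subseteq> BB"
  shows "mapk ra (L1q (Dq p :: _ \<Rightarrow>\<^sub>0 'k::comm_ring_1)) = L2q (Dq p)"
proof -
  have "mapk ra (L1q (Dq p :: _ \<Rightarrow>\<^sub>0 'k)) = mapk Q3' (mapk ra (L1 (Delta M Mf eta p :: _ \<Rightarrow>\<^sub>0 'k)))"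
    unfolding Dq_def L1q_Q mapk_mapk ra_Q3 ..
  also have "\<dots> = L2q (Dq p)" unfolding coassoc[OF p] Dq_def L2q_Q ..
  finally show ?thesis .
qed

lemma counit_q:
  assumes p: "Poly_Mapping.keys p \<subseteq> BQ"
  shows "lin_ext (\<lambda>(x, y). smult_pm (eps M Mf (Poly_Mapping.single x 1)) (Poly_Mapping.single y 1)) (Dq p) = (p :: _ \<Rightarrow>\<^sub>0 'k::comm_ring_1)"
    "lin_ext (\<lambda>(x, y). smult_pm (eps M Mf (Poly_Mapping.single y 1)) (Poly_Mapping.single x 1)) (Dq p) = (p :: _ \<Rightarrow>\<^sub>0 'k::comm_ring_1)"
proof -
  have pB: "Poly_Mapping.keys p \<subseteq> BB" using p BQ_sub by blast
  have "lin_ext (\<lambda>(x, y). smult_pm (eps M Mf (Poly_Mapping.single x 1)) (Poly_Mapping.single y 1)) (Dq p)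
      = mapk filt (lin_ext (\<lambda>(x, y). smult_pm (eps M Mf (Poly_Mapping.single x 1)) (Poly_Mapping.single y 1)) (Delta M Mf eta p :: _ \<Rightarrow>\<^sub>0 'k))"
    unfolding Dq_def lin_ext_mapk mapk_lin_ext by (simp add: eps_single qq_def w_filt split_def)
  also have "\<dots> = p" unfolding counitL[OF pB] by (rule mapk_filt_id[OF p])
  finally show "lin_ext (\<lambda>(x, y). smult_pm (eps M Mf (Poly_Mapping.single x 1)) (Poly_Mapping.single y 1)) (Dq p) = (p :: _ \<Rightarrow>\<^sub>0 'k)" .
  have "lin_ext (\<lambda>(x, y). smult_pm (eps M Mf (Poly_Mapping.single y 1)) (Poly_Mapping.single x 1)) (Dq p)
      = mapk filt (lin_ext (\<lambda>(x, y). smult_pm (eps M Mf (Poly_Mapping.single y 1)) (Poly_Mapping.single x 1)) (Delta M Mf eta p :: _ \<Rightarrow>\<^sub>0 'k))"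
    unfolding Dq_def lin_ext_mapk mapk_lin_ext by (simp add: eps_single qq_def w_filt split_def)
  also have "\<dots> = p" unfolding counitR[OF pB] by (rule mapk_filt_id[OF p])
  finally show "lin_ext (\<lambda>(x, y). smult_pm (eps M Mf (Poly_Mapping.single y 1)) (Poly_Mapping.single x 1)) (Dq p) = (p :: _ \<Rightarrow>\<^sub>0 'k)" .
qed

theorem qbialg: "bialgebra_on BQ Dq (eps M Mf :: ('s mon \<Rightarrow>\<^sub>0 'k::comm_ring_1) \<Rightarrow> 'k)"
proof -
  let ?A = "{p :: 's mon \<Rightarrow>\<^sub>0 'k. Poly_Mapping.keys p \<subseteq> BQ}"
  let ?D = "Dq :: ('s mon \<Rightarrow>\<^sub>0 'k) \<Rightarrow> _"
  let ?e = "eps M Mf :: ('s mon \<Rightarrow>\<^sub>0 'k) \<Rightarrow> 'k"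
  have h1: "0 \<in> BQ" by (simp add: monomials_over_def)
  have h2: "\<forall>x\<in>BQ. \<forall>y\<in>BQ. x + y \<in> BQ" by (auto simp: monomials_over_def)
  have h3: "\<forall>p\<in>?A. Poly_Mapping.keys (?D p) \<subseteq> BQ \<times> BQ" using keys_Dq BQ_sub by blast
  have h4: "\<forall>p\<in>?A. \<forall>q\<in>?A. ?D (p + q) = ?D p + ?D q \<and> ?D (p * q) = ?D p * ?D q"
    by (simp add: Dq_add Dq_mult)
  have h5: "\<forall>c. \<forall>p\<in>?A. ?D (smult_pm c p) = smult_pm c (?D p)" by (simp add: Dq_smult)
  have h6: "?D 1 = 1" by (rule Dq_one)
  have h7: "\<forall>p\<in>?A. \<forall>q\<in>?A. ?e (p + q) = ?e p + ?e q \<and> ?e (p * q) = ?e p * ?e q"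
    by (simp add: eps_add eps_mult)
  have h8: "\<forall>c. \<forall>p\<in>?A. ?e (smult_pm c p) = c * ?e p" by (simp add: eps_smult)
  have h9: "?e 1 = 1" by (rule eps_one)
  have h10: "\<forall>p\<in>?A. \<forall>x y z.
        Poly_Mapping.lookup (lin_ext (\<lambda>(x, y). ptens (?D (Poly_Mapping.single x 1)) (Poly_Mapping.single y 1)) (?D p)) ((x, y), z)
      = Poly_Mapping.lookup (lin_ext (\<lambda>(x, y). ptens (Poly_Mapping.single x 1) (?D (Poly_Mapping.single y 1))) (?D p)) (x, (y, z))"
  proof (intro ballI allI)
    fix p :: "'s mon \<Rightarrow>\<^sub>0 'k" and x y z assume "p \<in> ?A"
    then have pB: "Poly_Mapping.keys p \<subseteq> BB" using BQ_sub by auto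
    have "Poly_Mapping.lookup (L2q (?D p)) (ra ((x, y), z)) = Poly_Mapping.lookup (L1q (?D p)) ((x, y), z)"
      unfolding coassoc_q[OF pB, symmetric] by (rule lookup_mapk_inj[OF ra_inj])
    then show "Poly_Mapping.lookup (lin_ext (\<lambda>(x, y). ptens (?D (Poly_Mapping.single x 1)) (Poly_Mapping.single y 1)) (?D p)) ((x, y), z)
      = Poly_Mapping.lookup (lin_ext (\<lambda>(x, y). ptens (Poly_Mapping.single x 1) (?D (Poly_Mapping.single y 1))) (?D p)) (x, (y, z))"
      by (simp add: ra_def L1q_def L2q_def)
  qed
  have h11: "\<forall>p\<in>?A. lin_ext (\<lambda>(x, y). smult_pm (?e (Poly_Mapping.single x 1)) (Poly_Mapping.single y 1)) (?D p) = p"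
    using counit_q(1) by blast
  have h12: "\<forall>p\<in>?A. lin_ext (\<lambda>(x, y). smult_pm (?e (Poly_Mapping.single y 1)) (Poly_Mapping.single x 1)) (?D p) = p"
    using counit_q(2) by blast
  show ?thesis unfolding bialgebra_on_def Let_def
    by (intro conjI h1 h2 h3 h4 h5 h6 h7 h8 h9 h10 h11 h12)
qed

end

lemma lin_ext_mult_const: "lin_ext (\<lambda>x. f x * c) p = lin_ext f p * (c :: 'b::comm_monoid_add \<Rightarrow>\<^sub>0 'k::comm_ring_1)"
  by (simp add: lin_ext_def sum_distrib_right smult_pm_mult1)

lemma lin_ext_const_mult: "lin_ext (\<lambda>x. c * f x) p = c * lin_ext f p"
  for c :: "'b::comm_monoid_add \<Rightarrow>\<^sub>0 'k::comm_ring_1"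
  by (simp add: lin_ext_def sum_distrib_left smult_pm_mult2)

lemma lin_ext_zero_on_keys: "(\<And>x. x \<in> Poly_Mapping.keys p \<Longrightarrow> f x = 0) \<Longrightarrow> lin_ext f p = 0"
  by (simp add: lin_ext_def)

context oper
begin

section \<open>Degrees\<close>

definition dgt :: "(nat set \<times> 's) set \<Rightarrow> nat" where
  "dgt \<alpha> = card (fst (SOME r. r \<in> \<alpha>)) - 1"

definition deg :: "'s mon \<Rightarrow> nat" where
  "deg \<mu> = sum_mset (image_mset dgt \<mu>)"

lemma deg_add: "deg (x + y) = deg x + deg y" by (simp add: deg_def)
lemma deg_0 [simp]: "deg 0 = 0" by (simp add: deg_def)

lemma dgt_tau: "finite U \<Longrightarrow> m \<in> M U \<Longrightarrow> dgt (tau M Mf U m) = card U - 1"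
proof -
  assume U: "finite U" and m: "m \<in> M U"
  let ?r = "SOME r. r \<in> tau M Mf U m"
  have "?r \<in> tau M Mf U m" using tau_self[OF U m] by (rule someI)
  then obtain V m' where r: "?r = (V, m')" "(V, m') \<in> tau M Mf U m" by (cases ?r) auto
  show ?thesis unfolding dgt_def r(1) using tau_memD(4)[OF U m r(2)] by simp
qed

lemma dgt_bb: "dgt bb = 0"
  using dgt_tau[OF bullet_rep(1,2)] bullet_rep(3) by simp

lemma deg_filt: "deg (filt x) = deg x"
proof (induction x)
  case (add a x)
  then show ?case by (cases "a = bb") (auto simp: filt_def deg_def dgt_bb)
qed simp

lemma deg_pos: "x \<in> BQ \<Longrightarrow> x \<noteq> 0 \<Longrightarrow> deg x \<ge> 1"
proof -
  assume x: "x \<in> BQ" "x \<noteq> 0"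
  then obtain \<alpha> where a: "\<alpha> \<in># x" by (metis multiset_nonemptyE)
  then have aT: "\<alpha> \<in> TT" "\<alpha> \<noteq> bb" using x(1) by (auto simp: monomials_over_def)
  obtain U m where U: "finite U" "m \<in> M U" "\<alpha> = tau M Mf U m" using T_rep[OF aT(1)] by blast
  have "card U \<noteq> 1" using aT(2) tau_bullet_iff[OF U(1,2)] U(3) by auto
  moreover have "U \<noteq> {}" using U(2) M_empty by auto
  then have "card U \<ge> 1" using U(1) by (simp add: Suc_le_eq card_gt_0_iff)
  ultimately have "dgt \<alpha> \<ge> 1" using dgt_tau[OF U(1,2)] U(3) by simp
  moreover obtain x' where "x = add_mset \<alpha> x'" using a by (metis multi_member_split)
  ultimately show ?thesis by (simp add: deg_def)
qed

lemma keyD_deg: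
  assumes U: "finite U" and x: "x \<in> Dec U m"
  shows "deg (fst (keyD x)) + deg (snd (keyD x)) = card U - 1"
proof -
  obtain \<pi> a m' where xe: "x = (\<pi>, a, m')" by (cases x) auto
  have xs: "(\<pi>, a, m') \<in> subst M M U" using x xe Dec_iff by auto
  note sD = substD[OF xs]
  note pf = part_finite[OF U sD(1)]
  have aB: "B \<in> \<pi> \<Longrightarrow> a B \<in> M B" for B using sD(2) by auto
  have d1: "deg (fst (keyD x)) = (\<Sum>B\<in>\<pi>. card B - 1)"
    unfolding xe keyD_def deg_def using pf(1)
    by (simp add: sum_unfold_sum_mset[symmetric] image_mset.compositionality comp_def dgt_tau pf(2) aB
        flip: sum_unfold_sum_mset)
  have d2: "deg (snd (keyD x)) = card \<pi> - 1"
    unfolding xe keyD_def deg_def using dgt_tau[OF finite_cd[OF pf(1)] sD(3)] card_cd[of \<pi>] pf(2) by simp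
  have cU: "card U = (\<Sum>B\<in>\<pi>. card B)" using product_partition[OF sD(1) pf(2)] .
  have cb: "B \<in> \<pi> \<Longrightarrow> card B \<ge> 1" for B using part_blocks[OF sD(1)] pf(2) by (simp add: Suc_le_eq card_gt_0_iff)
  have s1: "(\<Sum>B\<in>\<pi>. card B - 1) + card \<pi> = (\<Sum>B\<in>\<pi>. card B)"
  proof -
    have sd: "(\<Sum>B\<in>\<pi>. card B - 1 + 1) = (\<Sum>B\<in>\<pi>. card B - 1) + (\<Sum>B\<in>\<pi>. (1::nat))" by (rule sum.distrib)
    have "(\<Sum>B\<in>\<pi>. card B - 1) + card \<pi> = (\<Sum>B\<in>\<pi>. card B - 1 + 1)" unfolding sd by simp
    also have "\<dots> = (\<Sum>B\<in>\<pi>. card B)"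
    proof (rule sum.cong[OF refl])
      fix B assume "B \<in> \<pi>"
      then have "card B \<ge> 1" by (rule cb)
      then show "card B - 1 + 1 = card B" by simp
    qed
    finally show ?thesis .
  qed
  have Une: "U \<noteq> {}" using x xe Dec_iff eta_in[OF U xs] M_empty by auto
  have "\<pi> \<noteq> {}" using sD(1) Une by (auto simp: partition_on_def)
  then have "card \<pi> \<ge> 1" using pf(1) by (simp add: Suc_le_eq card_gt_0_iff)
  then show ?thesis using d1 d2 cU s1 by linarith
qed

definition degOK :: "'s mon \<Rightarrow> ('s mon \<times> 's mon) set" where
  "degOK \<mu> = {(x, y). deg x + deg y = deg \<mu>}"

lemma keys_Dmon_deg: "\<mu> \<in> BB \<Longrightarrow> Poly_Mapping.keys (Dmon \<mu> :: _ \<Rightarrow>\<^sub>0 'k::comm_ring_1) \<subseteq> degOK \<mu>"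
proof (induction \<mu>)
  case empty
  then show ?case by (simp add: degOK_def zero_prod_def)
next
  case (add \<alpha> \<mu>)
  then have a: "\<alpha> \<in> TT" and mu: "\<mu> \<in> BB" by (auto simp: monomials_over_def)
  obtain U m where U: "finite U" "m \<in> M U" "\<alpha> = tau M Mf U m" "DeltaGen M Mf eta \<alpha> = (DeltaRep M Mf eta U m :: _ \<Rightarrow>\<^sub>0 'k)"
    using DeltaGen_T[OF a] by blast
  have e: "Dmon (add_mset \<alpha> \<mu>) = DeltaRep M Mf eta U m * (Dmon \<mu> :: _ \<Rightarrow>\<^sub>0 'k)" using U(4) by (simp add: Dmon_def)
  have kD: "Poly_Mapping.keys (DeltaRep M Mf eta U m :: _ \<Rightarrow>\<^sub>0 'k) \<subseteq> {(x, y). deg x + deg y = card U - 1}"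
  proof -
    have "Poly_Mapping.keys (DeltaRep M Mf eta U m :: _ \<Rightarrow>\<^sub>0 'k) \<subseteq> (\<Union>x\<in>Dec U m. Poly_Mapping.keys (Poly_Mapping.single (keyD x) (1::'k)))"
      unfolding DeltaRep_eq by (rule keys_sum)
    also have "\<dots> \<subseteq> {(x, y). deg x + deg y = card U - 1}"
    proof (rule UN_least)
      fix x assume "x \<in> Dec U m"
      then show "Poly_Mapping.keys (Poly_Mapping.single (keyD x) (1::'k)) \<subseteq> {(x, y). deg x + deg y = card U - 1}"
        using keyD_deg[OF U(1)] by (cases "keyD x") fastforce
    qed
    finally show ?thesis .
  qed
  have dga: "deg (add_mset \<alpha> \<mu>) = card U - 1 + deg \<mu>" using dgt_tau[OF U(1,2)] U(3) by (simp add: deg_def)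
  show ?case
  proof
    fix k assume "k \<in> Poly_Mapping.keys (Dmon (add_mset \<alpha> \<mu>) :: _ \<Rightarrow>\<^sub>0 'k)"
    then obtain a b where k: "k = a + b" "a \<in> Poly_Mapping.keys (DeltaRep M Mf eta U m :: _ \<Rightarrow>\<^sub>0 'k)" "b \<in> Poly_Mapping.keys (Dmon \<mu> :: _ \<Rightarrow>\<^sub>0 'k)"
      unfolding e using keys_mult by blast
    have "a \<in> {(x, y). deg x + deg y = card U - 1}" using k(2) kD by blast
    moreover have "b \<in> degOK \<mu>" using k(3) add.IH[OF mu] by blast
    ultimately show "k \<in> degOK (add_mset \<alpha> \<mu>)" unfolding k(1) degOK_def dga
      by (cases a, cases b) (simp add: deg_add)
  qed
qed

lemma Dq_single_Dmon: "Dq (Poly_Mapping.single \<mu> (1::'k::comm_ring_1)) = mapk qq (Dmon \<mu>)"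
  by (simp add: Dq_def D_single)

lemma keys_Dq_deg:
  assumes "\<mu> \<in> BB"
  shows "Poly_Mapping.keys (Dq (Poly_Mapping.single \<mu> (1::'k::comm_ring_1))) \<subseteq> {(x, y). x \<in> BQ \<and> y \<in> BQ \<and> deg x + deg y = deg \<mu>}"
proof
  fix k assume k: "k \<in> Poly_Mapping.keys (Dq (Poly_Mapping.single \<mu> (1::'k)))"
  have "k \<in> BQ \<times> BQ" using keys_Dq[of "Poly_Mapping.single \<mu> (1::'k)"] assms k by auto
  moreover have "k \<in> qq ` degOK \<mu>"
    using k keys_mapk[of qq "Dmon \<mu> :: _ \<Rightarrow>\<^sub>0 'k"] keys_Dmon_deg[OF assms, where 'k='k] unfolding Dq_single_Dmon by blast
  ultimately show "k \<in> {(x, y). x \<in> BQ \<and> y \<in> BQ \<and> deg x + deg y = deg \<mu>}"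
    by (auto simp: degOK_def qq_def deg_filt)
qed

end

lemma smult_pm_uminus: "smult_pm c (- p) = - smult_pm c p"
  by (auto intro!: poly_mapping_eqI)

lemma lin_ext_fun_diff: "lin_ext (\<lambda>x. f x - g x) p = lin_ext f p - lin_ext g p"
proof -
  have "lin_ext (\<lambda>x. f x - g x) p = lin_ext (\<lambda>x. f x + (- g x)) p" by simp
  also have "\<dots> = lin_ext f p + lin_ext (\<lambda>x. - g x) p" by (rule lin_ext_fun_add)
  also have "lin_ext (\<lambda>x. - g x) p = - lin_ext g p"
    by (simp add: lin_ext_def smult_pm_uminus sum_negf)
  finally show ?thesis by simp
qed

lemma keys_diff_sub: "Poly_Mapping.keys (a - b) \<subseteq> Poly_Mapping.keys a \<union> Poly_Mapping.keys (b :: _ \<Rightarrow>\<^sub>0 'k::ab_group_add)"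
  by (auto simp: in_keys_iff lookup_minus)

context oper
begin

definition conv :: "('s mon \<Rightarrow> ('s mon \<Rightarrow>\<^sub>0 'k::comm_ring_1)) \<Rightarrow> ('s mon \<Rightarrow> ('s mon \<Rightarrow>\<^sub>0 'k)) \<Rightarrow> 's mon \<Rightarrow> ('s mon \<Rightarrow>\<^sub>0 'k)" where
  "conv F G \<mu> = lin_ext (\<lambda>(x, y). F x * G y) (Dq (Poly_Mapping.single \<mu> 1))"

definition Eu :: "'s mon \<Rightarrow> ('s mon \<Rightarrow>\<^sub>0 'k::comm_ring_1)" where "Eu \<mu> = Poly_Mapping.single 0 (w \<mu>)"
definition Iu :: "'s mon \<Rightarrow> ('s mon \<Rightarrow>\<^sub>0 'k::comm_ring_1)" where "Iu \<mu> = Poly_Mapping.single \<mu> 1"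
definition ff :: "'s mon \<Rightarrow> ('s mon \<Rightarrow>\<^sub>0 'k::comm_ring_1)" where "ff \<mu> = Eu \<mu> - Iu \<mu>"

primrec fpow :: "nat \<Rightarrow> 's mon \<Rightarrow> ('s mon \<Rightarrow>\<^sub>0 'k::comm_ring_1)" where
  "fpow 0 = Eu"
| "fpow (Suc n) = conv ff (fpow n)"

definition Sf :: "'s mon \<Rightarrow> ('s mon \<Rightarrow>\<^sub>0 'k::comm_ring_1)" where
  "Sf \<mu> = (\<Sum>n\<le>deg \<mu>. fpow n \<mu>)"

lemma BQ_BB: "\<mu> \<in> BQ \<Longrightarrow> \<mu> \<in> BB" using BQ_sub by blast

lemma conv_cong:
  assumes "\<mu> \<in> BB"
    and "\<And>x y. x \<in> BQ \<Longrightarrow> y \<in> BQ \<Longrightarrow> deg x + deg y = deg \<mu> \<Longrightarrow> F x * G y = F' x * G' y"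
  shows "conv F G \<mu> = (conv F' G' \<mu> :: _ \<Rightarrow>\<^sub>0 'k::comm_ring_1)"
  unfolding conv_def
proof (rule lin_ext_cong)
  fix t assume "t \<in> Poly_Mapping.keys (Dq (Poly_Mapping.single \<mu> (1::'k)))"
  then have "t \<in> {(x, y). x \<in> BQ \<and> y \<in> BQ \<and> deg x + deg y = deg \<mu>}" using keys_Dq_deg[OF assms(1)] by blast
  then show "(case t of (x, y) \<Rightarrow> F x * G y) = (case t of (x, y) \<Rightarrow> F' x * G' y)" using assms(2) by auto
qed

lemma conv_sum_left: "conv (\<lambda>x. \<Sum>n\<in>N. F n x) G \<mu> = (\<Sum>n\<in>N. conv (F n) G \<mu>)"
  unfolding conv_def by (simp add: sum_distrib_right split_def lin_ext_fun_sum)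

lemma conv_diff_left: "conv (\<lambda>x. F x - F' x) G \<mu> = conv F G \<mu> - conv F' G \<mu>"
  unfolding conv_def by (simp add: algebra_simps split_def lin_ext_fun_diff)

lemma conv_diff_right: "conv F (\<lambda>x. G x - G' x) \<mu> = conv F G \<mu> - conv F G' \<mu>"
  unfolding conv_def by (simp add: algebra_simps split_def lin_ext_fun_diff)

lemma lin_ext_Eu: "lin_ext (\<lambda>x. Poly_Mapping.single k (w x)) p = Poly_Mapping.single k (eps M Mf p :: 'k::comm_ring_1)"
proof -
  have "lin_ext (\<lambda>x. Poly_Mapping.single k (w x)) p = (\<Sum>x\<in>Poly_Mapping.keys p. Poly_Mapping.single k (Poly_Mapping.lookup p x * (w x :: 'k)))"
    by (simp add: lin_ext_def)
  also have "\<dots> = Poly_Mapping.single k (\<Sum>x\<in>Poly_Mapping.keys p. Poly_Mapping.lookup p x * w x)"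
    by (rule sum_single_pm)
  also have "(\<Sum>x\<in>Poly_Mapping.keys p. Poly_Mapping.lookup p x * w x) = (eps M Mf p :: 'k)"
    by (simp add: eps_def w_def)
  finally show ?thesis .
qed

lemma mult_single0: "F * Poly_Mapping.single 0 c = smult_pm c (F :: 's mon \<Rightarrow>\<^sub>0 'k::comm_ring_1)"
  by (simp add: smult_pm_conv mult.commute)

lemma conv_unitR:
  assumes mu: "\<mu> \<in> BQ"
  shows "conv F Eu \<mu> = (F \<mu> :: _ \<Rightarrow>\<^sub>0 'k::comm_ring_1)"
proof -
  have "conv F Eu \<mu> = lin_ext (\<lambda>t. lin_ext F ((\<lambda>(x, y). smult_pm (eps M Mf (Poly_Mapping.single y 1)) (Poly_Mapping.single x 1)) t))
                (Dq (Poly_Mapping.single \<mu> (1::'k)))"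
    unfolding conv_def Eu_def by (simp add: split_def mult_single0 eps_single)
  also have "\<dots> = lin_ext F (lin_ext (\<lambda>(x, y). smult_pm (eps M Mf (Poly_Mapping.single y 1)) (Poly_Mapping.single x 1)) (Dq (Poly_Mapping.single \<mu> (1::'k))))"
    by (simp add: lin_ext_compose)
  also have "\<dots> = lin_ext F (Poly_Mapping.single \<mu> 1)"
    using counit_q(2)[of "Poly_Mapping.single \<mu> (1::'k)"] mu by simp
  finally show ?thesis by simp
qed

lemma conv_unitL:
  assumes mu: "\<mu> \<in> BQ"
  shows "conv Eu F \<mu> = (F \<mu> :: _ \<Rightarrow>\<^sub>0 'k::comm_ring_1)"
proof -
  have "conv Eu F \<mu> = lin_ext (\<lambda>t. lin_ext F ((\<lambda>(x, y). smult_pm (eps M Mf (Poly_Mapping.single x 1)) (Poly_Mapping.single y 1)) t))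
                (Dq (Poly_Mapping.single \<mu> (1::'k)))"
    unfolding conv_def Eu_def by (simp add: split_def mult_single0 eps_single mult.commute[of "Poly_Mapping.single 0 _"])
  also have "\<dots> = lin_ext F (lin_ext (\<lambda>(x, y). smult_pm (eps M Mf (Poly_Mapping.single x 1)) (Poly_Mapping.single y 1)) (Dq (Poly_Mapping.single \<mu> (1::'k))))"
    by (simp add: lin_ext_compose)
  also have "\<dots> = lin_ext F (Poly_Mapping.single \<mu> 1)"
    using counit_q(1)[of "Poly_Mapping.single \<mu> (1::'k)"] mu by simp
  finally show ?thesis by simp
qed

lemma conv_as_L1q:
  "conv (conv F G) H \<mu> = lin_ext (\<lambda>((a, b), c). F a * G b * H c) (L1q (Dq (Poly_Mapping.single \<mu> (1::'k::comm_ring_1))))"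
proof -
  have "lin_ext (\<lambda>((a, b), c). F a * G b * H c) (L1q (Dq (Poly_Mapping.single \<mu> (1::'k))))
      = lin_ext (\<lambda>t. lin_ext (\<lambda>((a, b), c). F a * G b * H c) ((\<lambda>(x, y). ptens (Dq (Poly_Mapping.single x 1)) (Poly_Mapping.single y (1::'k))) t))
          (Dq (Poly_Mapping.single \<mu> (1::'k)))"
    unfolding L1q_def by (rule lin_ext_compose)
  also have "\<dots> = lin_ext (\<lambda>(x, y). conv F G x * H y) (Dq (Poly_Mapping.single \<mu> (1::'k)))"
  proof (rule lin_ext_cong)
    fix t :: "'s mon \<times> 's mon" assume "t \<in> Poly_Mapping.keys (Dq (Poly_Mapping.single \<mu> (1::'k)))"
    obtain x y where t: "t = (x, y)" by (cases t)
    have "lin_ext (\<lambda>((a, b), c). F a * G b * H c) (ptens (Dq (Poly_Mapping.single x 1)) (Poly_Mapping.single y (1::'k)))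
        = lin_ext (\<lambda>(a, b). F a * G b * H y) (Dq (Poly_Mapping.single x 1))"
      by (simp add: lin_ext_ptens split_def)
    also have "\<dots> = lin_ext (\<lambda>(a, b). F a * G b) (Dq (Poly_Mapping.single x 1)) * H y"
      by (simp add: lin_ext_mult_const[symmetric] split_def)
    finally show "lin_ext (\<lambda>((a, b), c). F a * G b * H c) ((\<lambda>(x, y). ptens (Dq (Poly_Mapping.single x 1)) (Poly_Mapping.single y (1::'k))) t)
        = (\<lambda>(x, y). conv F G x * H y) t"
      unfolding t conv_def by simp
  qed
  also have "\<dots> = conv (conv F G) H \<mu>" by (simp add: conv_def)
  finally show ?thesis by simp
qed

lemma conv_as_L2q:
  "conv F (conv G H) \<mu> = lin_ext (\<lambda>(a, (b, c)). F a * (G b * H c)) (L2q (Dq (Poly_Mapping.single \<mu> (1::'k::comm_ring_1))))"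
proof -
  have "lin_ext (\<lambda>(a, (b, c)). F a * (G b * H c)) (L2q (Dq (Poly_Mapping.single \<mu> (1::'k))))
      = lin_ext (\<lambda>t. lin_ext (\<lambda>(a, (b, c)). F a * (G b * H c)) ((\<lambda>(x, y). ptens (Poly_Mapping.single x (1::'k)) (Dq (Poly_Mapping.single y 1))) t))
          (Dq (Poly_Mapping.single \<mu> (1::'k)))"
    unfolding L2q_def by (rule lin_ext_compose)
  also have "\<dots> = lin_ext (\<lambda>(x, y). F x * conv G H y) (Dq (Poly_Mapping.single \<mu> (1::'k)))"
  proof (rule lin_ext_cong)
    fix t :: "'s mon \<times> 's mon" assume "t \<in> Poly_Mapping.keys (Dq (Poly_Mapping.single \<mu> (1::'k)))"
    obtain x y where t: "t = (x, y)" by (cases t)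
    have "lin_ext (\<lambda>(a, (b, c)). F a * (G b * H c)) (ptens (Poly_Mapping.single x (1::'k)) (Dq (Poly_Mapping.single y 1)))
        = lin_ext (\<lambda>(b, c). F x * (G b * H c)) (Dq (Poly_Mapping.single y 1))"
      by (simp add: lin_ext_ptens split_def)
    also have "\<dots> = F x * lin_ext (\<lambda>(b, c). G b * H c) (Dq (Poly_Mapping.single y 1))"
      by (simp add: lin_ext_const_mult[symmetric] split_def)
    finally show "lin_ext (\<lambda>(a, (b, c)). F a * (G b * H c)) ((\<lambda>(x, y). ptens (Poly_Mapping.single x (1::'k)) (Dq (Poly_Mapping.single y 1))) t)
        = (\<lambda>(x, y). F x * conv G H y) t"
      unfolding t conv_def by simp
  qed
  also have "\<dots> = conv F (conv G H) \<mu>" by (simp add: conv_def)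
  finally show ?thesis by simp
qed

lemma conv_assoc:
  assumes mu: "\<mu> \<in> BQ"
  shows "conv (conv F G) H \<mu> = (conv F (conv G H) \<mu> :: _ \<Rightarrow>\<^sub>0 'k::comm_ring_1)"
proof -
  have pB: "Poly_Mapping.keys (Poly_Mapping.single \<mu> (1::'k)) \<subseteq> BB" using BQ_BB[OF mu] by simp
  have "conv F (conv G H) \<mu> = lin_ext (\<lambda>(a, (b, c)). F a * (G b * H c)) (mapk ra (L1q (Dq (Poly_Mapping.single \<mu> (1::'k)))))"
    unfolding conv_as_L2q coassoc_q[OF pB] ..
  also have "\<dots> = lin_ext (\<lambda>((a, b), c). F a * G b * H c) (L1q (Dq (Poly_Mapping.single \<mu> (1::'k))))"
    unfolding lin_ext_mapk by (rule lin_ext_cong) (auto simp: ra_def mult.assoc)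
  finally show ?thesis unfolding conv_as_L1q by simp
qed

section \<open>Takeuchi antipode\<close>

lemma w_0: "w 0 = 1" by (simp add: w_def)

lemma ff0: "ff 0 = (0 :: _ \<Rightarrow>\<^sub>0 'k::comm_ring_1)"
  by (simp add: ff_def Eu_def Iu_def w_0)

lemma fpow_nil: "\<mu> \<in> BQ \<Longrightarrow> deg \<mu> < n \<Longrightarrow> fpow n \<mu> = (0 :: _ \<Rightarrow>\<^sub>0 'k::comm_ring_1)"
proof (induction n arbitrary: \<mu>)
  case 0
  then show ?case by simp
next
  case (Suc n)
  have "conv ff (fpow n) \<mu> = (0 :: _ \<Rightarrow>\<^sub>0 'k)"
    unfolding conv_def
  proof (rule lin_ext_zero_on_keys)
    fix t assume "t \<in> Poly_Mapping.keys (Dq (Poly_Mapping.single \<mu> (1::'k)))"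
    then obtain x y where t: "t = (x, y)" "x \<in> BQ" "y \<in> BQ" "deg x + deg y = deg \<mu>"
      using keys_Dq_deg[OF BQ_BB[OF Suc.prems(1)]] by blast
    show "(case t of (x, y) \<Rightarrow> ff x * fpow n y) = (0 :: _ \<Rightarrow>\<^sub>0 'k)"
    proof (cases "x = 0")
      case True then show ?thesis using t(1) by (simp add: ff0)
    next
      case False
      then have "deg x \<ge> 1" by (rule deg_pos[OF t(2)])
      then have "deg y < n" using t(4) Suc.prems(2) by linarith
      then show ?thesis using t(1) Suc.IH[OF t(3)] by simp
    qed
  qed
  then show ?case by simp
qed

lemma fpow_comm: "\<mu> \<in> BQ \<Longrightarrow> conv (fpow n) ff \<mu> = (conv ff (fpow n) \<mu> :: _ \<Rightarrow>\<^sub>0 'k::comm_ring_1)"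
proof (induction n arbitrary: \<mu>)
  case 0
  then show ?case by (simp add: conv_unitL conv_unitR)
next
  case (Suc n)
  have "conv (fpow (Suc n)) ff \<mu> = (conv ff (conv (fpow n) ff) \<mu> :: _ \<Rightarrow>\<^sub>0 'k)"
    by (simp add: conv_assoc[OF Suc.prems])
  also have "\<dots> = conv ff (conv ff (fpow n)) \<mu>"
    by (rule conv_cong[OF BQ_BB[OF Suc.prems]]) (simp add: Suc.IH)
  finally show ?case by simp
qed

lemma Sf_ext:
  assumes x: "x \<in> BQ" and N: "deg x \<le> N"
  shows "Sf x = (\<Sum>n\<le>N. fpow n x :: _ \<Rightarrow>\<^sub>0 'k::comm_ring_1)"
  unfolding Sf_def
  by (rule sum.mono_neutral_left) (auto simp: N fpow_nil[OF x])

lemma Iu_ff: "Iu = (\<lambda>y. Eu y - (ff y :: _ \<Rightarrow>\<^sub>0 'k::comm_ring_1))"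
  by (simp add: ff_def fun_eq_iff)

lemma antipode_L:
  assumes mu: "\<mu> \<in> BQ"
  shows "conv Sf Iu \<mu> = (Eu \<mu> :: _ \<Rightarrow>\<^sub>0 'k::comm_ring_1)"
proof -
  let ?N = "deg \<mu>"
  have "conv Sf Iu \<mu> = (conv (\<lambda>x. \<Sum>n\<le>?N. fpow n x) Iu \<mu> :: _ \<Rightarrow>\<^sub>0 'k)"
    by (rule conv_cong[OF BQ_BB[OF mu]]) (metis Sf_ext le_add1)
  also have "\<dots> = (\<Sum>n\<le>?N. conv (fpow n) Iu \<mu>)" by (rule conv_sum_left)
  also have "\<dots> = (\<Sum>n\<le>?N. fpow n \<mu> - fpow (Suc n) \<mu>)"
  proof (rule sum.cong[OF refl])
    fix n
    have "conv (fpow n) Iu \<mu> = conv (fpow n) Eu \<mu> - (conv (fpow n) ff \<mu> :: _ \<Rightarrow>\<^sub>0 'k)"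
      unfolding Iu_ff by (rule conv_diff_right)
    then show "conv (fpow n) Iu \<mu> = fpow n \<mu> - (fpow (Suc n) \<mu> :: _ \<Rightarrow>\<^sub>0 'k)"
      by (simp add: conv_unitR[OF mu] fpow_comm[OF mu])
  qed
  also have "\<dots> = fpow 0 \<mu> - fpow (Suc ?N) \<mu>" by (rule sum_telescope)
  also have "\<dots> = Eu \<mu>" using fpow_nil[OF mu, of "Suc ?N"] by simp
  finally show ?thesis .
qed

lemma antipode_R:
  assumes mu: "\<mu> \<in> BQ"
  shows "conv Iu Sf \<mu> = (Eu \<mu> :: _ \<Rightarrow>\<^sub>0 'k::comm_ring_1)"
proof -
  let ?N = "deg \<mu>"
  have "conv Iu Sf \<mu> = (conv Iu (\<lambda>x. \<Sum>n\<le>?N. fpow n x) \<mu> :: _ \<Rightarrow>\<^sub>0 'k)"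
    by (rule conv_cong[OF BQ_BB[OF mu]]) (metis Sf_ext le_add2)
  also have "\<dots> = (\<Sum>n\<le>?N. conv Iu (fpow n) \<mu>)"
    unfolding conv_def by (simp add: sum_distrib_left split_def lin_ext_fun_sum)
  also have "\<dots> = (\<Sum>n\<le>?N. fpow n \<mu> - fpow (Suc n) \<mu>)"
  proof (rule sum.cong[OF refl])
    fix n
    have "conv Iu (fpow n) \<mu> = conv Eu (fpow n) \<mu> - (conv ff (fpow n) \<mu> :: _ \<Rightarrow>\<^sub>0 'k)"
      unfolding Iu_ff by (rule conv_diff_left)
    then show "conv Iu (fpow n) \<mu> = fpow n \<mu> - (fpow (Suc n) \<mu> :: _ \<Rightarrow>\<^sub>0 'k)"
      by (simp add: conv_unitL[OF mu])
  qed
  also have "\<dots> = fpow 0 \<mu> - fpow (Suc ?N) \<mu>" by (rule sum_telescope)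
  also have "\<dots> = Eu \<mu>" using fpow_nil[OF mu, of "Suc ?N"] by simp
  finally show ?thesis .
qed

lemma conv_keys:
  assumes F: "\<And>x. x \<in> BQ \<Longrightarrow> Poly_Mapping.keys (F x) \<subseteq> BQ"
    and G: "\<And>y. y \<in> BQ \<Longrightarrow> Poly_Mapping.keys (G y) \<subseteq> BQ" and mu: "\<mu> \<in> BQ"
  shows "Poly_Mapping.keys (conv F G \<mu> :: _ \<Rightarrow>\<^sub>0 'k::comm_ring_1) \<subseteq> BQ"
proof -
  have "Poly_Mapping.keys (conv F G \<mu> :: _ \<Rightarrow>\<^sub>0 'k) \<subseteq> (\<Union>t\<in>Poly_Mapping.keys (Dq (Poly_Mapping.single \<mu> (1::'k))). Poly_Mapping.keys ((\<lambda>(x, y). F x * G y) t))"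
    unfolding conv_def by (rule keys_lin_ext)
  also have "\<dots> \<subseteq> BQ"
  proof (rule UN_least)
    fix t assume "t \<in> Poly_Mapping.keys (Dq (Poly_Mapping.single \<mu> (1::'k)))"
    then obtain x y where t: "t = (x, y)" "x \<in> BQ" "y \<in> BQ"
      using keys_Dq_deg[OF BQ_BB[OF mu]] by blast
    show "Poly_Mapping.keys ((\<lambda>(x, y). F x * G y) t) \<subseteq> BQ"
    proof
      fix k assume "k \<in> Poly_Mapping.keys ((\<lambda>(x, y). F x * G y) t)"
      then obtain a b where "k = a + b" "a \<in> Poly_Mapping.keys (F x)" "b \<in> Poly_Mapping.keys (G y)"
        using t(1) keys_mult by fastforce
      then show "k \<in> BQ" using F[OF t(2)] G[OF t(3)] by (auto simp: monomials_over_def)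
    qed
  qed
  finally show ?thesis .
qed

lemma keys_Eu: "Poly_Mapping.keys (Eu x :: _ \<Rightarrow>\<^sub>0 'k::comm_ring_1) \<subseteq> BQ"
  by (auto simp: Eu_def monomials_over_def)

lemma keys_ff: "x \<in> BQ \<Longrightarrow> Poly_Mapping.keys (ff x :: _ \<Rightarrow>\<^sub>0 'k::comm_ring_1) \<subseteq> BQ"
  unfolding ff_def using keys_diff_sub[of "Eu x :: _ \<Rightarrow>\<^sub>0 'k" "Iu x"] keys_Eu[of x] by (auto simp: Iu_def)

lemma keys_fpow: "x \<in> BQ \<Longrightarrow> Poly_Mapping.keys (fpow n x :: _ \<Rightarrow>\<^sub>0 'k::comm_ring_1) \<subseteq> BQ"
proof (induction n arbitrary: x)
  case 0 then show ?case using keys_Eu by simp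
next
  case (Suc n) then show ?case using conv_keys[OF keys_ff Suc.IH] by simp
qed

lemma keys_Sf: "x \<in> BQ \<Longrightarrow> Poly_Mapping.keys (Sf x :: _ \<Rightarrow>\<^sub>0 'k::comm_ring_1) \<subseteq> BQ"
proof -
  assume x: "x \<in> BQ"
  have "Poly_Mapping.keys (Sf x :: _ \<Rightarrow>\<^sub>0 'k) \<subseteq> (\<Union>n\<in>{..deg x}. Poly_Mapping.keys (fpow n x :: _ \<Rightarrow>\<^sub>0 'k))"
    unfolding Sf_def by (rule keys_sum)
  also have "\<dots> \<subseteq> BQ" using keys_fpow[OF x] by blast
  finally show ?thesis .
qed

lemma Dq_lin: "Dq p = lin_ext (\<lambda>\<mu>. Dq (Poly_Mapping.single \<mu> 1)) (p :: _ \<Rightarrow>\<^sub>0 'k::comm_ring_1)"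
  by (simp add: Dq_def Delta_lin mapk_lin_ext)

theorem hopf: "hopf_on BQ Dq (eps M Mf :: ('s mon \<Rightarrow>\<^sub>0 'k::comm_ring_1) \<Rightarrow> 'k)"
proof -
  let ?A = "{p :: 's mon \<Rightarrow>\<^sub>0 'k. Poly_Mapping.keys p \<subseteq> BQ}"
  let ?S = "lin_ext (Sf :: _ \<Rightarrow> _ \<Rightarrow>\<^sub>0 'k)"
  have a: "\<forall>p\<in>?A. Poly_Mapping.keys (?S p) \<subseteq> BQ"
  proof
    fix p assume p: "p \<in> ?A"
    have "Poly_Mapping.keys (?S p) \<subseteq> (\<Union>x\<in>Poly_Mapping.keys p. Poly_Mapping.keys (Sf x :: _ \<Rightarrow>\<^sub>0 'k))" by (rule keys_lin_ext)
    also have "\<dots> \<subseteq> BQ" using p keys_Sf by blast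
    finally show "Poly_Mapping.keys (?S p) \<subseteq> BQ" .
  qed
  have b: "\<forall>p\<in>?A. \<forall>q\<in>?A. ?S (p + q) = ?S p + ?S q" by (simp add: lin_ext_add)
  have c: "\<forall>c. \<forall>p\<in>?A. ?S (smult_pm c p) = smult_pm c (?S p)" by (simp add: lin_ext_smult)
  have d: "\<forall>p\<in>?A. lin_ext (\<lambda>(x, y). ?S (Poly_Mapping.single x 1) * Poly_Mapping.single y 1) (Dq p) = smult_pm (eps M Mf p) 1"
  proof
    fix p assume p: "p \<in> ?A"
    have "lin_ext (\<lambda>(x, y). ?S (Poly_Mapping.single x 1) * Poly_Mapping.single y 1) (Dq p)
        = lin_ext (\<lambda>\<mu>. conv Sf Iu \<mu>) p"
      by (subst Dq_lin) (simp add: lin_ext_compose conv_def[abs_def] Iu_def split_def)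
    also have "\<dots> = lin_ext Eu p"
      by (rule lin_ext_cong) (use p antipode_L in auto)
    also have "\<dots> = smult_pm (eps M Mf p) 1"
      unfolding Eu_def lin_ext_Eu by (simp flip: single_one)
    finally show "lin_ext (\<lambda>(x, y). ?S (Poly_Mapping.single x 1) * Poly_Mapping.single y 1) (Dq p) = smult_pm (eps M Mf p) 1" .
  qed
  have e: "\<forall>p\<in>?A. lin_ext (\<lambda>(x, y). Poly_Mapping.single x 1 * ?S (Poly_Mapping.single y 1)) (Dq p) = smult_pm (eps M Mf p) 1"
  proof
    fix p assume p: "p \<in> ?A"
    have "lin_ext (\<lambda>(x, y). Poly_Mapping.single x 1 * ?S (Poly_Mapping.single y 1)) (Dq p)
        = lin_ext (\<lambda>\<mu>. conv Iu Sf \<mu>) p"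
      by (subst Dq_lin) (simp add: lin_ext_compose conv_def[abs_def] Iu_def split_def)
    also have "\<dots> = lin_ext Eu p"
      by (rule lin_ext_cong) (use p antipode_R in auto)
    also have "\<dots> = smult_pm (eps M Mf p) 1"
      unfolding Eu_def lin_ext_Eu by (simp flip: single_one)
    finally show "lin_ext (\<lambda>(x, y). Poly_Mapping.single x 1 * ?S (Poly_Mapping.single y 1)) (Dq p) = smult_pm (eps M Mf p) 1" .
  qed
  show ?thesis unfolding hopf_on_def Let_def
    using qbialg a b c d e by blast
qed

end

theorem mainTheorem1:
  fixes M :: "nat set \<Rightarrow> 's set"
    and Mf :: "(nat \<Rightarrow> nat) \<Rightarrow> nat set \<Rightarrow> 's \<Rightarrow> 's"
    and eta :: "nat set \<Rightarrow> nat set set \<Rightarrow> (nat set \<Rightarrow> 's) \<Rightarrow> 's \<Rightarrow> 's"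
  assumes op: "set_operad M Mf eta"
  defines "T \<equiv> stypes M Mf"
    and "D \<equiv> (Delta M Mf eta :: ((nat set \<times> 's) set multiset \<Rightarrow>\<^sub>0 'k::field_char_0) \<Rightarrow> _)"
    and "e \<equiv> (eps M Mf :: ((nat set \<times> 's) set multiset \<Rightarrow>\<^sub>0 'k) \<Rightarrow> 'k)"
  shows
    \<comment> \<open>Delta(t_alpha) does not depend on the representative\<close>
    "(\<forall>U m V m'. finite U \<and> m \<in> M U \<and> (V, m') \<in> tau M Mf U m \<longrightarrow>
        (DeltaRep M Mf eta U m :: (_ \<Rightarrow>\<^sub>0 'k)) = DeltaRep M Mf eta V m') \<and>
     \<comment> \<open>commutative bialgebra K[t_alpha : alpha in T(M)]\<close>
     bialgebra_on (monomials_over T) D e \<and>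
     \<comment> \<open>Delta and eps descend to the quotient by (t_bullet - 1)\<close>
     (\<forall>p. Poly_Mapping.keys p \<subseteq> monomials_over T \<longrightarrow>
        qtens (bullet M Mf) (D (qmap (bullet M Mf) p)) = qtens (bullet M Mf) (D p) \<and>
        e (qmap (bullet M Mf) p) = e p) \<and>
     \<comment> \<open>the quotient K[t_alpha : alpha in T(M) - {bullet}] is a Hopf algebra\<close>
     hopf_on (monomials_over (T - {bullet M Mf})) (\<lambda>p. qtens (bullet M Mf) (D p)) e"
proof -
  interpret oper M Mf eta by (rule oper.intro) (rule op)
  have h1: "\<forall>U m V m'. finite U \<and> m \<in> M U \<and> (V, m') \<in> tau M Mf U m \<longrightarrow>
        (DeltaRep M Mf eta U m :: (_ \<Rightarrow>\<^sub>0 'k)) = DeltaRep M Mf eta V m'"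
  proof (intro allI impI)
    fix U m V m' assume a: "finite U \<and> m \<in> M U \<and> (V, m') \<in> tau M Mf U m"
    then obtain f where f: "bij_betw f U V" "m' = Mf f U m" using tau_memD(5)[of U m V m'] by blast
    have "DeltaRep M Mf eta V (Mf f U m) = (DeltaRep M Mf eta U m :: (_ \<Rightarrow>\<^sub>0 'k))"
      using a by (intro Dec_transport[OF _ f(1)]) auto
    then show "(DeltaRep M Mf eta U m :: (_ \<Rightarrow>\<^sub>0 'k)) = DeltaRep M Mf eta V m'"
      using f(2) by simp
  qed
  have h2: "bialgebra_on (monomials_over T) D e"
    unfolding T_def D_def e_def by (rule bialg)
  have h3: "\<forall>p. Poly_Mapping.keys p \<subseteq> monomials_over T \<longrightarrow>
        qtens (bullet M Mf) (D (qmap (bullet M Mf) p)) = qtens (bullet M Mf) (D p) \<and>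
        e (qmap (bullet M Mf) p) = e p"
    unfolding T_def D_def e_def by (rule descend)
  have qD: "(\<lambda>p. qtens (bullet M Mf) (D p)) = Dq"
    unfolding D_def by (simp add: fun_eq_iff Dq_eq)
  have h4: "hopf_on (monomials_over (T - {bullet M Mf})) (\<lambda>p. qtens (bullet M Mf) (D p)) e"
    unfolding qD T_def e_def by (rule hopf)
  show ?thesis using h1 h2 h3 h4 by blast
qed

end
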